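(* Let $(\Lambda,d)$ be a finitely aligned $k$-graph. The map $\Psi:S_\Lambda\to{\mathcal G}_\Lambda^{op}$, $\Psi(F)=\{[F,x]:x\in D_F\}$, is an injective $*$-homomorphism of inverse semigroups.
   Context: A $k$-graph $(\Lambda,d)$ is a countable small category $\Lambda$ (objects identified with identity morphisms) with a functor $d:\Lambda\to\mathbb N^k$ satisfying unique factorization: whenever $d(\lambda)=m+n$ there are unique $\mu,\nu$ with $d(\mu)=m$, $d(\nu)=n$, $\lambda=\mu\nu$. $r,s$ range/source. $\Lambda^{\min}(\lambda,\mu)=\{(\alpha,\beta):\lambda\alpha=\mu\beta,\ d(\lambda\alpha)=d(\lambda)\vee d(\mu)\}$; finitely aligned means all are finite. $S_\Lambda$: finite $F\subseteq\{(\lambda,\mu):s(\lambda)=s(\mu)\}$ with distinct $(\lambda,\mu),(\nu,\omega)\in F$ satisfying $\Lambda^{\min}(\lambda,\nu)=\Lambda^{\min}(\mu,\omega)=\emptyset$; inverse semigroup with $FG=\bigcup_{(\lambda,\mu)\in F,(\xi,\eta)\in G}\{(\lambda\alpha,\eta\beta):(\alpha,\beta)\in\Lambda^{\min}(\mu,\xi)\}$, $F^*=\{(\mu,\lambda):(\lambda,\mu)\in F\}$, idempotents $E(S_\Lambda)$. $\Omega_{k,m}$ ($m\in(\mathbb N\cup\{\infty\})^k$): objects $\{p\in\mathbb N^k:p\le m\}$, morphisms $(p,q)$, $p\le q\le m$, $r(p,q)=p$, $s(p,q)=q$, $d(p,q)=q-p$. $X_\Lambda$ = degree-preserving functors $x:\Omega_{k,m}\to\Lambda$,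 $d(x)=m$, $r(x)=x(0,0)$; paths $\lambda$ are regarded as elements of $X_\Lambda$ via $x_\lambda:\Omega_{k,d(\lambda)}\to\Lambda$, $x_\lambda(0,d(\lambda))=\lambda$. $\sigma^m x(p,q)=x(p+m,q+m)$; $\lambda x$ ($s(\lambda)=x(0,0)$) has $(\lambda x)(0,n)=\lambda x(0,n-d(\lambda))$. $D_F=\{x:\exists(\lambda,\mu)\in F,\ x(0,d(\mu))=\mu\}$; $\theta_F(x)=\lambda\sigma^{d(\mu)}x$. $X_\Lambda$ carries the topology with subbasis $\{D_F,X_\Lambda\setminus D_F\}$. ${\mathcal G}_\Lambda$: germs $[F,x]$ of pairs $(F,x)$, $x\in D_F$, under $(F,x)\sim(G,y)$ iff $x=y$ and some $P\in E(S_\Lambda)$ has $x\in D_P$, $FP=GP$; product $[F,\theta_G(x)][G,x]=[FG,x]$, inverse $[F^*,\theta_F(x)]$, $r([F,x])=\theta_F(x)$, $s([F,x])=x$; topology with subbasis $\{\Psi(F),{\mathcal G}_\Lambda\setminus\Psi(F)\}$. For a topological groupoid $G$, $G^{op}$ is the family of open Hausdorff subsets $A\subseteq G$ such that $r|_A$ and $s|_A$ are homeomorphisms onto their images; it is an inverse semigroup under $AB=\{ab:a\in A,b\in B,(a,b)\text{ composable}\}$ and $A^*=A^{-1}$. *)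

theory Defs
  imports "HOL-Analysis.Analysis" "HOL-Library.Function_Algebras"
begin

text \<open>A k-graph: morphisms (objects = identity morphisms), range, source,
  composition (cmp a b = a b, defined when src a = rng b) and degree into N^k,
  where N^k is represented as functions from a finite index type 'k to nat.\<close>

record ('a, 'k) kgraph =
  Mor :: "'a set"
  rng :: "'a \<Rightarrow> 'a"
  src :: "'a \<Rightarrow> 'a"
  cmp :: "'a \<Rightarrow> 'a \<Rightarrow> 'a"
  deg :: "'a \<Rightarrow> 'k \<Rightarrow> nat"

definition Obj :: "('a, 'k) kgraph \<Rightarrow> 'a set" where
  "Obj L = {v \<in> Mor L. rng L v = v \<and> src L v = v}"

definition is_kgraph :: "('a, 'k::finite) kgraph \<Rightarrow> bool" where
  "is_kgraph L \<longleftrightarrow>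
     countable (Mor L) \<and>
     (\<forall>a\<in>Mor L. rng L a \<in> Obj L \<and> src L a \<in> Obj L) \<and>
     (\<forall>a\<in>Mor L. \<forall>b\<in>Mor L. src L a = rng L b \<longrightarrow>
        cmp L a b \<in> Mor L \<and> rng L (cmp L a b) = rng L a \<and> src L (cmp L a b) = src L b) \<and>
     (\<forall>a\<in>Mor L. \<forall>b\<in>Mor L. \<forall>c\<in>Mor L. src L a = rng L b \<longrightarrow> src L b = rng L c \<longrightarrow>
        cmp L (cmp L a b) c = cmp L a (cmp L b c)) \<and>
     (\<forall>a\<in>Mor L. cmp L (rng L a) a = a \<and> cmp L a (src L a) = a) \<and>
     (\<forall>a\<in>Mor L. \<forall>b\<in>Mor L. src L a = rng L b \<longrightarrow> deg L (cmp L a b) = deg L a + deg L b) \<and>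
     (\<forall>v\<in>Obj L. deg L v = 0) \<and>
     (\<forall>l\<in>Mor L. \<forall>m n. deg L l = m + n \<longrightarrow>
        (\<exists>!(\<mu>, \<nu>). \<mu> \<in> Mor L \<and> \<nu> \<in> Mor L \<and> src L \<mu> = rng L \<nu> \<and>
            deg L \<mu> = m \<and> deg L \<nu> = n \<and> l = cmp L \<mu> \<nu>))"

definition Lmin :: "('a, 'k::finite) kgraph \<Rightarrow> 'a \<Rightarrow> 'a \<Rightarrow> ('a \<times> 'a) set" where
  "Lmin L l m = {(\<alpha>, \<beta>). \<alpha> \<in> Mor L \<and> \<beta> \<in> Mor L \<and> src L l = rng L \<alpha> \<and> src L m = rng L \<beta> \<and>
      cmp L l \<alpha> = cmp L m \<beta> \<and> deg L (cmp L l \<alpha>) = sup (deg L l) (deg L m)}"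

definition finitely_aligned :: "('a, 'k::finite) kgraph \<Rightarrow> bool" where
  "finitely_aligned L \<longleftrightarrow> (\<forall>l\<in>Mor L. \<forall>m\<in>Mor L. finite (Lmin L l m))"

definition S :: "('a, 'k::finite) kgraph \<Rightarrow> ('a \<times> 'a) set set" where
  "S L = {F. finite F \<and> F \<subseteq> {(l, m). l \<in> Mor L \<and> m \<in> Mor L \<and> src L l = src L m} \<and>
      (\<forall>p\<in>F. \<forall>q\<in>F. p \<noteq> q \<longrightarrow>
          Lmin L (fst p) (fst q) = {} \<and> Lmin L (snd p) (snd q) = {})}"

definition Sprod :: "('a, 'k::finite) kgraph \<Rightarrow> ('a \<times> 'a) set \<Rightarrow> ('a \<times> 'a) set \<Rightarrow> ('a \<times> 'a) set" where
  "Sprod L F G = (\<Union>p\<in>F. \<Union>q\<in>G.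
      {(cmp L (fst p) \<alpha>, cmp L (snd q) \<beta>) | \<alpha> \<beta>. (\<alpha>, \<beta>) \<in> Lmin L (snd p) (fst q)})"

definition Sstar :: "('a \<times> 'a) set \<Rightarrow> ('a \<times> 'a) set" where
  "Sstar F = (\<lambda>(l, m). (m, l)) ` F"

definition ES :: "('a, 'k::finite) kgraph \<Rightarrow> ('a \<times> 'a) set set" where
  "ES L = {P \<in> S L. Sprod L P P = P}"

text \<open>A path x : Omega_{k,m} \<rightarrow> Lambda is represented as the pair (m, f) with
  f p q = x(p,q) for p \<le> q \<le> m, and f p q = undefined otherwise (canonical form).\<close>

type_synonym ('a, 'k) path = "('k \<Rightarrow> enat) \<times> (('k \<Rightarrow> nat) \<Rightarrow> ('k \<Rightarrow> nat) \<Rightarrow> 'a)"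

definition inO :: "('k \<Rightarrow> enat) \<Rightarrow> ('k \<Rightarrow> nat) \<Rightarrow> ('k \<Rightarrow> nat) \<Rightarrow> bool" where
  "inO m p q \<longleftrightarrow> p \<le> q \<and> (\<forall>i. enat (q i) \<le> m i)"

definition XL :: "('a, 'k::finite) kgraph \<Rightarrow> ('a, 'k) path set" where
  "XL L = {(m, f).
      (\<forall>p q. \<not> inO m p q \<longrightarrow> f p q = undefined) \<and>
      (\<forall>p q. inO m p q \<longrightarrow> f p q \<in> Mor L \<and> deg L (f p q) = q - p \<and>
                           rng L (f p q) = f p p \<and> src L (f p q) = f q q) \<and>
      (\<forall>p. inO m p p \<longrightarrow> f p p \<in> Obj L) \<and>
      (\<forall>p q t. inO m p q \<and> inO m q t \<longrightarrow> cmp L (f p q) (f q t) = f p t)}"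

definition DF :: "('a, 'k::finite) kgraph \<Rightarrow> ('a \<times> 'a) set \<Rightarrow> ('a, 'k) path set" where
  "DF L F = {x \<in> XL L. \<exists>(l, m)\<in>F. (\<forall>i. enat (deg L m i) \<le> fst x i) \<and> snd x 0 (deg L m) = m}"

definition sigma :: "('k \<Rightarrow> nat) \<Rightarrow> ('a, 'k) path \<Rightarrow> ('a, 'k) path" where
  "sigma n x = (let m' = (\<lambda>i. fst x i - enat (n i)) in
      (m', \<lambda>p q. if inO m' p q then snd x (p + n) (q + n) else undefined))"

definition seg :: "('a, 'k::finite) kgraph \<Rightarrow> 'a \<Rightarrow> ('k \<Rightarrow> nat) \<Rightarrow> ('k \<Rightarrow> nat) \<Rightarrow> 'a" where
  "seg L a p q = (THE \<beta>. \<exists>\<alpha> \<gamma>. \<alpha> \<in> Mor L \<and> \<beta> \<in> Mor L \<and> \<gamma> \<in> Mor L \<and>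
      src L \<alpha> = rng L \<beta> \<and> src L \<beta> = rng L \<gamma> \<and>
      deg L \<alpha> = p \<and> deg L \<beta> = q - p \<and> deg L \<gamma> = deg L a - q \<and> a = cmp L (cmp L \<alpha> \<beta>) \<gamma>)"

text \<open>lambda x: the unique path with (lambda x)(0,n) = lambda x(0, n - d(lambda)).\<close>
definition concat :: "('a, 'k::finite) kgraph \<Rightarrow> 'a \<Rightarrow> ('a, 'k) path \<Rightarrow> ('a, 'k) path" where
  "concat L l x = (let m' = (\<lambda>i. enat (deg L l i) + fst x i) in
      (m', \<lambda>p q. if inO m' p q
                 then seg L (cmp L l (snd x 0 (sup q (deg L l) - deg L l))) p q
                 else undefined))"

definition theta :: "('a, 'k::finite) kgraph \<Rightarrow> ('a \<times> 'a) set \<Rightarrow> ('a, 'k) path \<Rightarrow> ('a, 'k) path" where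
  "theta L F x = (let pr = (THE pr. pr \<in> F \<and> (\<forall>i. enat (deg L (snd pr) i) \<le> fst x i) \<and>
                                  snd x 0 (deg L (snd pr)) = snd pr)
                  in concat L (fst pr) (sigma (deg L (snd pr)) x))"

definition XT :: "('a, 'k::finite) kgraph \<Rightarrow> ('a, 'k) path topology" where
  "XT L = subtopology
     (topology_generated_by ({DF L F | F. F \<in> S L} \<union> {UNIV - DF L F | F. F \<in> S L})) (XL L)"

type_synonym ('a, 'k) germ = "(('a \<times> 'a) set \<times> ('a, 'k) path) set"

definition germ :: "('a, 'k::finite) kgraph \<Rightarrow> ('a \<times> 'a) set \<Rightarrow> ('a, 'k) path \<Rightarrow> ('a, 'k) germ" where
  "germ L F x = {(G, y). G \<in> S L \<and> y \<in> DF L G \<and> y = x \<and>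
      (\<exists>P\<in>ES L. x \<in> DF L P \<and> Sprod L F P = Sprod L G P)}"

definition Gset :: "('a, 'k::finite) kgraph \<Rightarrow> ('a, 'k) germ set" where
  "Gset L = {germ L F x | F x. F \<in> S L \<and> x \<in> DF L F}"

definition Psi :: "('a, 'k::finite) kgraph \<Rightarrow> ('a \<times> 'a) set \<Rightarrow> ('a, 'k) germ set" where
  "Psi L F = {germ L F x | x. x \<in> DF L F}"

text \<open>Operations on germs via an (arbitrary) representative; they are well defined.\<close>
definition grep :: "('a, 'k) germ \<Rightarrow> ('a \<times> 'a) set \<times> ('a, 'k) path" where
  "grep a = (SOME p. p \<in> a)"

definition gsrc :: "('a, 'k) germ \<Rightarrow> ('a, 'k) path" where
  "gsrc a = snd (grep a)"

definition gran :: "('a, 'k::finite) kgraph \<Rightarrow> ('a, 'k) germ \<Rightarrow> ('a, 'k) path" where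
  "gran L a = theta L (fst (grep a)) (snd (grep a))"

definition gmul :: "('a, 'k::finite) kgraph \<Rightarrow> ('a, 'k) germ \<Rightarrow> ('a, 'k) germ \<Rightarrow> ('a, 'k) germ" where
  "gmul L a b = germ L (Sprod L (fst (grep a)) (fst (grep b))) (snd (grep b))"

definition ginv :: "('a, 'k::finite) kgraph \<Rightarrow> ('a, 'k) germ \<Rightarrow> ('a, 'k) germ" where
  "ginv L a = germ L (Sstar (fst (grep a))) (gran L a)"

definition GT :: "('a, 'k::finite) kgraph \<Rightarrow> ('a, 'k) germ topology" where
  "GT L = subtopology
     (topology_generated_by ({Psi L F | F. F \<in> S L} \<union> {UNIV - Psi L F | F. F \<in> S L})) (Gset L)"

definition Gop :: "('a, 'k::finite) kgraph \<Rightarrow> ('a, 'k) germ set set" where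
  "Gop L = {A. A \<subseteq> Gset L \<and> openin (GT L) A \<and> Hausdorff_space (subtopology (GT L) A) \<and>
      homeomorphic_map (subtopology (GT L) A) (subtopology (XT L) (gran L ` A)) (gran L) \<and>
      homeomorphic_map (subtopology (GT L) A) (subtopology (XT L) (gsrc ` A)) gsrc}"

definition Opmul :: "('a, 'k::finite) kgraph \<Rightarrow> ('a, 'k) germ set \<Rightarrow> ('a, 'k) germ set \<Rightarrow> ('a, 'k) germ set" where
  "Opmul L A B = {gmul L a b | a b. a \<in> A \<and> b \<in> B \<and> gsrc a = gran L b}"

definition Opinv :: "('a, 'k::finite) kgraph \<Rightarrow> ('a, 'k) germ set \<Rightarrow> ('a, 'k) germ set" where
  "Opinv L A = ginv L ` A"

end

theory Submission
  imports Defs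
begin

locale kg =
  fixes L :: "('a, 'k::finite) kgraph"
  assumes kg: "is_kgraph L"
begin

abbreviation M where "M \<equiv> Mor L"
abbreviation rg where "rg \<equiv> rng L"
abbreviation sc where "sc \<equiv> src L"
abbreviation dg where "dg \<equiv> deg L"
abbreviation cp (infixl "\<cdot>" 70) where "a \<cdot> b \<equiv> cmp L a b"

lemma ax2: "\<forall>a\<in>M. rg a \<in> Obj L \<and> sc a \<in> Obj L"
  using kg unfolding is_kgraph_def apply (elim conjE) apply assumption done
lemma ax3: "\<forall>a\<in>M. \<forall>b\<in>M. sc a = rg b \<longrightarrow>
        a \<cdot> b \<in> M \<and> rg (a \<cdot> b) = rg a \<and> sc (a \<cdot> b) = sc b"
  using kg unfolding is_kgraph_def apply (elim conjE) apply assumption done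
lemma ax4: "\<forall>a\<in>M. \<forall>b\<in>M. \<forall>c\<in>M. sc a = rg b \<longrightarrow> sc b = rg c \<longrightarrow>
        (a \<cdot> b) \<cdot> c = a \<cdot> (b \<cdot> c)"
  using kg unfolding is_kgraph_def apply (elim conjE) apply assumption done
lemma ax5: "\<forall>a\<in>M. rg a \<cdot> a = a \<and> a \<cdot> sc a = a"
  using kg unfolding is_kgraph_def apply (elim conjE) apply assumption done
lemma ax6: "\<forall>a\<in>M. \<forall>b\<in>M. sc a = rg b \<longrightarrow> dg (a \<cdot> b) = dg a + dg b"
  using kg unfolding is_kgraph_def apply (elim conjE) apply assumption done
lemma ax7: "\<forall>v\<in>Obj L. dg v = 0"
  using kg unfolding is_kgraph_def apply (elim conjE) apply assumption done
lemma ax8: "\<forall>l\<in>M. \<forall>m n. dg l = m + n \<longrightarrow>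
        (\<exists>!(\<mu>, \<nu>). \<mu> \<in> M \<and> \<nu> \<in> M \<and> sc \<mu> = rg \<nu> \<and>
            dg \<mu> = m \<and> dg \<nu> = n \<and> l = \<mu> \<cdot> \<nu>)"
  using kg unfolding is_kgraph_def apply (elim conjE) apply assumption done

lemma rs_obj: "a \<in> M \<Longrightarrow> rg a \<in> Obj L \<and> sc a \<in> Obj L"
  using ax2 by blast

lemma obj_props: "v \<in> Obj L \<Longrightarrow> v \<in> M \<and> rg v = v \<and> sc v = v \<and> dg v = 0"
  using ax7 unfolding Obj_def by blast

lemma rO: "a \<in> M \<Longrightarrow> rg a \<in> Obj L" using rs_obj by blast
lemma sO: "a \<in> M \<Longrightarrow> sc a \<in> Obj L" using rs_obj by blast
lemma rM[simp]: "a \<in> M \<Longrightarrow> rg a \<in> M" using obj_props[OF rO[of a]] by simp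
lemma sM[simp]: "a \<in> M \<Longrightarrow> sc a \<in> M" using obj_props[OF sO[of a]] by simp
lemma rr[simp]: "a \<in> M \<Longrightarrow> rg (rg a) = rg a" using obj_props[OF rO[of a]] by simp
lemma sr[simp]: "a \<in> M \<Longrightarrow> sc (rg a) = rg a" using obj_props[OF rO[of a]] by simp
lemma rs[simp]: "a \<in> M \<Longrightarrow> rg (sc a) = sc a" using obj_props[OF sO[of a]] by simp
lemma ss[simp]: "a \<in> M \<Longrightarrow> sc (sc a) = sc a" using obj_props[OF sO[of a]] by simp
lemma dr[simp]: "a \<in> M \<Longrightarrow> dg (rg a) = 0" using obj_props[OF rO[of a]] by simp
lemma ds[simp]: "a \<in> M \<Longrightarrow> dg (sc a) = 0" using obj_props[OF sO[of a]] by simp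

lemma cM[simp]: "a \<in> M \<Longrightarrow> b \<in> M \<Longrightarrow> sc a = rg b \<Longrightarrow> a \<cdot> b \<in> M"
  using ax3 by blast
lemma cr[simp]: "a \<in> M \<Longrightarrow> b \<in> M \<Longrightarrow> sc a = rg b \<Longrightarrow> rg (a \<cdot> b) = rg a"
  using ax3 by blast
lemma cs[simp]: "a \<in> M \<Longrightarrow> b \<in> M \<Longrightarrow> sc a = rg b \<Longrightarrow> sc (a \<cdot> b) = sc b"
  using ax3 by blast
lemma cd[simp]: "a \<in> M \<Longrightarrow> b \<in> M \<Longrightarrow> sc a = rg b \<Longrightarrow> dg (a \<cdot> b) = dg a + dg b"
  using ax6 by blast
lemma assoc: "a \<in> M \<Longrightarrow> b \<in> M \<Longrightarrow> c \<in> M \<Longrightarrow> sc a = rg b \<Longrightarrow> sc b = rg c \<Longrightarrow>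
   (a \<cdot> b) \<cdot> c = a \<cdot> (b \<cdot> c)"
  using ax4 by blast
lemma lid[simp]: "a \<in> M \<Longrightarrow> rg a \<cdot> a = a"
  using ax5 by blast
lemma rid[simp]: "a \<in> M \<Longrightarrow> a \<cdot> sc a = a"
  using ax5 by blast

lemma fact_uniq:
  assumes "l \<in> M" "dg l = m + n"
  shows "\<exists>!(\<mu>, \<nu>). \<mu> \<in> M \<and> \<nu> \<in> M \<and> sc \<mu> = rg \<nu> \<and> dg \<mu> = m \<and> dg \<nu> = n \<and> l = \<mu> \<cdot> \<nu>"
  using ax8 assms by blast

lemma ex1_two: "\<exists>!x. P x \<Longrightarrow> P a \<Longrightarrow> P b \<Longrightarrow> a = b" by blast

lemma factor_unique:
  assumes "a \<in> M" "b \<in> M" "a' \<in> M" "b' \<in> M" "sc a = rg b" "sc a' = rg b'"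
    "a \<cdot> b = a' \<cdot> b'" "dg a = dg a'"
  shows "a = a' \<and> b = b'"
proof -
  have "dg a + dg b = dg a' + dg b'" using assms by (metis cd)
  then have dd: "dg b = dg b'" using assms(8) by (simp add: fun_eq_iff)
  have u: "\<exists>!(\<mu>, \<nu>). \<mu> \<in> M \<and> \<nu> \<in> M \<and> sc \<mu> = rg \<nu> \<and> dg \<mu> = dg a \<and> dg \<nu> = dg b \<and> a \<cdot> b = \<mu> \<cdot> \<nu>"
    by (rule fact_uniq) (use assms(1,2,5) in simp_all)
  have p1: "(\<lambda>(\<mu>, \<nu>). \<mu> \<in> M \<and> \<nu> \<in> M \<and> sc \<mu> = rg \<nu> \<and> dg \<mu> = dg a \<and> dg \<nu> = dg b \<and> a \<cdot> b = \<mu> \<cdot> \<nu>) (a, b)"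
    using assms by simp
  have p2: "(\<lambda>(\<mu>, \<nu>). \<mu> \<in> M \<and> \<nu> \<in> M \<and> sc \<mu> = rg \<nu> \<and> dg \<mu> = dg a \<and> dg \<nu> = dg b \<and> a \<cdot> b = \<mu> \<cdot> \<nu>) (a', b')"
    using assms dd by simp
  have "(a, b) = (a', b')" using ex1_two[OF u p1 p2] .
  then show ?thesis by simp
qed

lemma lcancel:
  assumes "a \<in> M" "b \<in> M" "b' \<in> M" "sc a = rg b" "sc a = rg b'" "a \<cdot> b = a \<cdot> b'"
  shows "b = b'"
  using factor_unique[of a b a b'] assms by auto

lemma rcancel:
  assumes "a \<in> M" "a' \<in> M" "b \<in> M" "sc a = rg b" "sc a' = rg b" "a \<cdot> b = a' \<cdot> b"
  shows "a = a'"
proof -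
  have "dg a + dg b = dg a' + dg b" using assms by (metis cd)
  then have "dg a = dg a'" by (simp add: fun_eq_iff)
  then show ?thesis using factor_unique[of a b a' b] assms by auto
qed

lemma fun_le_add_diff: "(m::'k \<Rightarrow> nat) \<le> l \<Longrightarrow> l = m + (l - m)"
  by (auto simp: le_fun_def plus_fun_def fun_diff_def fun_eq_iff)

lemma factor_ex:
  assumes "l \<in> M" "m \<le> dg l"
  obtains \<mu> \<nu> where "\<mu> \<in> M" "\<nu> \<in> M" "sc \<mu> = rg \<nu>" "dg \<mu> = m" "dg \<nu> = dg l - m" "l = \<mu> \<cdot> \<nu>"
proof -
  have "dg l = m + (dg l - m)" using assms fun_le_add_diff by blast
  from fact_uniq[OF assms(1) this] show ?thesis using that by auto
qed

lemma deg0_obj: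
  assumes "a \<in> M" "dg a = 0"
  shows "a \<in> Obj L" "rg a = a" "sc a = a"
proof -
  have e: "rg a \<cdot> a = a \<cdot> sc a" using assms by simp
  have "rg a = a \<and> a = sc a"
    by (rule factor_unique[of "rg a" a a "sc a"]) (use assms e in auto)
  then show "rg a = a" "sc a = a" by auto
  then show "a \<in> Obj L" using assms by (simp add: Obj_def)
qed

lemma Lmin_iff: "(\<alpha>, \<beta>) \<in> Lmin L l m \<longleftrightarrow> \<alpha> \<in> M \<and> \<beta> \<in> M \<and> sc l = rg \<alpha> \<and> sc m = rg \<beta> \<and>
      l \<cdot> \<alpha> = m \<cdot> \<beta> \<and> dg (l \<cdot> \<alpha>) = sup (dg l) (dg m)"
  by (simp add: Lmin_def)

lemma Lmin_ne:
  assumes "a \<in> M" "b \<in> M" "\<alpha> \<in> M" "\<beta> \<in> M" "sc a = rg \<alpha>" "sc b = rg \<beta>" "a \<cdot> \<alpha> = b \<cdot> \<beta>"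
  shows "Lmin L a b \<noteq> {}"
proof -
  define w where "w = a \<cdot> \<alpha>"
  have wM: "w \<in> M" using assms w_def by simp
  have "dg w = dg a + dg \<alpha>" unfolding w_def using assms(1,3,5) by (rule cd)
  then have "dg a \<le> dg w" by (simp add: le_fun_def)
  moreover have "dg w = dg b + dg \<beta>" unfolding w_def assms(7) using assms(2,4,6) by (rule cd)
  then have "dg b \<le> dg w" by (simp add: le_fun_def)
  ultimately have N: "sup (dg a) (dg b) \<le> dg w" by simp
  obtain w1 w2 where w12: "w1 \<in> M" "w2 \<in> M" "sc w1 = rg w2" "dg w1 = sup (dg a) (dg b)" "w = w1 \<cdot> w2"
    using factor_ex[OF wM N] by metis
  have "dg a \<le> dg w1" using w12 by simp
  then obtain a' \<alpha>1 where A: "a' \<in> M" "\<alpha>1 \<in> M" "sc a' = rg \<alpha>1" "dg a' = dg a" "w1 = a' \<cdot> \<alpha>1"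
    using factor_ex[OF w12(1)] by metis
  have "dg b \<le> dg w1" using w12 by simp
  then obtain b' \<beta>1 where B: "b' \<in> M" "\<beta>1 \<in> M" "sc b' = rg \<beta>1" "dg b' = dg b" "w1 = b' \<cdot> \<beta>1"
    using factor_ex[OF w12(1)] by metis
  have "a' \<cdot> (\<alpha>1 \<cdot> w2) = a \<cdot> \<alpha>"
    using A w12 w_def assoc[of a' \<alpha>1 w2] by simp
  then have "a' = a" using factor_unique[of a' "\<alpha>1 \<cdot> w2" a \<alpha>] A w12 assms by simp
  moreover have "b' \<cdot> (\<beta>1 \<cdot> w2) = b \<cdot> \<beta>"
    using B w12 w_def assoc[of b' \<beta>1 w2] assms by simp
  then have "b' = b" using factor_unique[of b' "\<beta>1 \<cdot> w2" b \<beta>] B w12 assms by simp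
  ultimately have "(\<alpha>1, \<beta>1) \<in> Lmin L a b" using A B w12 by (auto simp: Lmin_iff)
  then show ?thesis by blast
qed

end


context kg
begin

lemma seg_char:
  assumes "\<alpha> \<in> M" "\<beta> \<in> M" "\<gamma> \<in> M" "sc \<alpha> = rg \<beta>" "sc \<beta> = rg \<gamma>"
    "dg \<alpha> = p" "dg \<beta> = q - p" "dg \<gamma> = dg a - q" "a = (\<alpha> \<cdot> \<beta>) \<cdot> \<gamma>" "p \<le> q"
  shows "seg L a p q = \<beta>"
  unfolding seg_def
proof (rule the_equality)
  show "\<exists>\<alpha> \<gamma>. \<alpha> \<in> M \<and> \<beta> \<in> M \<and> \<gamma> \<in> M \<and> sc \<alpha> = rg \<beta> \<and> sc \<beta> = rg \<gamma> \<and>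
      dg \<alpha> = p \<and> dg \<beta> = q - p \<and> dg \<gamma> = dg a - q \<and> a = \<alpha> \<cdot> \<beta> \<cdot> \<gamma>"
    using assms by blast
next
  fix \<beta>'
  assume "\<exists>\<alpha> \<gamma>. \<alpha> \<in> M \<and> \<beta>' \<in> M \<and> \<gamma> \<in> M \<and> sc \<alpha> = rg \<beta>' \<and> sc \<beta>' = rg \<gamma> \<and>
      dg \<alpha> = p \<and> dg \<beta>' = q - p \<and> dg \<gamma> = dg a - q \<and> a = \<alpha> \<cdot> \<beta>' \<cdot> \<gamma>"
  then obtain \<alpha>' \<gamma>' where A: "\<alpha>' \<in> M" "\<beta>' \<in> M" "\<gamma>' \<in> M" "sc \<alpha>' = rg \<beta>'" "sc \<beta>' = rg \<gamma>'"
      "dg \<alpha>' = p" "dg \<beta>' = q - p" "dg \<gamma>' = dg a - q" "a = \<alpha>' \<cdot> \<beta>' \<cdot> \<gamma>'" by blast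
  have "dg (\<alpha> \<cdot> \<beta>) = dg (\<alpha>' \<cdot> \<beta>')" using A(1,2,4,6,7) assms(1,2,4,6,7) by simp
  moreover have "\<alpha> \<cdot> \<beta> \<cdot> \<gamma> = \<alpha>' \<cdot> \<beta>' \<cdot> \<gamma>'" using A(9) assms(9) by simp
  ultimately have "\<alpha> \<cdot> \<beta> = \<alpha>' \<cdot> \<beta>'"
    using factor_unique[of "\<alpha> \<cdot> \<beta>" \<gamma> "\<alpha>' \<cdot> \<beta>'" \<gamma>'] A(1-5) assms(1-5) by simp
  then show "\<beta>' = \<beta>" using factor_unique[of \<alpha> \<beta> \<alpha>' \<beta>'] A(1-7) assms(1-7) by simp
qed

lemma fle: "(p::'k \<Rightarrow> nat) \<le> q \<longleftrightarrow> (\<forall>i. p i \<le> q i)" by (simp add: le_fun_def)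

lemma seg_ex:
  assumes "a \<in> M" "p \<le> q" "q \<le> dg a"
  obtains \<alpha> \<beta> \<gamma> where "\<alpha> \<in> M" "\<beta> \<in> M" "\<gamma> \<in> M" "sc \<alpha> = rg \<beta>"
    "sc \<beta> = rg \<gamma>" "dg \<alpha> = p" "dg \<beta> = q - p" "dg \<gamma> = dg a - q"
    "a = (\<alpha> \<cdot> \<beta>) \<cdot> \<gamma>" "seg L a p q = \<beta>"
proof -
  obtain w \<gamma> where w: "w \<in> M" "\<gamma> \<in> M" "sc w = rg \<gamma>" "dg w = q" "dg \<gamma> = dg a - q" "a = w \<cdot> \<gamma>"
    using factor_ex[OF assms(1,3)] by metis
  obtain \<alpha> \<beta> where ab: "\<alpha> \<in> M" "\<beta> \<in> M" "sc \<alpha> = rg \<beta>" "dg \<alpha> = p" "dg \<beta> = q - p" "w = \<alpha> \<cdot> \<beta>"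
    using factor_ex[OF w(1)] assms(2) w(4) by metis
  have sb: "sc \<beta> = rg \<gamma>" using w(3) ab(1-3,6) by simp
  have e: "a = (\<alpha> \<cdot> \<beta>) \<cdot> \<gamma>" using w(6) ab(6) by simp
  have "seg L a p q = \<beta>" by (rule seg_char[OF _ _ _ _ _ _ _ _ e]) (use w(1-5) ab(1-5) sb assms(2) in auto)
  then show ?thesis using that[OF ab(1,2) w(2) ab(3) sb ab(4,5) w(5) e] by blast
qed

lemma seg_M: "a \<in> M \<Longrightarrow> p \<le> q \<Longrightarrow> q \<le> dg a \<Longrightarrow> seg L a p q \<in> M"
  by (metis seg_ex)
lemma seg_dg: "a \<in> M \<Longrightarrow> p \<le> q \<Longrightarrow> q \<le> dg a \<Longrightarrow> dg (seg L a p q) = q - p"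
  by (metis seg_ex)

lemma seg_rs:
  assumes "a \<in> M" "p \<le> q" "q \<le> dg a"
  shows "rg (seg L a p q) = seg L a p p" "sc (seg L a p q) = seg L a q q"
proof -
  obtain \<alpha> \<beta> \<gamma> where B: "\<alpha> \<in> M" "\<beta> \<in> M" "\<gamma> \<in> M" "sc \<alpha> = rg \<beta>"
    "sc \<beta> = rg \<gamma>" "dg \<alpha> = p" "dg \<beta> = q - p" "dg \<gamma> = dg a - q"
    "a = (\<alpha> \<cdot> \<beta>) \<cdot> \<gamma>" "seg L a p q = \<beta>" using seg_ex[OF assms] by metis
  have r: "\<alpha> \<cdot> sc \<alpha> = \<alpha>" using B(1) by simp
  have e1: "a = (\<alpha> \<cdot> sc \<alpha>) \<cdot> (\<beta> \<cdot> \<gamma>)" unfolding r using B(1-5) assoc[of \<alpha> \<beta> \<gamma>] B(9) by simp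
  have "dg (\<beta> \<cdot> \<gamma>) = dg a - p" using B(1-8) assms(2,3)
    by (simp add: fle fun_eq_iff)
  then have "seg L a p p = sc \<alpha>"
    using seg_char[OF _ _ _ _ _ _ _ _ e1] B(1-8) by simp
  then show "rg (seg L a p q) = seg L a p p" using B(4,10) by simp
  have r2: "(\<alpha> \<cdot> \<beta>) \<cdot> sc \<beta> = \<alpha> \<cdot> \<beta>" using B(1,2,4) rid[of "\<alpha> \<cdot> \<beta>"] by simp
  have e2: "a = ((\<alpha> \<cdot> \<beta>) \<cdot> sc \<beta>) \<cdot> \<gamma>" unfolding r2 using B(9) by simp
  have "dg (\<alpha> \<cdot> \<beta>) = q" using B(1-8) assms(2,3)
    by (simp add: fle fun_eq_iff)
  then have "seg L a q q = sc \<beta>"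
    using seg_char[OF _ _ _ _ _ _ _ _ e2] B(1-8) by simp
  then show "sc (seg L a p q) = seg L a q q" using B(10) by simp
qed

lemma seg_obj: "a \<in> M \<Longrightarrow> p \<le> dg a \<Longrightarrow> seg L a p p \<in> Obj L"
  using seg_M[of a p p] seg_dg[of a p p] deg0_obj by simp

lemma seg_comp:
  assumes "a \<in> M" "p \<le> q" "q \<le> t" "t \<le> dg a"
  shows "seg L a p q \<cdot> seg L a q t = seg L a p t"
proof -
  have pt: "p \<le> t" using assms by simp
  obtain \<alpha> \<beta> \<gamma> where C: "\<alpha> \<in> M" "\<beta> \<in> M" "\<gamma> \<in> M" "sc \<alpha> = rg \<beta>"
    "sc \<beta> = rg \<gamma>" "dg \<alpha> = p" "dg \<beta> = t - p" "dg \<gamma> = dg a - t"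
    "a = (\<alpha> \<cdot> \<beta>) \<cdot> \<gamma>" "seg L a p t = \<beta>" using seg_ex[OF assms(1) pt assms(4)] by metis
  have "q - p \<le> dg \<beta>" using C(7) assms(2,3) by (simp add: fle diff_le_mono)
  then obtain \<beta>1 \<beta>2 where B: "\<beta>1 \<in> M" "\<beta>2 \<in> M" "sc \<beta>1 = rg \<beta>2" "dg \<beta>1 = q - p" "dg \<beta>2 = dg \<beta> - (q - p)"
    "\<beta> = \<beta>1 \<cdot> \<beta>2"
    using factor_ex[of \<beta> "q - p"] C(2) by metis
  have r1: "rg \<beta>1 = rg \<beta>" "sc \<beta>2 = sc \<beta>" using B by simp_all
  have s1: "sc \<alpha> = rg \<beta>1" using C(4) r1 by simp
  have s2: "sc \<beta>2 = rg \<gamma>" using C(5) r1 by simp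
  have "a = (\<alpha> \<cdot> (\<beta>1 \<cdot> \<beta>2)) \<cdot> \<gamma>" using C(9) B(6) by simp
  also have "\<alpha> \<cdot> (\<beta>1 \<cdot> \<beta>2) = (\<alpha> \<cdot> \<beta>1) \<cdot> \<beta>2" using assoc[of \<alpha> \<beta>1 \<beta>2] C(1) B(1-3) s1 by simp
  finally have e2: "a = ((\<alpha> \<cdot> \<beta>1) \<cdot> \<beta>2) \<cdot> \<gamma>" .
  have e1: "a = (\<alpha> \<cdot> \<beta>1) \<cdot> (\<beta>2 \<cdot> \<gamma>)" using e2 assoc[of "\<alpha> \<cdot> \<beta>1" \<beta>2 \<gamma>] C(1,3) B(1-3) s1 s2 by simp
  have "seg L a p q = \<beta>1"
    by (rule seg_char[OF _ _ _ _ _ _ _ _ e1]) (use C(1-8) B(1-5) r1 assms in \<open>simp_all add: fle fun_eq_iff\<close>)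
  moreover
  have "seg L a q t = \<beta>2"
    by (rule seg_char[OF _ _ _ _ _ _ _ _ e2]) (use C(1-8) B(1-5) r1 assms in \<open>simp_all add: fle fun_eq_iff\<close>)
  ultimately show ?thesis using B(6) C(10) by simp
qed

lemma seg_pfx:
  assumes "b \<in> M" "c \<in> M" "sc b = rg c" "p \<le> q" "q \<le> dg b"
  shows "seg L (b \<cdot> c) p q = seg L b p q"
proof -
  obtain \<alpha> \<beta> \<gamma> where A: "\<alpha> \<in> M" "\<beta> \<in> M" "\<gamma> \<in> M" "sc \<alpha> = rg \<beta>"
    "sc \<beta> = rg \<gamma>" "dg \<alpha> = p" "dg \<beta> = q - p" "dg \<gamma> = dg b - q"
    "b = (\<alpha> \<cdot> \<beta>) \<cdot> \<gamma>" "seg L b p q = \<beta>" using seg_ex[OF assms(1,4,5)] by metis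
  have sg: "sc \<gamma> = sc b" using A(1-5) A(9) by simp
  have "b \<cdot> c = ((\<alpha> \<cdot> \<beta>) \<cdot> \<gamma>) \<cdot> c" using A(9) by simp
  also have "\<dots> = (\<alpha> \<cdot> \<beta>) \<cdot> (\<gamma> \<cdot> c)"
    by (rule assoc) (use A(1-5) sg assms(2,3) in simp_all)
  finally have e: "b \<cdot> c = (\<alpha> \<cdot> \<beta>) \<cdot> (\<gamma> \<cdot> c)" .
  have "dg (b \<cdot> c) = dg b + dg c" using assms(1-3) by simp
  then have "seg L (b \<cdot> c) p q = \<beta>"
    by (intro seg_char[OF _ _ _ _ _ _ _ _ e]) (use A(1-8) sg assms in \<open>simp_all add: fle fun_eq_iff\<close>)
  then show ?thesis using A(10) by simp
qed

lemma seg_full: "a \<in> M \<Longrightarrow> seg L a 0 (dg a) = a"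
  by (rule seg_char[of "rg a" a "sc a"]) simp_all

lemma seg_pre:
  assumes "b \<in> M" "c \<in> M" "sc b = rg c"
  shows "seg L (b \<cdot> c) 0 (dg b) = b"
  using seg_pfx[OF assms] seg_full assms by simp

end


definition ld :: "('k \<Rightarrow> nat) \<Rightarrow> ('a, 'k) path \<Rightarrow> bool" where
  "ld n x \<longleftrightarrow> (\<forall>i. enat (n i) \<le> fst x i)"

definition pre :: "('a, 'k) path \<Rightarrow> ('k \<Rightarrow> nat) \<Rightarrow> 'a" where
  "pre x n = snd x 0 n"

lemma ld_mono: "ld q x \<Longrightarrow> n \<le> q \<Longrightarrow> ld n x"
  unfolding ld_def le_fun_def by (meson enat_ord_simps(1) order_trans)

lemma ld_sup: "ld a x \<Longrightarrow> ld b x \<Longrightarrow> ld (sup a b) x"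
  unfolding ld_def sup_fun_def sup_nat_def by (simp add: max_def)

lemma ld_0[simp]: "ld 0 x"
  unfolding ld_def by (simp add: zero_enat_def[symmetric])

lemma inO_ld: "inO (fst x) p q \<longleftrightarrow> p \<le> q \<and> ld q x"
  by (simp add: inO_def ld_def)

context kg
begin

lemma XL_iff: "x \<in> XL L \<longleftrightarrow>
      (\<forall>p q. \<not> inO (fst x) p q \<longrightarrow> snd x p q = undefined) \<and>
      (\<forall>p q. inO (fst x) p q \<longrightarrow> snd x p q \<in> M \<and> dg (snd x p q) = q - p \<and>
                           rg (snd x p q) = snd x p p \<and> sc (snd x p q) = snd x q q) \<and>
      (\<forall>p. inO (fst x) p p \<longrightarrow> snd x p p \<in> Obj L) \<and>
      (\<forall>p q t. inO (fst x) p q \<and> inO (fst x) q t \<longrightarrow> snd x p q \<cdot> snd x q t = snd x p t)"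
  by (cases x) (simp add: XL_def)

lemma path_props:
  assumes "x \<in> XL L" "p \<le> q" "ld q x"
  shows "snd x p q \<in> M" "dg (snd x p q) = q - p" "rg (snd x p q) = snd x p p" "sc (snd x p q) = snd x q q"
  using assms unfolding XL_iff inO_ld by blast+

lemma path_obj: "x \<in> XL L \<Longrightarrow> ld p x \<Longrightarrow> snd x p p \<in> Obj L"
  unfolding XL_iff inO_ld by blast

lemma path_comp: "x \<in> XL L \<Longrightarrow> p \<le> q \<Longrightarrow> q \<le> t \<Longrightarrow> ld t x \<Longrightarrow> snd x p q \<cdot> snd x q t = snd x p t"
  unfolding XL_iff inO_ld using ld_mono by blast

lemma path_undef: "x \<in> XL L \<Longrightarrow> \<not> inO (fst x) p q \<Longrightarrow> snd x p q = undefined"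
  unfolding XL_iff by blast

lemma pre_props:
  assumes "x \<in> XL L" "ld q x"
  shows "pre x q \<in> M" "dg (pre x q) = q" "rg (pre x q) = pre x 0" "sc (pre x q) = snd x q q"
  using path_props[OF assms(1) _ assms(2), of 0] unfolding pre_def by auto

lemma pre_split:
  assumes "x \<in> XL L" "p \<le> q" "ld q x"
  shows "pre x q = pre x p \<cdot> snd x p q"
  using path_comp[OF assms(1) _ assms(2,3), of 0] unfolding pre_def by simp

lemma pre0_sc: "x \<in> XL L \<Longrightarrow> ld q x \<Longrightarrow> sc (pre x p) = rg (snd x p q) \<or> \<not> p \<le> q"
  by (metis ld_mono path_props(3) pre_props(4))

lemma pre_comp_ok:
  assumes "x \<in> XL L" "p \<le> q" "ld q x"
  shows "sc (pre x p) = rg (snd x p q)"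
  using assms by (metis ld_mono path_props(3) pre_props(4))

lemma path_eqI:
  assumes "x \<in> XL L" "y \<in> XL L" "fst x = fst y" "\<And>q. ld q x \<Longrightarrow> pre x q = pre y q"
  shows "x = y"
proof -
  have "snd x p q = snd y p q" for p q
  proof (cases "inO (fst x) p q")
    case True
    then have pq: "p \<le> q" "ld q x" by (auto simp: inO_ld)
    then have ldy: "ld q y" using assms(3) by (simp add: ld_def)
    have px: "ld p x" using pq ld_mono by blast
    have "pre x p \<cdot> snd x p q = pre y p \<cdot> snd y p q"
      using pre_split[OF assms(1) pq] pre_split[OF assms(2) pq(1) ldy] assms(4)[OF pq(2)] by simp
    then have e: "pre x p \<cdot> snd x p q = pre x p \<cdot> snd y p q" using assms(4)[OF px] by simp
    show ?thesis
      by (rule lcancel[OF _ _ _ _ _ e])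
        (use pre_props[OF assms(1) px] path_props[OF assms(1) pq] pre_comp_ok[OF assms(1) pq]
             pre_props[OF assms(2), of p] path_props[OF assms(2) pq(1) ldy] pre_comp_ok[OF assms(2) pq(1) ldy]
             px assms(3,4) ldy in \<open>auto simp: ld_def\<close>)
  next
    case False
    then have "\<not> inO (fst y) p q" using assms(3) by simp
    then show ?thesis using False path_undef assms(1,2) by metis
  qed
  then show ?thesis using assms(3) by (simp add: prod_eq_iff fun_eq_iff)
qed

lemma path_eqI2:
  assumes "x \<in> XL L" "y \<in> XL L" "fst x = fst y" "ld D x"
    "\<And>q. ld q x \<Longrightarrow> D \<le> q \<Longrightarrow> pre x q = pre y q"
  shows "x = y"
proof (rule path_eqI[OF assms(1-3)])
  fix q assume q: "ld q x"
  have Q: "ld (sup q D) x" using ld_sup q assms(4) by blast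
  have ly: "ld (sup q D) y" using Q assms(3) by (simp add: ld_def)
  have e: "pre x (sup q D) = pre y (sup q D)" using assms(5)[OF Q] by simp
  have "pre x q \<cdot> snd x q (sup q D) = pre y q \<cdot> snd y q (sup q D)"
    using pre_split[OF assms(1) _ Q, of q] pre_split[OF assms(2) _ ly, of q] e by simp
  moreover have "dg (pre x q) = dg (pre y q)"
    using pre_props(2)[OF assms(1) q] pre_props(2)[OF assms(2), of q] q assms(3) by (simp add: ld_def)
  ultimately show "pre x q = pre y q"
    using factor_unique[of "pre x q" "snd x q (sup q D)" "pre y q" "snd y q (sup q D)"]
      pre_props[OF assms(1) q] path_props[OF assms(1) _ Q, of q] pre_comp_ok[OF assms(1) _ Q, of q]
      pre_props[OF assms(2), of q] path_props[OF assms(2) _ ly, of q] pre_comp_ok[OF assms(2) _ ly, of q]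
      q assms(3) by (auto simp: ld_def)
qed

definition pf :: "'a \<Rightarrow> ('a, 'k) path \<Rightarrow> bool" where
  "pf \<mu> x \<longleftrightarrow> ld (dg \<mu>) x \<and> pre x (dg \<mu>) = \<mu>"

lemma DF_iff: "x \<in> DF L F \<longleftrightarrow> x \<in> XL L \<and> (\<exists>(l, m)\<in>F. pf m x)"
  unfolding DF_def pf_def ld_def pre_def by auto

lemma pre_pf:
  assumes "x \<in> XL L" "ld q x" "pre x q = a \<cdot> c" "a \<in> M" "c \<in> M" "sc a = rg c"
  shows "pf a x"
proof -
  have "q = dg a + dg c" using pre_props(2)[OF assms(1,2)] assms(3-6) by simp
  then have aq: "dg a \<le> q" by (simp add: le_fun_def)
  then have la: "ld (dg a) x" using ld_mono assms(2) by blast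
  have "pre x (dg a) \<cdot> snd x (dg a) q = a \<cdot> c" using pre_split[OF assms(1) aq assms(2)] assms(3) by simp
  then have "pre x (dg a) = a"
    using factor_unique[of "pre x (dg a)" "snd x (dg a) q" a c] pre_props[OF assms(1) la]
      path_props[OF assms(1) aq assms(2)] pre_comp_ok[OF assms(1) aq assms(2)] assms(4-6) by auto
  then show ?thesis using la by (simp add: pf_def)
qed

lemma pre_agree:
  assumes "x \<in> XL L" "y \<in> XL L" "ld q x" "ld q y" "pre x q = pre y q" "n \<le> q"
  shows "pre x n = pre y n"
proof -
  have "pf (pre x n) y"
    by (rule pre_pf[OF assms(2,4), of _ "snd x n q"])
      (use pre_split[OF assms(1) assms(6,3)] assms(5) pre_props[OF assms(1) ld_mono[OF assms(3,6)]]
        path_props[OF assms(1) assms(6,3)] pre_comp_ok[OF assms(1) assms(6,3)] in auto)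
  then show ?thesis using pre_props(2)[OF assms(1) ld_mono[OF assms(3,6)]] by (simp add: pf_def)
qed

lemma pf_M: "x \<in> XL L \<Longrightarrow> pf \<mu> x \<Longrightarrow> \<mu> \<in> M"
  unfolding pf_def using pre_props by metis

lemma pf_ext:
  assumes "x \<in> XL L" "pf \<mu> x" "ld q x" "dg \<mu> \<le> q"
  shows "pre x q = \<mu> \<cdot> snd x (dg \<mu>) q"
  using pre_split[OF assms(1,4,3)] assms(2) by (simp add: pf_def)

end


lemma enat_le_minus: "enat a \<le> m \<Longrightarrow> (enat b \<le> m - enat a) = (enat (b + a) \<le> m)"
  by (cases m) auto

lemma sigma_fst: "fst (sigma n x) = (\<lambda>i. fst x i - enat (n i))"
  by (simp add: sigma_def Let_def)

lemma sigma_snd: "snd (sigma n x) p q = (if inO (fst (sigma n x)) p q then snd x (p + n) (q + n) else undefined)"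
  by (simp add: sigma_def Let_def)

lemma ld_sigma: "ld n x \<Longrightarrow> ld q (sigma n x) = ld (q + n) x"
  unfolding ld_def sigma_fst by (simp add: enat_le_minus)

lemma concat_fst: "fst (concat L l x) = (\<lambda>i. enat (deg L l i) + fst x i)"
  by (simp add: concat_def Let_def)

lemma concat_snd: "snd (concat L l x) p q = (if inO (fst (concat L l x)) p q
     then seg L (cmp L l (snd x 0 (sup q (deg L l) - deg L l))) p q else undefined)"
  by (simp add: concat_def Let_def)

lemma ld_concat: "ld q (concat L l x) \<longleftrightarrow> (\<forall>i. enat (q i) \<le> enat (deg L l i) + fst x i)"
  unfolding ld_def concat_fst by simp

lemma ld_concat2: "deg L l \<le> q \<Longrightarrow> ld q (concat L l x) \<longleftrightarrow> ld (q - deg L l) x"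
  unfolding ld_concat unfolding ld_def le_fun_def
proof (intro iffI allI)
  fix i
  assume a: "\<forall>i. deg L l i \<le> q i" "\<forall>i. enat (q i) \<le> enat (deg L l i) + fst x i"
  show "enat ((q - deg L l) i) \<le> fst x i"
    using a(1)[rule_format, of i] a(2)[rule_format, of i] by (cases "fst x i") auto
next
  fix i
  assume a: "\<forall>i. deg L l i \<le> q i" "\<forall>i. enat ((q - deg L l) i) \<le> fst x i"
  show "enat (q i) \<le> enat (deg L l i) + fst x i"
    using a(1)[rule_format, of i] a(2)[rule_format, of i] by (cases "fst x i") auto
qed

lemma ld_concat3: "ld q (concat L l x) \<Longrightarrow> ld (sup q (deg L l) - deg L l) x"
  unfolding ld_concat unfolding ld_def
proof (intro allI)
  fix i
  assume a: "\<forall>i. enat (q i) \<le> enat (deg L l i) + fst x i"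
  show "enat ((sup q (deg L l) - deg L l) i) \<le> fst x i"
    using a[rule_format, of i] by (cases "fst x i") (auto simp: sup_fun_def sup_nat_def max_def)
qed

lemma ld_concat_l: "ld (deg L l) (concat L l x)"
  unfolding ld_concat by simp

context kg
begin

lemma sigma_XL:
  assumes x: "x \<in> XL L" and n: "ld n x"
  shows "sigma n x \<in> XL L"
proof -
  have A: "\<forall>p q. \<not> inO (fst (sigma n x)) p q \<longrightarrow> snd (sigma n x) p q = undefined"
    by (simp add: sigma_snd)
  have B: "\<forall>p q. inO (fst (sigma n x)) p q \<longrightarrow> snd (sigma n x) p q \<in> M \<and> dg (snd (sigma n x) p q) = q - p \<and>
       rg (snd (sigma n x) p q) = snd (sigma n x) p p \<and> sc (snd (sigma n x) p q) = snd (sigma n x) q q"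
  proof (intro allI impI)
    fix p q
    assume "inO (fst (sigma n x)) p q"
    then have pq: "p \<le> q" "ld (q + n) x" "inO (fst (sigma n x)) p q" using ld_sigma[OF n] by (auto simp: inO_ld)
    have pq2: "p + n \<le> q + n" using pq by (simp add: add_right_mono)
    have pp: "inO (fst (sigma n x)) p p" "inO (fst (sigma n x)) q q" using pq ld_mono[OF pq(2)] ld_sigma[OF n]
      by (auto simp: inO_ld le_fun_def)
    have "(q + n) - (p + n) = q - p" by (simp add: fun_eq_iff)
    then show "snd (sigma n x) p q \<in> M \<and> dg (snd (sigma n x) p q) = q - p \<and>
       rg (snd (sigma n x) p q) = snd (sigma n x) p p \<and> sc (snd (sigma n x) p q) = snd (sigma n x) q q"
      using path_props[OF x pq2 pq(2)] pq(3) pp by (simp add: sigma_snd)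
  qed
  have C: "\<forall>p. inO (fst (sigma n x)) p p \<longrightarrow> snd (sigma n x) p p \<in> Obj L"
  proof (intro allI impI)
    fix p
    assume a: "inO (fst (sigma n x)) p p"
    then have "ld (p + n) x" using ld_sigma[OF n] by (auto simp: inO_ld)
    then show "snd (sigma n x) p p \<in> Obj L" using path_obj[OF x] a by (simp add: sigma_snd)
  qed
  have D: "\<forall>p q t. inO (fst (sigma n x)) p q \<and> inO (fst (sigma n x)) q t \<longrightarrow>
     snd (sigma n x) p q \<cdot> snd (sigma n x) q t = snd (sigma n x) p t"
  proof (intro allI impI)
    fix p q t
    assume a: "inO (fst (sigma n x)) p q \<and> inO (fst (sigma n x)) q t"
    then have b: "p \<le> q" "q \<le> t" "ld (t + n) x" "inO (fst (sigma n x)) p t" using ld_sigma[OF n]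
      by (auto simp: inO_ld)
    have "p + n \<le> q + n" "q + n \<le> t + n" using b by (simp_all add: add_right_mono)
    then show "snd (sigma n x) p q \<cdot> snd (sigma n x) q t = snd (sigma n x) p t"
      using path_comp[OF x _ _ b(3)] a b(4) by (simp add: sigma_snd)
  qed
  show ?thesis unfolding XL_iff using A B C D by blast
qed

lemma pre_sigma: "ld n x \<Longrightarrow> ld q (sigma n x) \<Longrightarrow> pre (sigma n x) q = snd x n (q + n)"
  by (simp add: pre_def sigma_snd inO_ld)

lemma pre_sigma_split:
  assumes "x \<in> XL L" "ld n x" "ld (q + n) x"
  shows "pre x (q + n) = pre x n \<cdot> pre (sigma n x) q"
proof -
  have "n \<le> q + n" by (simp add: le_fun_def)
  then show ?thesis using pre_split[OF assms(1) _ assms(3)] pre_sigma[OF assms(2)] ld_sigma[OF assms(2)] assms(3)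
    by simp
qed

lemma sigma_pre0: "ld n x \<Longrightarrow> pre (sigma n x) 0 = snd x n n"
  using pre_sigma[of n x 0] ld_sigma[of n x 0] by simp

end


definition vtx :: "'a \<Rightarrow> ('a, 'k) path" where
  "vtx v = ((\<lambda>i. 0), \<lambda>p q. if p = 0 \<and> q = 0 then v else undefined)"

lemma inO_zero: "inO (\<lambda>i. 0) p q \<longleftrightarrow> p = 0 \<and> q = 0"
proof -
  have "(\<forall>i. enat (q i) \<le> 0) \<longleftrightarrow> q = 0" by (simp add: zero_enat_def fun_eq_iff)
  moreover have "q = 0 \<Longrightarrow> p \<le> q \<longleftrightarrow> p = 0" by (simp add: le_fun_def fun_eq_iff)
  ultimately show ?thesis unfolding inO_def by auto
qed

lemma K_mono: "(p::'k \<Rightarrow> nat) \<le> q \<Longrightarrow> sup p l - l \<le> sup q l - l"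
  unfolding le_fun_def sup_fun_def sup_nat_def fun_diff_def
  by (intro allI diff_le_mono max.mono) auto

context kg
begin

lemma concat_XL:
  assumes l: "l \<in> M" and x: "x \<in> XL L" and slx: "sc l = pre x 0"
  shows "concat L l x \<in> XL L"
proof -
  define K where "K = (\<lambda>q. sup q (dg l) - dg l)"
  define A where "A = (\<lambda>q. l \<cdot> pre x (K q))"
  define y where "y = concat L l x"
  have f: "snd y p q = (if inO (fst y) p q then seg L (A q) p q else undefined)" for p q
    unfolding y_def A_def K_def concat_snd pre_def by simp
  have lK: "ld q y \<Longrightarrow> ld (K q) x" for q unfolding K_def y_def by (rule ld_concat3)
  have AM: "A q \<in> M" "dg (A q) = sup q (dg l)" "q \<le> dg (A q)" if "ld q y" for q
  proof -
    have c: "sc l = rg (pre x (K q))" using pre_props(3)[OF x lK[OF that]] slx by simp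
    show "A q \<in> M" unfolding A_def using c l pre_props(1)[OF x lK[OF that]] by simp
    have "dg (A q) = dg l + K q" unfolding A_def using c l pre_props[OF x lK[OF that]] by simp
    also have "\<dots> = sup q (dg l)" unfolding K_def by (auto simp: fun_eq_iff sup_fun_def sup_nat_def max_def)
    finally show "dg (A q) = sup q (dg l)" .
    then show "q \<le> dg (A q)" by simp
  qed
  have Kmono: "p \<le> q \<Longrightarrow> K p \<le> K q" for p q
    unfolding K_def by (rule K_mono)
  have Aext: "seg L (A q) a b = seg L (A p) a b" if "p \<le> q" "ld q y" "a \<le> b" "b \<le> p" for p q a b
  proof -
    have lp: "ld p y" using that ld_mono by blast
    have s1: "pre x (K q) = pre x (K p) \<cdot> snd x (K p) (K q)"
      using pre_split[OF x Kmono[OF that(1)] lK[OF that(2)]] .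
    have c: "sc l = rg (pre x (K p))" using pre_props(3)[OF x lK[OF lp]] slx by simp
    have c2: "sc (pre x (K p)) = rg (snd x (K p) (K q))"
      using pre_comp_ok[OF x Kmono[OF that(1)] lK[OF that(2)]] .
    have sM: "snd x (K p) (K q) \<in> M" using path_props(1)[OF x Kmono[OF that(1)] lK[OF that(2)]] .
    have pM: "pre x (K p) \<in> M" using pre_props(1)[OF x lK[OF lp]] .
    have e: "A q = A p \<cdot> snd x (K p) (K q)"
      unfolding A_def s1 using assoc[OF l pM sM c c2] by simp
    have c3: "sc (A p) = rg (snd x (K p) (K q))" unfolding A_def using l pM c c2 by simp
    have "b \<le> dg (A p)" using AM(3)[OF lp] that(4) by simp
    then show ?thesis unfolding e using seg_pfx[OF AM(1)[OF lp] sM c3 that(3)] by simp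
  qed
  have A: "\<forall>p q. \<not> inO (fst y) p q \<longrightarrow> snd y p q = undefined" using f by simp
  have B: "\<forall>p q. inO (fst y) p q \<longrightarrow> snd y p q \<in> M \<and> dg (snd y p q) = q - p \<and>
       rg (snd y p q) = snd y p p \<and> sc (snd y p q) = snd y q q"
  proof (intro allI impI)
    fix p q
    assume a: "inO (fst y) p q"
    then have pq: "p \<le> q" "ld q y" by (auto simp: inO_ld)
    have lp: "ld p y" using pq ld_mono by blast
    have pp: "inO (fst y) p p" "inO (fst y) q q" using pq lp by (auto simp: inO_ld)
    have sp: "snd y p p = seg L (A q) p p" using f pp(1) Aext[OF pq(1) pq(2), of p p] by simp
    show "snd y p q \<in> M \<and> dg (snd y p q) = q - p \<and>
       rg (snd y p q) = snd y p p \<and> sc (snd y p q) = snd y q q"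
      using f a pp sp seg_M[OF AM(1)[OF pq(2)] pq(1) AM(3)[OF pq(2)]]
        seg_dg[OF AM(1)[OF pq(2)] pq(1) AM(3)[OF pq(2)]]
        seg_rs[OF AM(1)[OF pq(2)] pq(1) AM(3)[OF pq(2)]] by simp
  qed
  have C: "\<forall>p. inO (fst y) p p \<longrightarrow> snd y p p \<in> Obj L"
  proof (intro allI impI)
    fix p
    assume a: "inO (fst y) p p"
    then have "ld p y" by (simp add: inO_ld)
    then show "snd y p p \<in> Obj L" using f a seg_obj[OF AM(1) AM(3)] by simp
  qed
  have D: "\<forall>p q t. inO (fst y) p q \<and> inO (fst y) q t \<longrightarrow> snd y p q \<cdot> snd y q t = snd y p t"
  proof (intro allI impI)
    fix p q t
    assume a: "inO (fst y) p q \<and> inO (fst y) q t"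
    then have b: "p \<le> q" "q \<le> t" "ld t y" "ld q y" "inO (fst y) p t" by (auto simp: inO_ld)
    have "snd y p q = seg L (A t) p q" using f a Aext[OF b(2,3) b(1)] by simp
    moreover have "snd y q t = seg L (A t) q t" using f a by simp
    moreover have "snd y p t = seg L (A t) p t" using f b(5) by simp
    ultimately show "snd y p q \<cdot> snd y q t = snd y p t"
      using seg_comp[OF AM(1)[OF b(3)] b(1,2) AM(3)[OF b(3)]] by simp
  qed
  show ?thesis unfolding y_def[symmetric] XL_iff using A B C D by blast
qed

lemma pre_concat:
  assumes l: "l \<in> M" and x: "x \<in> XL L" and slx: "sc l = pre x 0"
    and q: "dg l \<le> q" "ld (q - dg l) x"
  shows "pre (concat L l x) q = l \<cdot> pre x (q - dg l)"
proof -
  have lq: "ld q (concat L l x)" using ld_concat2[OF q(1)] q(2) by simp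
  have sq: "sup q (dg l) = q" using q(1) by (simp add: sup_absorb1)
  have c: "sc l = rg (pre x (q - dg l))" using pre_props(3)[OF x q(2)] slx by simp
  have d: "dg (l \<cdot> pre x (q - dg l)) = q" using c l pre_props[OF x q(2)] q(1)
    by (simp add: fun_eq_iff le_fun_def)
  have "pre (concat L l x) q = seg L (l \<cdot> pre x (q - dg l)) 0 q"
    unfolding pre_def concat_snd using lq sq by (simp add: inO_ld pre_def)
  also have "\<dots> = l \<cdot> pre x (q - dg l)" using seg_full[of "l \<cdot> pre x (q - dg l)"] d c l pre_props(1)[OF x q(2)]
    by simp
  finally show ?thesis .
qed

lemma pre_concat_l:
  assumes l: "l \<in> M" and x: "x \<in> XL L" and slx: "sc l = pre x 0"
  shows "pre (concat L l x) (dg l) = l"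
  using pre_concat[OF assms, of "dg l"] slx[symmetric] l by simp

lemma pf_concat:
  assumes l: "l \<in> M" and x: "x \<in> XL L" and slx: "sc l = pre x 0"
  shows "pf l (concat L l x)"
  unfolding pf_def using pre_concat_l[OF assms] ld_concat_l by simp

lemma concat_pre0:
  assumes l: "l \<in> M" and x: "x \<in> XL L" and slx: "sc l = pre x 0"
  shows "pre (concat L l x) 0 = rg l"
  using pre_props(3)[OF concat_XL[OF assms] ld_concat_l] pre_concat_l[OF assms] by simp

lemma vtx_XL: "v \<in> Obj L \<Longrightarrow> vtx v \<in> XL L"
  unfolding XL_iff using obj_props[of v] lid[of v]
  by (auto simp: vtx_def inO_zero)

lemma vtx_pre0: "pre (vtx v) 0 = v"
  by (simp add: vtx_def pre_def)

definition xp :: "'a \<Rightarrow> ('a, 'k) path" where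
  "xp a = concat L a (vtx (sc a))"

lemma xp_XL: "a \<in> M \<Longrightarrow> xp a \<in> XL L"
  unfolding xp_def by (rule concat_XL) (auto simp: vtx_XL sO vtx_pre0)

lemma xp_fst: "fst (xp a) = (\<lambda>i. enat (dg a i))"
  unfolding xp_def concat_fst by (simp add: vtx_def)

lemma pre_xp: "a \<in> M \<Longrightarrow> pre (xp a) (dg a) = a"
  unfolding xp_def by (rule pre_concat_l) (auto simp: vtx_XL sO vtx_pre0)

lemma ld_xp: "ld q (xp a) \<longleftrightarrow> q \<le> dg a"
  unfolding ld_def xp_fst by (simp add: le_fun_def)

end


lemma enat_add_minus: "(enat a + m) - enat a = (m::enat)"
  by (cases m) auto

lemma enat_minus_add: "enat a \<le> m \<Longrightarrow> enat a + (m - enat a) = (m::enat)"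
  by (cases m) auto

lemma enat_minus_minus: "(m - enat b) - enat a = m - enat (a + b)"
  by (cases m) auto

lemma fle_diff: "(a::'k\<Rightarrow>nat) + b \<le> q \<Longrightarrow> b \<le> q - a"
  unfolding le_fun_def
proof (intro allI)
  fix i assume "\<forall>x. (a + b) x \<le> q x"
  then have "a i + b i \<le> q i" by simp
  then show "b i \<le> (q - a) i" by simp
qed

context kg
begin

lemma sigma_concat:
  assumes l: "l \<in> M" and y: "y \<in> XL L" and sly: "sc l = pre y 0"
  shows "sigma (dg l) (concat L l y) = y"
proof -
  define z where "z = concat L l y"
  have z: "z \<in> XL L" unfolding z_def using concat_XL[OF assms] .
  have lz: "ld (dg l) z" unfolding z_def by (rule ld_concat_l)
  have sz: "sigma (dg l) z \<in> XL L" using sigma_XL[OF z lz] .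
  show ?thesis unfolding z_def[symmetric]
  proof (rule path_eqI[OF sz y])
    show "fst (sigma (dg l) z) = fst y"
      unfolding sigma_fst z_def concat_fst by (simp add: enat_add_minus)
  next
    fix q assume q: "ld q (sigma (dg l) z)"
    have lqy: "ld q y" using q unfolding ld_def sigma_fst z_def concat_fst by (simp add: enat_add_minus)
    have lq: "ld (q + dg l) z" using ld_sigma[OF lz] q by simp
    have e1: "pre z (q + dg l) = l \<cdot> pre (sigma (dg l) z) q"
      using pre_sigma_split[OF z lz lq] pre_concat_l[OF assms] unfolding z_def by simp
    have "dg l \<le> q + dg l" by (simp add: le_fun_def)
    moreover have "q + dg l - dg l = q" by (simp add: fun_eq_iff)
    ultimately have e2: "pre z (q + dg l) = l \<cdot> pre y q"
      using pre_concat[OF assms, of "q + dg l"] lqy unfolding z_def by simp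
    have "rg (pre (sigma (dg l) z) q) = pre (sigma (dg l) z) 0" using pre_props(3)[OF sz q] .
    also have "\<dots> = snd z (dg l) (dg l)" using sigma_pre0[OF lz] .
    also have "\<dots> = sc (pre z (dg l))" using pre_props(4)[OF z lz] by simp
    also have "\<dots> = sc l" using pre_concat_l[OF assms] unfolding z_def by simp
    finally have c1: "sc l = rg (pre (sigma (dg l) z) q)" by simp
    have c2: "sc l = rg (pre y q)" using pre_props(3)[OF y lqy] sly by simp
    show "pre (sigma (dg l) z) q = pre y q"
      using lcancel[OF l pre_props(1)[OF sz q] pre_props(1)[OF y lqy] c1 c2] e1 e2 by simp
  qed
qed

lemma concat_sigma:
  assumes x: "x \<in> XL L" and p: "pf \<mu> x"
  shows "concat L \<mu> (sigma (dg \<mu>) x) = x"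
proof -
  have lm: "ld (dg \<mu>) x" and pm: "pre x (dg \<mu>) = \<mu>" using p by (auto simp: pf_def)
  have mM: "\<mu> \<in> M" using pf_M[OF x p] .
  define w where "w = sigma (dg \<mu>) x"
  have w: "w \<in> XL L" unfolding w_def using sigma_XL[OF x lm] .
  have sw: "sc \<mu> = pre w 0" unfolding w_def sigma_pre0[OF lm] using pre_props(4)[OF x lm] pm by simp
  have c: "concat L \<mu> w \<in> XL L" using concat_XL[OF mM w sw] .
  show ?thesis unfolding w_def[symmetric]
  proof (rule path_eqI2[OF c x _ ld_concat_l])
    show "fst (concat L \<mu> w) = fst x"
      unfolding concat_fst w_def sigma_fst using lm by (simp add: ld_def enat_minus_add)
  next
    fix q assume q: "ld q (concat L \<mu> w)" "dg \<mu> \<le> q"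
    have e: "q - dg \<mu> + dg \<mu> = q" using q(2) by (simp add: fun_eq_iff le_fun_def)
    have lq: "ld (q - dg \<mu>) w" using ld_concat2[OF q(2)] q(1) by simp
    have lqx: "ld q x" using ld_sigma[OF lm, of "q - dg \<mu>"] lq e unfolding w_def by simp
    have "pre (concat L \<mu> w) q = \<mu> \<cdot> pre w (q - dg \<mu>)" using pre_concat[OF mM w sw q(2) lq] .
    also have "\<dots> = pre x q" using pre_sigma_split[OF x lm, of "q - dg \<mu>"] e lqx pm unfolding w_def by simp
    finally show "pre (concat L \<mu> w) q = pre x q" .
  qed
qed

lemma concat_concat:
  assumes a: "a \<in> M" and b: "b \<in> M" and ab: "sc a = rg b" and y: "y \<in> XL L" and sby: "sc b = pre y 0"
  shows "concat L a (concat L b y) = concat L (a \<cdot> b) y"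
proof -
  have by': "concat L b y \<in> XL L" using concat_XL[OF b y sby] .
  have c0: "sc a = pre (concat L b y) 0" using concat_pre0[OF b y sby] ab by simp
  have abM: "a \<cdot> b \<in> M" using a b ab by simp
  have sab: "sc (a \<cdot> b) = pre y 0" using a b ab sby by simp
  have X1: "concat L a (concat L b y) \<in> XL L" using concat_XL[OF a by' c0] .
  have X2: "concat L (a \<cdot> b) y \<in> XL L" using concat_XL[OF abM y sab] .
  have dab: "dg (a \<cdot> b) = dg a + dg b" using a b ab by simp
  show ?thesis
  proof (rule path_eqI2[OF X1 X2 _ ld_concat_l])
    show "fst (concat L a (concat L b y)) = fst (concat L (a \<cdot> b) y)"
      unfolding concat_fst dab by (simp add: fun_eq_iff add.assoc)
  next
    fix q assume q: "ld q (concat L a (concat L b y))" "dg a \<le> q"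
    have q1: "ld (q - dg a) (concat L b y)" using ld_concat2[OF q(2)] q(1) by simp
    show "pre (concat L a (concat L b y)) q = pre (concat L (a \<cdot> b) y) q"
    proof (cases "dg (a \<cdot> b) \<le> q")
      case True
      then have db: "dg b \<le> q - dg a" using dab fle_diff by simp
      have e: "q - dg a - dg b = q - dg (a \<cdot> b)" using dab by (simp add: fun_eq_iff)
      have q2: "ld (q - dg a - dg b) y" using ld_concat2[OF db] q1 by simp
      have "pre (concat L a (concat L b y)) q = a \<cdot> pre (concat L b y) (q - dg a)"
        using pre_concat[OF a by' c0 q(2) q1] .
      also have "\<dots> = a \<cdot> (b \<cdot> pre y (q - dg a - dg b))" using pre_concat[OF b y sby db q2] by simp
      also have "\<dots> = (a \<cdot> b) \<cdot> pre y (q - dg a - dg b)"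
        using assoc[OF a b pre_props(1)[OF y q2] ab] pre_props(3)[OF y q2] sby by simp
      also have "\<dots> = pre (concat L (a \<cdot> b) y) q" using pre_concat[OF abM y sab True] q2 e by simp
      finally show ?thesis .
    next
      case False
      define Q where "Q = sup q (dg (a \<cdot> b))"
      have "ld (dg (a \<cdot> b)) (concat L a (concat L b y))"
        unfolding ld_concat concat_fst dab
      proof (intro allI)
        fix i show "enat ((dg a + dg b) i) \<le> enat (dg a i) + (enat (dg b i) + fst y i)"
          by (cases "fst y i") auto
      qed
      then have lQ: "ld Q (concat L a (concat L b y))"
        unfolding Q_def using ld_sup[OF q(1)] by simp
      have qQ: "q \<le> Q" unfolding Q_def by simp
      have "pre (concat L a (concat L b y)) Q = pre (concat L (a \<cdot> b) y) Q"
      proof -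
        have T: "dg (a \<cdot> b) \<le> Q" unfolding Q_def by simp
        have dQ: "dg a \<le> Q" using q(2) qQ by simp
        have q1: "ld (Q - dg a) (concat L b y)" using ld_concat2[OF dQ] lQ by simp
        have db: "dg b \<le> Q - dg a" using T dab fle_diff by simp
        have e: "Q - dg a - dg b = Q - dg (a \<cdot> b)" using dab by (simp add: fun_eq_iff)
        have q2: "ld (Q - dg a - dg b) y" using ld_concat2[OF db] q1 by simp
        have "pre (concat L a (concat L b y)) Q = a \<cdot> pre (concat L b y) (Q - dg a)"
          using pre_concat[OF a by' c0 dQ q1] .
        also have "\<dots> = a \<cdot> (b \<cdot> pre y (Q - dg a - dg b))" using pre_concat[OF b y sby db q2] by simp
        also have "\<dots> = (a \<cdot> b) \<cdot> pre y (Q - dg a - dg b)"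
          using assoc[OF a b pre_props(1)[OF y q2] ab] pre_props(3)[OF y q2] sby by simp
        also have "\<dots> = pre (concat L (a \<cdot> b) y) Q" using pre_concat[OF abM y sab T] q2 e by simp
        finally show ?thesis .
      qed
      moreover have "ld Q (concat L (a \<cdot> b) y)"
        using lQ unfolding ld_concat concat_fst dab
      proof (intro allI)
        fix i assume "\<forall>i. enat (Q i) \<le> enat (dg a i) + (enat (dg b i) + fst y i)"
        then have "enat (Q i) \<le> enat (dg a i) + (enat (dg b i) + fst y i)" by simp
        then show "enat (Q i) \<le> enat ((dg a + dg b) i) + fst y i"
          by (cases "fst y i") auto
      qed
      ultimately show ?thesis using pre_agree[OF X1 X2 lQ _ _ qQ] by simp
    qed
  qed
qed

lemma sigma_sigma:
  assumes x: "x \<in> XL L" and b: "ld b x" and a: "ld a (sigma b x)"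
  shows "sigma a (sigma b x) = sigma (a + b) x"
proof -
  have ab: "ld (a + b) x" using ld_sigma[OF b] a by simp
  have X1: "sigma a (sigma b x) \<in> XL L" using sigma_XL[OF sigma_XL[OF x b] a] .
  have X2: "sigma (a + b) x \<in> XL L" using sigma_XL[OF x ab] .
  show ?thesis
  proof (rule path_eqI[OF X1 X2])
    show "fst (sigma a (sigma b x)) = fst (sigma (a + b) x)"
      unfolding sigma_fst by (simp add: enat_minus_minus add.commute)
  next
    fix q assume q: "ld q (sigma a (sigma b x))"
    have q1: "ld (q + a) (sigma b x)" using ld_sigma[OF a] q by simp
    have q2: "ld (q + (a + b)) x" using ld_sigma[OF b] q1 by (simp add: add.assoc)
    have q3: "ld q (sigma (a + b) x)" using ld_sigma[OF ab] q2 by simp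
    have "pre (sigma a (sigma b x)) q = snd (sigma b x) a (q + a)" using pre_sigma[OF a q] .
    also have "\<dots> = snd x (a + b) (q + a + b)" using q1 by (simp add: sigma_snd inO_ld le_fun_def)
    also have "\<dots> = pre (sigma (a + b) x) q" using pre_sigma[OF ab q3] by (simp add: add.assoc)
    finally show "pre (sigma a (sigma b x)) q = pre (sigma (a + b) x) q" .
  qed
qed

lemma sigma_split:
  assumes x: "x \<in> XL L" and N: "ld N x" and nN: "n \<le> N"
  shows "sigma n x = concat L (snd x n N) (sigma N x)"
proof -
  have ln: "ld n x" using ld_mono[OF N nN] .
  define w where "w = sigma n x"
  have w: "w \<in> XL L" unfolding w_def using sigma_XL[OF x ln] .
  have e: "N - n + n = N" using nN by (simp add: fun_eq_iff le_fun_def)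
  have lw: "ld (N - n) w" unfolding w_def using ld_sigma[OF ln] e N by simp
  have pw: "pre w (N - n) = snd x n N" unfolding w_def using pre_sigma[OF ln] lw e unfolding w_def by simp
  have dg: "dg (snd x n N) = N - n" using path_props(2)[OF x nN N] .
  have pf: "pf (snd x n N) w" unfolding pf_def dg using lw pw by simp
  have "concat L (snd x n N) (sigma (N - n) w) = w" using concat_sigma[OF w pf] dg by simp
  moreover have "sigma (N - n) w = sigma N x" unfolding w_def using sigma_sigma[OF x ln] lw e
    unfolding w_def by simp
  ultimately show ?thesis unfolding w_def by simp
qed

end


context kg
begin

lemma S_iff: "F \<in> S L \<longleftrightarrow> finite F \<and> (\<forall>(l, m)\<in>F. l \<in> M \<and> m \<in> M \<and> sc l = sc m) \<and>
      (\<forall>p\<in>F. \<forall>q\<in>F. p \<noteq> q \<longrightarrow> Lmin L (fst p) (fst q) = {} \<and> Lmin L (snd p) (snd q) = {})"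
  unfolding S_def by auto

lemma S_pair: "F \<in> S L \<Longrightarrow> (l, m) \<in> F \<Longrightarrow> l \<in> M \<and> m \<in> M \<and> sc l = sc m"
  unfolding S_iff by blast

lemma S_uniq2: "F \<in> S L \<Longrightarrow> (l, m) \<in> F \<Longrightarrow> (l', m') \<in> F \<Longrightarrow> Lmin L m m' \<noteq> {} \<Longrightarrow> (l, m) = (l', m')"
  unfolding S_iff by force

lemma S_uniq1: "F \<in> S L \<Longrightarrow> (l, m) \<in> F \<Longrightarrow> (l', m') \<in> F \<Longrightarrow> Lmin L l l' \<noteq> {} \<Longrightarrow> (l, m) = (l', m')"
  unfolding S_iff by force

lemma S_empty: "{} \<in> S L" unfolding S_iff by simp

lemma pf_common:
  assumes x: "x \<in> XL L" and p: "pf \<mu> x" "pf \<mu>' x"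
  shows "Lmin L \<mu> \<mu>' \<noteq> {}"
proof -
  define N where "N = sup (dg \<mu>) (dg \<mu>')"
  have lN: "ld N x" unfolding N_def using ld_sup[of "dg \<mu>" x "dg \<mu>'"] p unfolding pf_def by blast
  have d1: "dg \<mu> \<le> N" and d2: "dg \<mu>' \<le> N" unfolding N_def by simp_all
  have e1: "pre x N = \<mu> \<cdot> snd x (dg \<mu>) N" using pf_ext[OF x p(1) lN d1] .
  have e2: "pre x N = \<mu>' \<cdot> snd x (dg \<mu>') N" using pf_ext[OF x p(2) lN d2] .
  have c1: "sc \<mu> = rg (snd x (dg \<mu>) N)" using pre_comp_ok[OF x d1 lN] p(1) by (simp add: pf_def)
  have c2: "sc \<mu>' = rg (snd x (dg \<mu>') N)" using pre_comp_ok[OF x d2 lN] p(2) by (simp add: pf_def)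
  have "\<mu> \<cdot> snd x (dg \<mu>) N = \<mu>' \<cdot> snd x (dg \<mu>') N" using e1 e2 by (rule subst)
  then show ?thesis
    by (rule Lmin_ne[OF pf_M[OF x p(1)] pf_M[OF x p(2)] path_props(1)[OF x d1 lN] path_props(1)[OF x d2 lN] c1 c2])
qed

lemma DF_unique: "F \<in> S L \<Longrightarrow> x \<in> XL L \<Longrightarrow> (l, m) \<in> F \<Longrightarrow> (l', m') \<in> F \<Longrightarrow> pf m x \<Longrightarrow> pf m' x
   \<Longrightarrow> (l, m) = (l', m')"
  by (rule S_uniq2[OF _ _ _ pf_common])

lemma theta_eq:
  assumes F: "F \<in> S L" and lm: "(l, m) \<in> F" and x: "x \<in> XL L" and p: "pf m x"
  shows "theta L F x = concat L l (sigma (dg m) x)"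
proof -
  have "(THE pr. pr \<in> F \<and> (\<forall>i. enat (dg (snd pr) i) \<le> fst x i) \<and> snd x 0 (dg (snd pr)) = snd pr) = (l, m)"
  proof (rule the_equality)
    show "(l, m) \<in> F \<and> (\<forall>i. enat (dg (snd (l, m)) i) \<le> fst x i) \<and> snd x 0 (dg (snd (l, m))) = snd (l, m)"
      using lm p by (simp add: pf_def ld_def pre_def)
  next
    fix pr assume "pr \<in> F \<and> (\<forall>i. enat (dg (snd pr) i) \<le> fst x i) \<and> snd x 0 (dg (snd pr)) = snd pr"
    then have a: "(fst pr, snd pr) \<in> F" "pf (snd pr) x" by (auto simp: pf_def ld_def pre_def)
    have "(fst pr, snd pr) = (l, m)" by (rule DF_unique[OF F x a(1) lm a(2) p])
    then show "pr = (l, m)" by simp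
  qed
  then show ?thesis unfolding theta_def Let_def by simp
qed

lemma theta_props:
  assumes F: "F \<in> S L" and lm: "(l, m) \<in> F" and x: "x \<in> XL L" and p: "pf m x"
  shows "theta L F x \<in> XL L" "pf l (theta L F x)"
    "fst (theta L F x) = (\<lambda>i. enat (dg l i) + (fst x i - enat (dg m i)))"
proof -
  have lm': "l \<in> M" "m \<in> M" "sc l = sc m" using S_pair[OF F lm] by auto
  have lx: "ld (dg m) x" using p by (simp add: pf_def)
  have sx: "sigma (dg m) x \<in> XL L" using sigma_XL[OF x lx] .
  have c: "sc l = pre (sigma (dg m) x) 0"
    using sigma_pre0[OF lx] pre_props(4)[OF x lx] p lm' by (simp add: pf_def)
  show "theta L F x \<in> XL L" unfolding theta_eq[OF assms] using concat_XL[OF lm'(1) sx c] .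
  show "pf l (theta L F x)" unfolding theta_eq[OF assms] using pf_concat[OF lm'(1) sx c] .
  show "fst (theta L F x) = (\<lambda>i. enat (dg l i) + (fst x i - enat (dg m i)))"
    unfolding theta_eq[OF assms] concat_fst sigma_fst ..
qed

lemma Sstar_mem: "(a, b) \<in> Sstar F \<longleftrightarrow> (b, a) \<in> F"
  unfolding Sstar_def by force

lemma Sstar_Sstar[simp]: "Sstar (Sstar F) = F"
  unfolding Sstar_def by (force simp: image_iff)

lemma Sstar_S:
  assumes F: "F \<in> S L" shows "Sstar F \<in> S L"
proof -
  have f: "finite (Sstar F)" using F unfolding S_iff Sstar_def by simp
  have p: "\<forall>(l, m)\<in>Sstar F. l \<in> M \<and> m \<in> M \<and> sc l = sc m"
    using S_pair[OF F] by (auto simp: Sstar_mem)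
  have d: "\<forall>p\<in>Sstar F. \<forall>q\<in>Sstar F. p \<noteq> q \<longrightarrow> Lmin L (fst p) (fst q) = {} \<and> Lmin L (snd p) (snd q) = {}"
  proof (intro ballI impI)
    fix p q assume a: "p \<in> Sstar F" "q \<in> Sstar F" "p \<noteq> q"
    obtain a1 b1 a2 b2 where pq: "p = (a1, b1)" "q = (a2, b2)" by (cases p, cases q) auto
    have m: "(b1, a1) \<in> F" "(b2, a2) \<in> F" using a pq by (auto simp: Sstar_mem)
    have ne: "(b1, a1) \<noteq> (b2, a2)" using a(3) pq by auto
    have "Lmin L a1 a2 = {}" using S_uniq2[OF F m] ne by blast
    moreover have "Lmin L b1 b2 = {}" using S_uniq1[OF F m] ne by blast
    ultimately show "Lmin L (fst p) (fst q) = {} \<and> Lmin L (snd p) (snd q) = {}" using pq by simp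
  qed
  show ?thesis unfolding S_iff using f p d by blast
qed

lemma theta_DF_star:
  assumes F: "F \<in> S L" and x: "x \<in> DF L F"
  shows "theta L F x \<in> DF L (Sstar F)"
proof -
  obtain l m where lm: "(l, m) \<in> F" "pf m x" and xX: "x \<in> XL L" using x by (auto simp: DF_iff)
  show ?thesis unfolding DF_iff using theta_props[OF F lm(1) xX lm(2)] lm(1)
    by (auto simp: Sstar_mem)
qed

lemma theta_star:
  assumes F: "F \<in> S L" and x: "x \<in> DF L F"
  shows "theta L (Sstar F) (theta L F x) = x"
proof -
  obtain l m where lm: "(l, m) \<in> F" "pf m x" and xX: "x \<in> XL L" using x by (auto simp: DF_iff)
  have lm': "l \<in> M" "m \<in> M" "sc l = sc m" using S_pair[OF F lm(1)] by auto
  have lx: "ld (dg m) x" using lm(2) by (simp add: pf_def)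
  have sx: "sigma (dg m) x \<in> XL L" using sigma_XL[OF xX lx] .
  have c: "sc l = pre (sigma (dg m) x) 0"
    using sigma_pre0[OF lx] pre_props(4)[OF xX lx] lm(2) lm' by (simp add: pf_def)
  have "theta L (Sstar F) (theta L F x) = concat L m (sigma (dg l) (theta L F x))"
    by (rule theta_eq[OF Sstar_S[OF F] _ theta_props(1,2)[OF F lm(1) xX lm(2)]]) (simp add: Sstar_mem lm(1))
  also have "\<dots> = concat L m (sigma (dg m) x)"
    unfolding theta_eq[OF F lm(1) xX lm(2)] sigma_concat[OF lm'(1) sx c] ..
  also have "\<dots> = x" using concat_sigma[OF xX lm(2)] .
  finally show ?thesis .
qed

lemma theta_XL:
  assumes F: "F \<in> S L" and x: "x \<in> DF L F" shows "theta L F x \<in> XL L"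
proof -
  obtain l m where lm: "(l, m) \<in> F" "pf m x" and xX: "x \<in> XL L" using x by (auto simp: DF_iff)
  show ?thesis using theta_props(1)[OF F lm(1) xX lm(2)] .
qed

lemma DF_XL: "x \<in> DF L F \<Longrightarrow> x \<in> XL L" by (simp add: DF_iff)

end


context kg
begin

lemma Lmin_pfx:
  assumes m: "m \<in> M" and t: "\<tau> \<in> M" and c: "sc m = rg \<tau>"
  shows "Lmin L m (m \<cdot> \<tau>) = {(\<tau>, sc (m \<cdot> \<tau>))}"
proof -
  define \<nu> where "\<nu> = m \<cdot> \<tau>"
  have nM: "\<nu> \<in> M" unfolding \<nu>_def using m t c by simp
  have dn: "dg \<nu> = dg m + dg \<tau>" unfolding \<nu>_def using m t c by simp
  have sup: "sup (dg m) (dg \<nu>) = dg \<nu>" using dn by (simp add: sup_absorb2 le_fun_def)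
  have sn: "sc \<nu> = sc \<tau>" unfolding \<nu>_def using m t c by simp
  show ?thesis unfolding \<nu>_def[symmetric]
  proof (intro equalityI subsetI)
    fix p assume "p \<in> Lmin L m \<nu>"
    then obtain \<alpha> \<beta> where p: "p = (\<alpha>, \<beta>)" "\<alpha> \<in> M" "\<beta> \<in> M" "sc m = rg \<alpha>" "sc \<nu> = rg \<beta>"
      "m \<cdot> \<alpha> = \<nu> \<cdot> \<beta>" "dg (m \<cdot> \<alpha>) = dg \<nu>" by (cases p) (auto simp: Lmin_iff sup)
    have "dg \<nu> + dg \<beta> = dg \<nu>" using p(3,5,6,7) nM by (metis cd)
    then have "dg \<beta> = 0" by (simp add: fun_eq_iff)
    then have b: "\<beta> = sc \<nu>" using deg0_obj[OF p(3)] p(5) by simp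
    then have "m \<cdot> \<alpha> = m \<cdot> \<tau>" using p(6) nM unfolding \<nu>_def by simp
    then have "\<alpha> = \<tau>" using lcancel[OF m p(2) t p(4) c] by simp
    then show "p \<in> {(\<tau>, sc \<nu>)}" using p(1) b by simp
  next
    fix p assume "p \<in> {(\<tau>, sc \<nu>)}"
    then have p: "p = (\<tau>, sc \<nu>)" by simp
    have "\<nu> \<cdot> sc \<nu> = \<nu>" using nM by simp
    then show "p \<in> Lmin L m \<nu>" unfolding p Lmin_iff using m t c nM sup by (simp add: \<nu>_def)
  qed
qed

lemma Sprod_mem: "(a, b) \<in> Sprod L F G \<longleftrightarrow>
   (\<exists>l m \<xi> \<eta> \<alpha> \<beta>. (l, m) \<in> F \<and> (\<xi>, \<eta>) \<in> G \<and> (\<alpha>, \<beta>) \<in> Lmin L m \<xi> \<and> a = l \<cdot> \<alpha> \<and> b = \<eta> \<cdot> \<beta>)"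
  unfolding Sprod_def by force

lemma Sprod_single:
  assumes F: "F \<in> S L" and lm: "(l, m) \<in> F" and x: "x \<in> XL L" and p: "pf m x"
    and N: "dg m \<le> N" "ld N x"
  shows "Sprod L F {(pre x N, pre x N)} = {(l \<cdot> snd x (dg m) N, pre x N)}"
proof -
  define \<nu> where "\<nu> = pre x N"
  define \<tau> where "\<tau> = snd x (dg m) N"
  have mM: "m \<in> M" using pf_M[OF x p] .
  have tM: "\<tau> \<in> M" unfolding \<tau>_def using path_props(1)[OF x N] .
  have c: "sc m = rg \<tau>" unfolding \<tau>_def using pre_comp_ok[OF x N] p by (simp add: pf_def)
  have nu: "\<nu> = m \<cdot> \<tau>" unfolding \<nu>_def \<tau>_def using pf_ext[OF x p N(2,1)] .
  have nM: "\<nu> \<in> M" using nu mM tM c by simp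
  have Lm: "Lmin L m \<nu> = {(\<tau>, sc \<nu>)}" unfolding nu using Lmin_pfx[OF mM tM c] .
  show ?thesis unfolding \<nu>_def[symmetric] \<tau>_def[symmetric]
  proof (intro equalityI subsetI)
    fix q assume "q \<in> Sprod L F {(\<nu>, \<nu>)}"
    then obtain a b where q: "q = (a, b)" "(a, b) \<in> Sprod L F {(\<nu>, \<nu>)}" by (cases q) auto
    then obtain l1 m1 \<alpha> \<beta> where A: "(l1, m1) \<in> F" "(\<alpha>, \<beta>) \<in> Lmin L m1 \<nu>" "a = l1 \<cdot> \<alpha>" "b = \<nu> \<cdot> \<beta>"
      unfolding Sprod_mem by blast
    have B: "\<alpha> \<in> M" "\<beta> \<in> M" "sc m1 = rg \<alpha>" "sc \<nu> = rg \<beta>" "m1 \<cdot> \<alpha> = \<nu> \<cdot> \<beta>"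
      using A(2) by (auto simp: Lmin_iff)
    have m1M: "m1 \<in> M" using S_pair[OF F A(1)] by simp
    have sct: "sc \<tau> = rg \<beta>" using B(4) nu mM tM c by simp
    have "m1 \<cdot> \<alpha> = (m \<cdot> \<tau>) \<cdot> \<beta>" using B(5) nu by simp
    also have "\<dots> = m \<cdot> (\<tau> \<cdot> \<beta>)" by (rule assoc[OF mM tM B(2) c sct])
    finally have e: "m1 \<cdot> \<alpha> = m \<cdot> (\<tau> \<cdot> \<beta>)" .
    have "sc m = rg (\<tau> \<cdot> \<beta>)" using c tM B(2) sct by simp
    then have "Lmin L m1 m \<noteq> {}"
      using Lmin_ne[OF m1M mM B(1) _ B(3) _ e] tM B(2) sct by simp
    then have "(l1, m1) = (l, m)" using S_uniq2[OF F A(1) lm] by simp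
    then have "(\<alpha>, \<beta>) = (\<tau>, sc \<nu>)" using A(2) Lm by simp
    then show "q \<in> {(l \<cdot> \<tau>, \<nu>)}" using q A \<open>(l1, m1) = (l, m)\<close> nM by simp
  next
    fix q assume "q \<in> {(l \<cdot> \<tau>, \<nu>)}"
    then have q: "q = (l \<cdot> \<tau>, \<nu> \<cdot> sc \<nu>)" using nM by simp
    have "(\<tau>, sc \<nu>) \<in> Lmin L m \<nu>" using Lm by simp
    then show "q \<in> Sprod L F {(\<nu>, \<nu>)}" unfolding q using lm
      by (subst Sprod_mem) blast
  qed
qed

definition geq :: "('a \<times> 'a) set \<Rightarrow> ('a \<times> 'a) set \<Rightarrow> ('a, 'k) path \<Rightarrow> bool" where
  "geq F G x \<longleftrightarrow> x \<in> DF L F \<and> x \<in> DF L G \<and> (\<exists>n. ld n x \<and>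
     (\<forall>y. y \<in> XL L \<and> ld n y \<and> pre y n = pre x n \<longrightarrow> y \<in> DF L F \<and> y \<in> DF L G \<and> theta L F y = theta L G y))"

lemma theta_split:
  assumes F: "F \<in> S L" and lm: "(l, m) \<in> F" and y: "y \<in> XL L" and p: "pf m y"
    and N: "dg m \<le> N" "ld N y"
  shows "theta L F y = concat L (l \<cdot> snd y (dg m) N) (sigma N y)"
proof -
  have lm': "l \<in> M" "m \<in> M" "sc l = sc m" using S_pair[OF F lm] by auto
  have tM: "snd y (dg m) N \<in> M" using path_props(1)[OF y N] .
  have c: "sc l = rg (snd y (dg m) N)" using pre_comp_ok[OF y N] p lm' by (simp add: pf_def)
  have sN: "sigma N y \<in> XL L" using sigma_XL[OF y N(2)] .
  have c2: "sc (snd y (dg m) N) = pre (sigma N y) 0" using path_props(4)[OF y N] sigma_pre0[OF N(2)] by simp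
  have "theta L F y = concat L l (sigma (dg m) y)" using theta_eq[OF F lm y p] .
  also have "\<dots> = concat L l (concat L (snd y (dg m) N) (sigma N y))" using sigma_split[OF y N(2,1)] by simp
  also have "\<dots> = concat L (l \<cdot> snd y (dg m) N) (sigma N y)" using concat_concat[OF lm'(1) tM c sN c2] .
  finally show ?thesis .
qed

lemma cyl_pf:
  assumes x: "x \<in> XL L" and y: "y \<in> XL L" and p: "pf m x" and N: "dg m \<le> N" "ld N x" "ld N y"
    and e: "pre y N = pre x N"
  shows "pf m y" "snd y (dg m) N = snd x (dg m) N"
proof -
  have "pre y (dg m) = pre x (dg m)" using pre_agree[OF y x N(3,2) e N(1)] .
  then show py: "pf m y" using p ld_mono[OF N(3,1)] by (simp add: pf_def)
  have "m \<cdot> snd y (dg m) N = m \<cdot> snd x (dg m) N" using pf_ext[OF y py N(3,1)] pf_ext[OF x p N(2,1)] e by simp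
  then show "snd y (dg m) N = snd x (dg m) N"
    using lcancel[OF pf_M[OF x p] path_props(1)[OF y N(1,3)] path_props(1)[OF x N(1,2)]]
      pre_comp_ok[OF y N(1,3)] pre_comp_ok[OF x N(1,2)] p py by (simp add: pf_def)
qed

lemma conc_geq:
  assumes F: "F \<in> S L" and G: "G \<in> S L" and lm: "(l, m) \<in> F" and lm2: "(l', m') \<in> G"
    and x: "x \<in> XL L" and p: "pf m x" and p2: "pf m' x"
    and N: "dg m \<le> N" "dg m' \<le> N" "ld N x"
    and e: "l \<cdot> snd x (dg m) N = l' \<cdot> snd x (dg m') N"
  shows "geq F G x"
  unfolding geq_def
proof (intro conjI exI[of _ N] allI impI)
  show "x \<in> DF L F" "x \<in> DF L G" using lm lm2 x p p2 by (auto simp: DF_iff)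
  show "ld N x" using N(3) .
  fix y assume a: "y \<in> XL L \<and> ld N y \<and> pre y N = pre x N"
  have py: "pf m y" "snd y (dg m) N = snd x (dg m) N" using cyl_pf[OF x _ p N(1,3)] a by auto
  have py2: "pf m' y" "snd y (dg m') N = snd x (dg m') N" using cyl_pf[OF x _ p2 N(2,3)] a by auto
  show "y \<in> DF L F" "y \<in> DF L G" using lm lm2 a py py2 by (auto simp: DF_iff)
  show "theta L F y = theta L G y"
    using theta_split[OF F lm _ py(1) N(1)] theta_split[OF G lm2 _ py2(1) N(2)] a py(2) py2(2) e by simp
qed

lemma concat_inj:
  assumes A: "A \<in> M" "A' \<in> M" and z: "z \<in> XL L" "\<forall>i. fst z i \<noteq> \<infinity>"
    and c: "sc A = pre z 0" "sc A' = pre z 0" and e: "concat L A z = concat L A' z"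
  shows "A = A'"
proof -
  have "dg A = dg A'"
  proof
    fix i
    have "enat (dg A i) + fst z i = enat (dg A' i) + fst z i" using arg_cong[OF e, of fst]
      unfolding concat_fst by (simp add: fun_eq_iff)
    then show "dg A i = dg A' i" using z(2)[rule_format, of i] by (cases "fst z i") auto
  qed
  then have "pre (concat L A z) (dg A) = pre (concat L A' z) (dg A')" using e by simp
  then show ?thesis unfolding pre_concat_l[OF A(1) z(1) c(1)] pre_concat_l[OF A(2) z(1) c(2)] .
qed

lemma geq_conc:
  assumes F: "F \<in> S L" and G: "G \<in> S L" and lm: "(l, m) \<in> F" and lm2: "(l', m') \<in> G"
    and x: "x \<in> XL L" and p: "pf m x" and p2: "pf m' x"
    and N: "dg m \<le> N" "dg m' \<le> N" "ld N x" and g: "geq F G x"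
  shows "l \<cdot> snd x (dg m) N = l' \<cdot> snd x (dg m') N"
proof -
  obtain n where n: "ld n x" "\<And>y. y \<in> XL L \<Longrightarrow> ld n y \<Longrightarrow> pre y n = pre x n \<Longrightarrow> theta L F y = theta L G y"
    using g unfolding geq_def by blast
  define N' where "N' = sup N n"
  have lN': "ld N' x" unfolding N'_def using ld_sup[OF N(3) n(1)] .
  have NN: "N \<le> N'" "n \<le> N'" unfolding N'_def by simp_all
  define y where "y = xp (pre x N')"
  have pM: "pre x N' \<in> M" using pre_props(1)[OF x lN'] .
  have dp: "dg (pre x N') = N'" using pre_props(2)[OF x lN'] .
  have y: "y \<in> XL L" unfolding y_def using xp_XL[OF pM] .
  have ly: "ld N' y" unfolding y_def ld_xp dp by simp
  have py: "pre y N' = pre x N'" unfolding y_def using pre_xp[OF pM] dp by simp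
  have yn: "pre y n = pre x n" using pre_agree[OF y x ly lN' py NN(2)] .
  have th: "theta L F y = theta L G y" using n(2)[OF y ld_mono[OF ly NN(2)] yn] .
  have mN': "dg m \<le> N'" "dg m' \<le> N'" using N NN by (auto intro: order_trans)
  have q1: "pf m y" "snd y (dg m) N' = snd x (dg m) N'" using cyl_pf[OF x y p mN'(1) lN' ly py] by auto
  have q2: "pf m' y" "snd y (dg m') N' = snd x (dg m') N'" using cyl_pf[OF x y p2 mN'(2) lN' ly py] by auto
  have lm': "l \<in> M" "m \<in> M" "sc l = sc m" using S_pair[OF F lm] by auto
  have lm2': "l' \<in> M" "m' \<in> M" "sc l' = sc m'" using S_pair[OF G lm2] by auto
  define z where "z = sigma N' y"
  have z: "z \<in> XL L" unfolding z_def using sigma_XL[OF y ly] .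
  have zf: "\<forall>i. fst z i \<noteq> \<infinity>" unfolding z_def sigma_fst y_def xp_fst by simp
  have t1: "snd x (dg m) N' \<in> M" "sc l = rg (snd x (dg m) N')" "sc (snd x (dg m) N') = pre z 0"
    using path_props[OF x mN'(1) lN'] pre_comp_ok[OF x mN'(1) lN'] p lm' q1(2)
      path_props(4)[OF y mN'(1) ly] sigma_pre0[OF ly] unfolding z_def by (auto simp: pf_def)
  have t2: "snd x (dg m') N' \<in> M" "sc l' = rg (snd x (dg m') N')" "sc (snd x (dg m') N') = pre z 0"
    using path_props[OF x mN'(2) lN'] pre_comp_ok[OF x mN'(2) lN'] p2 lm2' q2(2)
      path_props(4)[OF y mN'(2) ly] sigma_pre0[OF ly] unfolding z_def by (auto simp: pf_def)
  have "concat L (l \<cdot> snd x (dg m) N') z = concat L (l' \<cdot> snd x (dg m') N') z"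
    using theta_split[OF F lm y q1(1) mN'(1) ly] theta_split[OF G lm2 y q2(1) mN'(2) ly] th q1(2) q2(2)
    unfolding z_def by simp
  then have E: "l \<cdot> snd x (dg m) N' = l' \<cdot> snd x (dg m') N'"
    using concat_inj[OF _ _ z zf] t1 t2 lm' lm2' by simp
  have s1: "snd x (dg m) N' = snd x (dg m) N \<cdot> snd x N N'" using path_comp[OF x N(1) NN(1) lN'] by simp
  have s2: "snd x (dg m') N' = snd x (dg m') N \<cdot> snd x N N'" using path_comp[OF x N(2) NN(1) lN'] by simp
  have u1: "snd x (dg m) N \<in> M" "sc (snd x (dg m) N) = rg (snd x N N')" "sc l = rg (snd x (dg m) N)"
    using path_props[OF x N(1,3)] path_props[OF x NN(1) lN'] pre_comp_ok[OF x N(1,3)] p lm'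
    by (auto simp: pf_def)
  have u2: "snd x (dg m') N \<in> M" "sc (snd x (dg m') N) = rg (snd x N N')" "sc l' = rg (snd x (dg m') N)"
    using path_props[OF x N(2,3)] path_props[OF x NN(1) lN'] pre_comp_ok[OF x N(2,3)] p2 lm2'
    by (auto simp: pf_def)
  have nM: "snd x N N' \<in> M" using path_props(1)[OF x NN(1) lN'] .
  have "(l \<cdot> snd x (dg m) N) \<cdot> snd x N N' = (l' \<cdot> snd x (dg m') N) \<cdot> snd x N N'"
    using E s1 s2 assoc[OF lm'(1) u1(1) nM u1(3) u1(2)] assoc[OF lm2'(1) u2(1) nM u2(3) u2(2)] by simp
  then show ?thesis
    using rcancel[OF _ _ nM] u1 u2 lm' lm2' by simp
qed

end


context kg
begin

lemma Lmin_self: "\<nu> \<in> M \<Longrightarrow> Lmin L \<nu> \<nu> = {(sc \<nu>, sc \<nu>)}"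
  using Lmin_pfx[of \<nu> "sc \<nu>"] by simp

lemma single_S: "\<nu> \<in> M \<Longrightarrow> {(\<nu>, \<nu>)} \<in> S L"
  unfolding S_iff by simp

lemma single_ES: "\<nu> \<in> M \<Longrightarrow> {(\<nu>, \<nu>)} \<in> ES L"
proof -
  assume n: "\<nu> \<in> M"
  have "Sprod L {(\<nu>, \<nu>)} {(\<nu>, \<nu>)} = {(\<nu>, \<nu>)}"
  proof (intro equalityI subsetI)
    fix q assume "q \<in> Sprod L {(\<nu>, \<nu>)} {(\<nu>, \<nu>)}"
    then obtain a b where "q = (a, b)" "(a, b) \<in> Sprod L {(\<nu>, \<nu>)} {(\<nu>, \<nu>)}" by (cases q) auto
    then show "q \<in> {(\<nu>, \<nu>)}" unfolding Sprod_mem using n Lmin_self[OF n] by auto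
  next
    fix q assume "q \<in> {(\<nu>, \<nu>)}"
    then have q: "q = (\<nu> \<cdot> sc \<nu>, \<nu> \<cdot> sc \<nu>)" using n by simp
    have l: "(sc \<nu>, sc \<nu>) \<in> Lmin L \<nu> \<nu>" using Lmin_self[OF n] by simp
    show "q \<in> Sprod L {(\<nu>, \<nu>)} {(\<nu>, \<nu>)}" unfolding q Sprod_mem
      apply (rule exI[of _ \<nu>], rule exI[of _ \<nu>], rule exI[of _ \<nu>], rule exI[of _ \<nu>])
      apply (rule exI[of _ "sc \<nu>"], rule exI[of _ "sc \<nu>"])
      using l by simp
  qed
  then show ?thesis unfolding ES_def using single_S[OF n] by simp
qed

lemma ES_diag:
  assumes P: "P \<in> S L" "Sprod L P P = P" and r: "(\<xi>, \<eta>) \<in> P"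
  shows "\<xi> = \<eta>"
proof -
  have "(\<xi>, \<eta>) \<in> Sprod L P P" using P(2) r by simp
  then obtain \<xi>1 \<eta>1 \<xi>2 \<eta>2 \<alpha> \<beta> where A: "(\<xi>1, \<eta>1) \<in> P" "(\<xi>2, \<eta>2) \<in> P" "(\<alpha>, \<beta>) \<in> Lmin L \<eta>1 \<xi>2"
    "\<xi> = \<xi>1 \<cdot> \<alpha>" "\<eta> = \<eta>2 \<cdot> \<beta>" unfolding Sprod_mem by blast
  have B: "\<alpha> \<in> M" "\<beta> \<in> M" "sc \<eta>1 = rg \<alpha>" "sc \<xi>2 = rg \<beta>" "\<eta>1 \<cdot> \<alpha> = \<xi>2 \<cdot> \<beta>"
    using A(3) by (auto simp: Lmin_iff)
  have p0: "\<xi> \<in> M" "\<eta> \<in> M" "sc \<xi> = sc \<eta>" using S_pair[OF P(1) r] by auto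
  have p1: "\<xi>1 \<in> M" "\<eta>1 \<in> M" "sc \<xi>1 = sc \<eta>1" using S_pair[OF P(1) A(1)] by auto
  have p2: "\<xi>2 \<in> M" "\<eta>2 \<in> M" "sc \<xi>2 = sc \<eta>2" using S_pair[OF P(1) A(2)] by auto
  have "\<xi> \<cdot> sc \<xi> = \<xi>" using p0(1) by simp
  then have "\<xi> \<cdot> sc \<xi> = \<xi>1 \<cdot> \<alpha>" using A(4) by (rule trans)
  then have "Lmin L \<xi> \<xi>1 \<noteq> {}"
    by (intro Lmin_ne[OF p0(1) p1(1) sM[OF p0(1)] B(1)]) (use p0(1) p1(3) B(3) in simp_all)
  then have e1: "(\<xi>1, \<eta>1) = (\<xi>, \<eta>)" using S_uniq1[OF P(1) r A(1)] by simp
  have "\<eta> \<cdot> sc \<eta> = \<eta>" using p0(2) by simp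
  then have "\<eta> \<cdot> sc \<eta> = \<eta>2 \<cdot> \<beta>" using A(5) by (rule trans)
  then have "Lmin L \<eta> \<eta>2 \<noteq> {}"
    by (intro Lmin_ne[OF p0(2) p2(2) sM[OF p0(2)] B(2)]) (use p0(2) p2(3) B(4) in simp_all)
  then have e2: "(\<xi>2, \<eta>2) = (\<xi>, \<eta>)" using S_uniq2[OF P(1) r A(2)] by simp
  have "dg \<xi> + dg \<alpha> = dg \<xi>" using A(4) e1 B p0 by (metis Pair_inject cd)
  then have "dg \<alpha> = 0" by (simp add: fun_eq_iff)
  then have a0: "\<alpha> = sc \<eta>" using deg0_obj[OF B(1)] B(3) e1 by simp
  have "dg \<eta> + dg \<beta> = dg \<eta>" using A(5) e2 B p0 by (metis Pair_inject cd)
  then have "dg \<beta> = 0" by (simp add: fun_eq_iff)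
  then have b0: "\<beta> = sc \<xi>" using deg0_obj[OF B(2)] B(4) e2 by simp
  have "\<eta> \<cdot> sc \<eta> = \<xi> \<cdot> sc \<xi>" using B(5) e1 e2 a0 b0 by simp
  then show ?thesis using rid[OF p0(1)] rid[OF p0(2)] by simp
qed

lemma germ_rel:
  assumes F: "F \<in> S L" and G: "G \<in> S L" and xF: "x \<in> DF L F" and xG: "x \<in> DF L G"
  shows "(\<exists>P\<in>ES L. x \<in> DF L P \<and> Sprod L F P = Sprod L G P) \<longleftrightarrow> geq F G x"
proof -
  obtain l m where lm: "(l, m) \<in> F" "pf m x" and x: "x \<in> XL L" using xF by (auto simp: DF_iff)
  obtain l' m' where lm2: "(l', m') \<in> G" "pf m' x" using xG by (auto simp: DF_iff)
  show ?thesis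
  proof
    assume "\<exists>P\<in>ES L. x \<in> DF L P \<and> Sprod L F P = Sprod L G P"
    then obtain P where P: "P \<in> S L" "x \<in> DF L P" "Sprod L F P = Sprod L G P" "Sprod L P P = P"
      by (auto simp: ES_def)
    obtain \<rho>' \<rho> where rp0: "(\<rho>', \<rho>) \<in> P" "pf \<rho> x" using P(2) by (auto simp: DF_iff)
    have "\<rho>' = \<rho>" using ES_diag[OF P(1,4) rp0(1)] .
    then have rp: "(\<rho>, \<rho>) \<in> P" "pf \<rho> x" using rp0 by auto
    define N where "N = sup (dg m) (dg \<rho>)"
    have lN: "ld N x" unfolding N_def using ld_sup[of "dg m" x "dg \<rho>"] lm(2) rp(2) unfolding pf_def by blast
    have N: "dg m \<le> N" "dg \<rho> \<le> N" unfolding N_def by simp_all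
    define \<alpha> where "\<alpha> = snd x (dg m) N"
    define \<beta> where "\<beta> = snd x (dg \<rho>) N"
    have mM: "m \<in> M" using pf_M[OF x lm(2)] .
    have rM: "\<rho> \<in> M" using pf_M[OF x rp(2)] .
    have e1: "pre x N = m \<cdot> \<alpha>" unfolding \<alpha>_def using pf_ext[OF x lm(2) lN N(1)] .
    have e2: "pre x N = \<rho> \<cdot> \<beta>" unfolding \<beta>_def using pf_ext[OF x rp(2) lN N(2)] .
    have aM: "\<alpha> \<in> M" "sc m = rg \<alpha>" unfolding \<alpha>_def using path_props(1)[OF x N(1) lN]
      pre_comp_ok[OF x N(1) lN] lm(2) by (auto simp: pf_def)
    have bM: "\<beta> \<in> M" "sc \<rho> = rg \<beta>" unfolding \<beta>_def using path_props(1)[OF x N(2) lN]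
      pre_comp_ok[OF x N(2) lN] rp(2) by (auto simp: pf_def)
    have "dg (m \<cdot> \<alpha>) = N" using e1[symmetric] pre_props(2)[OF x lN] by simp
    then have dma: "dg (m \<cdot> \<alpha>) = sup (dg m) (dg \<rho>)" using N_def by simp
    have eq: "m \<cdot> \<alpha> = \<rho> \<cdot> \<beta>" using e1 e2 by simp
    have "(\<alpha>, \<beta>) \<in> Lmin L m \<rho>" unfolding Lmin_iff using aM bM eq mM rM dma by blast
    then have "(l \<cdot> \<alpha>, \<rho> \<cdot> \<beta>) \<in> Sprod L F P" unfolding Sprod_mem using lm(1) rp(1) by blast
    then have "(l \<cdot> \<alpha>, \<rho> \<cdot> \<beta>) \<in> Sprod L G P" using P(3) by simp
    then obtain l2 m2 \<rho>2 \<rho>2' \<alpha>2 \<beta>2 where B0: "(l2, m2) \<in> G" "(\<rho>2, \<rho>2') \<in> P" "(\<alpha>2, \<beta>2) \<in> Lmin L m2 \<rho>2"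
      "l \<cdot> \<alpha> = l2 \<cdot> \<alpha>2" "\<rho> \<cdot> \<beta> = \<rho>2' \<cdot> \<beta>2" unfolding Sprod_mem by blast
    have "\<rho>2 = \<rho>2'" using ES_diag[OF P(1,4) B0(2)] .
    then have B: "(l2, m2) \<in> G" "(\<rho>2', \<rho>2) \<in> P" "(\<alpha>2, \<beta>2) \<in> Lmin L m2 \<rho>2"
      "l \<cdot> \<alpha> = l2 \<cdot> \<alpha>2" "\<rho>' \<cdot> \<beta> = \<rho>2' \<cdot> \<beta>2" using B0 \<open>\<rho>' = \<rho>\<close> by auto
    have B2: "\<alpha>2 \<in> M" "\<beta>2 \<in> M" "sc m2 = rg \<alpha>2" "sc \<rho>2 = rg \<beta>2" "m2 \<cdot> \<alpha>2 = \<rho>2 \<cdot> \<beta>2"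
      using B(3) by (auto simp: Lmin_iff)
    have r1: "\<rho>' \<in> M" "sc \<rho>' = sc \<rho>" using S_pair[OF P(1) rp0(1)] by auto
    have r2: "\<rho>2' \<in> M" "\<rho>2 \<in> M" "sc \<rho>2' = sc \<rho>2" using S_pair[OF P(1) B(2)] by auto
    have "Lmin L \<rho>' \<rho>2' \<noteq> {}" using Lmin_ne[OF r1(1) r2(1) bM(1) B2(2) _ _ B(5)] r1 r2 bM B2 by simp
    then have "(\<rho>', \<rho>) = (\<rho>2', \<rho>2)" using S_uniq1[OF P(1) rp0(1) B(2)] by simp
    then have rr: "\<rho>2' = \<rho>'" "\<rho>2 = \<rho>" by auto
    have "\<beta>2 = \<beta>" using lcancel[OF r1(1) B2(2) bM(1)] B(5) rr B2(4) r1(2) bM(2) by simp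
    then have e3: "pre x N = m2 \<cdot> \<alpha>2" using e2 B2(5) rr by simp
    have m2M: "m2 \<in> M" "l2 \<in> M" "sc l2 = sc m2" using S_pair[OF G B(1)] by auto
    have pf2: "pf m2 x" using pre_pf[OF x lN e3 m2M(1) B2(1,3)] .
    have "(l2, m2) = (l', m')" using DF_unique[OF G x B(1) lm2(1) pf2 lm2(2)] .
    then have ll: "l2 = l'" "m2 = m'" by auto
    have "dg (m2 \<cdot> \<alpha>2) = N" using pre_props(2)[OF x lN] unfolding e3 .
    then have "dg m2 + dg \<alpha>2 = N" using m2M(1) B2(1,3) by simp
    moreover have "dg m2 \<le> dg m2 + dg \<alpha>2" by (simp add: le_fun_def)
    ultimately have "dg m' \<le> N" using ll by simp
    moreover have "\<alpha>2 = snd x (dg m') N"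
      using lcancel[OF m2M(1) B2(1) path_props(1)[OF x _ lN, of "dg m'"]] e3 pf_ext[OF x lm2(2) lN]
        B2(3) pre_comp_ok[OF x _ lN, of "dg m'"] lm2(2) ll calculation by (simp add: pf_def)
    ultimately show "geq F G x"
      using conc_geq[OF F G lm(1) lm2(1) x lm(2) lm2(2) N(1) _ lN] B(4) ll \<alpha>_def by simp
  next
    assume g: "geq F G x"
    define N where "N = sup (dg m) (dg m')"
    have lN: "ld N x" unfolding N_def using ld_sup[of "dg m" x "dg m'"] lm(2) lm2(2) unfolding pf_def by blast
    have N: "dg m \<le> N" "dg m' \<le> N" unfolding N_def by simp_all
    have e: "l \<cdot> snd x (dg m) N = l' \<cdot> snd x (dg m') N" using geq_conc[OF F G lm(1) lm2(1) x lm(2) lm2(2) N lN g] .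
    have pM: "pre x N \<in> M" using pre_props(1)[OF x lN] .
    have "x \<in> DF L {(pre x N, pre x N)}" unfolding DF_iff pf_def using x lN pre_props(2)[OF x lN] by simp
    moreover have "Sprod L F {(pre x N, pre x N)} = Sprod L G {(pre x N, pre x N)}"
      using Sprod_single[OF F lm(1) x lm(2) N(1) lN] Sprod_single[OF G lm2(1) x lm2(2) N(2) lN] e by simp
    ultimately show "\<exists>P\<in>ES L. x \<in> DF L P \<and> Sprod L F P = Sprod L G P" using single_ES[OF pM] by blast
  qed
qed

lemma germ_char:
  assumes F: "F \<in> S L" and x: "x \<in> DF L F"
  shows "germ L F x = {(G, x) | G. G \<in> S L \<and> x \<in> DF L G \<and> geq F G x}"
  unfolding germ_def using germ_rel[OF F _ x] by blast

lemma geq_DF: "geq F G x \<Longrightarrow> x \<in> DF L F \<and> x \<in> DF L G"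
  unfolding geq_def by blast

lemma geq_refl:
  assumes F: "F \<in> S L" and x: "x \<in> DF L F" shows "geq F F x"
proof -
  obtain l m where lm: "(l, m) \<in> F" "pf m x" and xX: "x \<in> XL L" using x by (auto simp: DF_iff)
  have lN: "ld (dg m) x" using lm(2) by (simp add: pf_def)
  show ?thesis using conc_geq[OF F F lm(1) lm(1) xX lm(2) lm(2) order_refl order_refl lN] by simp
qed

lemma geq_sym: "geq F G x \<Longrightarrow> geq G F x"
  unfolding geq_def by metis

lemma geq_trans:
  assumes g1: "geq F G x" and g2: "geq G H x" shows "geq F H x"
proof -
  obtain n1 where n1: "ld n1 x" "\<And>y. y \<in> XL L \<Longrightarrow> ld n1 y \<Longrightarrow> pre y n1 = pre x n1 \<Longrightarrow>
      y \<in> DF L F \<and> y \<in> DF L G \<and> theta L F y = theta L G y" using g1 unfolding geq_def by blast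
  obtain n2 where n2: "ld n2 x" "\<And>y. y \<in> XL L \<Longrightarrow> ld n2 y \<Longrightarrow> pre y n2 = pre x n2 \<Longrightarrow>
      y \<in> DF L G \<and> y \<in> DF L H \<and> theta L G y = theta L H y" using g2 unfolding geq_def by blast
  have x: "x \<in> XL L" using g1 by (simp add: geq_def DF_iff)
  define n where "n = sup n1 n2"
  have ln: "ld n x" unfolding n_def using ld_sup[OF n1(1) n2(1)] .
  have nn: "n1 \<le> n" "n2 \<le> n" unfolding n_def by simp_all
  show ?thesis unfolding geq_def
  proof (intro conjI exI[of _ n] allI impI)
    show "x \<in> DF L F" "x \<in> DF L H" using g1 g2 by (auto simp: geq_def)
    show "ld n x" using ln .
    fix y assume a: "y \<in> XL L \<and> ld n y \<and> pre y n = pre x n"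
    have y1: "ld n1 y" "pre y n1 = pre x n1" using a ld_mono[of n y n1] nn pre_agree[OF _ x _ ln _ nn(1)] by auto
    have y2: "ld n2 y" "pre y n2 = pre x n2" using a ld_mono[of n y n2] nn pre_agree[OF _ x _ ln _ nn(2)] by auto
    show "y \<in> DF L F" "y \<in> DF L H" "theta L F y = theta L H y"
      using n1(2)[OF _ y1] n2(2)[OF _ y2] a by auto
  qed
qed

lemma geq_theta: "geq F G x \<Longrightarrow> theta L F x = theta L G x"
proof -
  assume g: "geq F G x"
  then obtain n where "ld n x" "\<And>y. y \<in> XL L \<Longrightarrow> ld n y \<Longrightarrow> pre y n = pre x n \<Longrightarrow>
      theta L F y = theta L G y" unfolding geq_def by blast
  moreover have "x \<in> XL L" using g by (simp add: geq_def DF_iff)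
  ultimately show ?thesis by blast
qed

lemma germ_self: "F \<in> S L \<Longrightarrow> x \<in> DF L F \<Longrightarrow> (F, x) \<in> germ L F x"
  using germ_char geq_refl by blast

lemma germ_eq:
  assumes F: "F \<in> S L" and G: "G \<in> S L" and g: "geq F G x"
  shows "germ L F x = germ L G x"
proof -
  have xF: "x \<in> DF L F" and xG: "x \<in> DF L G" using g by (auto simp: geq_def)
  have "geq F H x \<longleftrightarrow> geq G H x" for H
  proof
    assume "geq F H x" then show "geq G H x" using geq_trans[OF geq_sym[OF g]] by simp
  next
    assume "geq G H x" then show "geq F H x" using geq_trans[OF g] by simp
  qed
  then show ?thesis unfolding germ_char[OF F xF] germ_char[OF G xG] by simp
qed

lemma germ_eq_iff:
  assumes F: "F \<in> S L" and G: "G \<in> S L" and x: "x \<in> DF L F" and y: "y \<in> DF L G"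
  shows "germ L F x = germ L G y \<longleftrightarrow> x = y \<and> geq F G x"
proof
  assume e: "germ L F x = germ L G y"
  have "(G, y) \<in> germ L F x" using e germ_self[OF G y] by simp
  then show "x = y \<and> geq F G x" unfolding germ_char[OF F x] by simp
next
  assume a: "x = y \<and> geq F G x"
  then have "germ L F x = germ L G x" using germ_eq[OF F G] by blast
  then show "germ L F x = germ L G y" using a by simp
qed

lemma grep_germ:
  assumes F: "F \<in> S L" and x: "x \<in> DF L F"
  shows "fst (grep (germ L F x)) \<in> S L" "snd (grep (germ L F x)) = x"
    "x \<in> DF L (fst (grep (germ L F x)))" "geq F (fst (grep (germ L F x))) x"
proof -
  have "grep (germ L F x) \<in> germ L F x" unfolding grep_def using germ_self[OF F x] by (rule someI)
  then show "fst (grep (germ L F x)) \<in> S L" "snd (grep (germ L F x)) = x"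
    "x \<in> DF L (fst (grep (germ L F x)))" "geq F (fst (grep (germ L F x))) x"
    unfolding germ_char[OF F x] by auto
qed

lemma gsrc_germ: "F \<in> S L \<Longrightarrow> x \<in> DF L F \<Longrightarrow> gsrc (germ L F x) = x"
  unfolding gsrc_def using grep_germ by blast

lemma gran_germ:
  assumes F: "F \<in> S L" and x: "x \<in> DF L F" shows "gran L (germ L F x) = theta L F x"
proof -
  have "theta L F x = theta L (fst (grep (germ L F x))) x" using geq_theta[OF grep_germ(4)[OF F x]] .
  then show ?thesis unfolding gran_def grep_germ(2)[OF F x] by simp
qed

end


context kg
begin

lemma Lmin_dg: "(\<alpha>, \<beta>) \<in> Lmin L m \<xi> \<Longrightarrow> m \<in> M \<Longrightarrow> dg \<alpha> = sup (dg m) (dg \<xi>) - dg m"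
proof -
  assume a: "(\<alpha>, \<beta>) \<in> Lmin L m \<xi>" "m \<in> M"
  then have "dg (m \<cdot> \<alpha>) = sup (dg m) (dg \<xi>)" "\<alpha> \<in> M" "sc m = rg \<alpha>" unfolding Lmin_iff by auto
  then have "dg m + dg \<alpha> = sup (dg m) (dg \<xi>)" using a(2) by simp
  then show ?thesis by (metis add_diff_cancel_left')
qed

lemma Lmin_dg2: "(\<alpha>, \<beta>) \<in> Lmin L m \<xi> \<Longrightarrow> \<xi> \<in> M \<Longrightarrow> dg \<beta> = sup (dg m) (dg \<xi>) - dg \<xi>"
proof -
  assume a: "(\<alpha>, \<beta>) \<in> Lmin L m \<xi>" "\<xi> \<in> M"
  then have "dg (\<xi> \<cdot> \<beta>) = sup (dg m) (dg \<xi>)" "\<beta> \<in> M" "sc \<xi> = rg \<beta>" unfolding Lmin_iff by auto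
  then have "dg \<xi> + dg \<beta> = sup (dg m) (dg \<xi>)" using a(2) by simp
  then show ?thesis by (metis add_diff_cancel_left')
qed

lemma Lmin_ext_ne:
  assumes "(\<gamma>, \<gamma>') \<in> Lmin L (a \<cdot> b) (c \<cdot> d)" "a \<in> M" "b \<in> M" "c \<in> M" "d \<in> M" "sc a = rg b" "sc c = rg d"
  shows "Lmin L a c \<noteq> {}" "b \<cdot> \<gamma> \<in> M" "d \<cdot> \<gamma>' \<in> M" "a \<cdot> (b \<cdot> \<gamma>) = c \<cdot> (d \<cdot> \<gamma>')"
    "sc b = rg \<gamma>" "sc d = rg \<gamma>'" "\<gamma> \<in> M" "\<gamma>' \<in> M"
proof -
  have g: "\<gamma> \<in> M" "\<gamma>' \<in> M" "sc (a \<cdot> b) = rg \<gamma>" "sc (c \<cdot> d) = rg \<gamma>'" "(a \<cdot> b) \<cdot> \<gamma> = (c \<cdot> d) \<cdot> \<gamma>'"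
    using assms(1) by (auto simp: Lmin_iff)
  show s1: "sc b = rg \<gamma>" and s2: "sc d = rg \<gamma>'" using g assms by auto
  show "b \<cdot> \<gamma> \<in> M" "d \<cdot> \<gamma>' \<in> M" "\<gamma> \<in> M" "\<gamma>' \<in> M" using g assms s1 s2 by auto
  show e: "a \<cdot> (b \<cdot> \<gamma>) = c \<cdot> (d \<cdot> \<gamma>')"
    using g(5) assoc[OF assms(2,3) g(1) assms(6) s1] assoc[OF assms(4,5) g(2) assms(7) s2] by simp
  show "Lmin L a c \<noteq> {}"
    by (rule Lmin_ne[OF assms(2,4) _ _ _ _ e]) (use assms g s1 s2 in auto)
qed

lemma Sprod_S:
  assumes fa: "finitely_aligned L" and F: "F \<in> S L" and G: "G \<in> S L"
  shows "Sprod L F G \<in> S L"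
proof -
  have fin: "finite (Sprod L F G)"
  proof -
    have "finite F" "finite G" using F G by (auto simp: S_iff)
    moreover have "finite {(cmp L (fst p) \<alpha>, cmp L (snd q) \<beta>) | \<alpha> \<beta>. (\<alpha>, \<beta>) \<in> Lmin L (snd p) (fst q)}"
      if "p \<in> F" "q \<in> G" for p q
    proof -
      have "snd p \<in> M" "fst q \<in> M" using S_pair[OF F, of "fst p" "snd p"] S_pair[OF G, of "fst q" "snd q"] that
        by auto
      then have "finite (Lmin L (snd p) (fst q))" using fa by (simp add: finitely_aligned_def)
      then have "finite ((\<lambda>(\<alpha>, \<beta>). (cmp L (fst p) \<alpha>, cmp L (snd q) \<beta>)) ` Lmin L (snd p) (fst q))" by simp
      moreover have "{(cmp L (fst p) \<alpha>, cmp L (snd q) \<beta>) | \<alpha> \<beta>. (\<alpha>, \<beta>) \<in> Lmin L (snd p) (fst q)} =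
          (\<lambda>(\<alpha>, \<beta>). (cmp L (fst p) \<alpha>, cmp L (snd q) \<beta>)) ` Lmin L (snd p) (fst q)" by force
      ultimately show ?thesis by simp
    qed
    ultimately show ?thesis unfolding Sprod_def by blast
  qed
  have pairs: "\<forall>(a, b)\<in>Sprod L F G. a \<in> M \<and> b \<in> M \<and> sc a = sc b"
  proof (intro ballI, clarify)
    fix a b assume "(a, b) \<in> Sprod L F G"
    then obtain l m \<xi> \<eta> \<alpha> \<beta> where A: "(l, m) \<in> F" "(\<xi>, \<eta>) \<in> G" "(\<alpha>, \<beta>) \<in> Lmin L m \<xi>" "a = l \<cdot> \<alpha>" "b = \<eta> \<cdot> \<beta>"
      unfolding Sprod_mem by blast
    have p1: "l \<in> M" "m \<in> M" "sc l = sc m" using S_pair[OF F A(1)] by auto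
    have p2: "\<xi> \<in> M" "\<eta> \<in> M" "sc \<xi> = sc \<eta>" using S_pair[OF G A(2)] by auto
    have B: "\<alpha> \<in> M" "\<beta> \<in> M" "sc m = rg \<alpha>" "sc \<xi> = rg \<beta>" "m \<cdot> \<alpha> = \<xi> \<cdot> \<beta>" using A(3) by (auto simp: Lmin_iff)
    have "sc (m \<cdot> \<alpha>) = sc (\<xi> \<cdot> \<beta>)" using B(5) by simp
    then have "sc \<alpha> = sc \<beta>" by (metis cs p1(2) B(1,3) p2(1) B(2,4))
    then show "a \<in> M \<and> b \<in> M \<and> sc a = sc b" using A(4,5) p1 p2 B by simp
  qed
  have dist: "\<forall>p\<in>Sprod L F G. \<forall>q\<in>Sprod L F G. p \<noteq> q \<longrightarrow>
      Lmin L (fst p) (fst q) = {} \<and> Lmin L (snd p) (snd q) = {}"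
  proof (intro ballI impI)
    fix p q assume pq: "p \<in> Sprod L F G" "q \<in> Sprod L F G" "p \<noteq> q"
    obtain a1 b1 a2 b2 where ab: "p = (a1, b1)" "q = (a2, b2)" by (cases p, cases q) auto
    obtain l1 m1 \<xi>1 \<eta>1 \<alpha>1 \<beta>1 where A1: "(l1, m1) \<in> F" "(\<xi>1, \<eta>1) \<in> G" "(\<alpha>1, \<beta>1) \<in> Lmin L m1 \<xi>1"
      "a1 = l1 \<cdot> \<alpha>1" "b1 = \<eta>1 \<cdot> \<beta>1" using pq(1) unfolding ab Sprod_mem by blast
    obtain l2 m2 \<xi>2 \<eta>2 \<alpha>2 \<beta>2 where A2: "(l2, m2) \<in> F" "(\<xi>2, \<eta>2) \<in> G" "(\<alpha>2, \<beta>2) \<in> Lmin L m2 \<xi>2"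
      "a2 = l2 \<cdot> \<alpha>2" "b2 = \<eta>2 \<cdot> \<beta>2" using pq(2) unfolding ab Sprod_mem by blast
    have P1: "l1 \<in> M" "m1 \<in> M" "sc l1 = sc m1" using S_pair[OF F A1(1)] by auto
    have Q1: "\<xi>1 \<in> M" "\<eta>1 \<in> M" "sc \<xi>1 = sc \<eta>1" using S_pair[OF G A1(2)] by auto
    have P2: "l2 \<in> M" "m2 \<in> M" "sc l2 = sc m2" using S_pair[OF F A2(1)] by auto
    have Q2: "\<xi>2 \<in> M" "\<eta>2 \<in> M" "sc \<xi>2 = sc \<eta>2" using S_pair[OF G A2(2)] by auto
    have B1: "\<alpha>1 \<in> M" "\<beta>1 \<in> M" "sc m1 = rg \<alpha>1" "sc \<xi>1 = rg \<beta>1" "m1 \<cdot> \<alpha>1 = \<xi>1 \<cdot> \<beta>1"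
      using A1(3) by (auto simp: Lmin_iff)
    have B2: "\<alpha>2 \<in> M" "\<beta>2 \<in> M" "sc m2 = rg \<alpha>2" "sc \<xi>2 = rg \<beta>2" "m2 \<cdot> \<alpha>2 = \<xi>2 \<cdot> \<beta>2"
      using A2(3) by (auto simp: Lmin_iff)
    have s1: "sc l1 = rg \<alpha>1" "sc \<eta>1 = rg \<beta>1" using P1 Q1 B1 by auto
    have s2: "sc l2 = rg \<alpha>2" "sc \<eta>2 = rg \<beta>2" using P2 Q2 B2 by auto
    have "Lmin L a1 a2 = {}"
    proof (rule ccontr)
      assume "Lmin L a1 a2 \<noteq> {}"
      then obtain \<gamma> \<gamma>' where g: "(\<gamma>, \<gamma>') \<in> Lmin L (l1 \<cdot> \<alpha>1) (l2 \<cdot> \<alpha>2)" using A1(4) A2(4) by auto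
      note E = Lmin_ext_ne[OF g P1(1) B1(1) P2(1) B2(1) s1(1) s2(1)]
      have "(l1, m1) = (l2, m2)" using S_uniq1[OF F A1(1) A2(1) E(1)] .
      then have lm: "l1 = l2" "m1 = m2" by auto
      have e1: "\<alpha>1 \<cdot> \<gamma> = \<alpha>2 \<cdot> \<gamma>'" using lcancel[OF P1(1) E(2) E(3)] E(4) s1 s2 B1 B2 E lm P1 P2 by simp
      have "m1 \<cdot> (\<alpha>1 \<cdot> \<gamma>) = m1 \<cdot> (\<alpha>2 \<cdot> \<gamma>')" using e1 by simp
      then have "(m1 \<cdot> \<alpha>1) \<cdot> \<gamma> = (m2 \<cdot> \<alpha>2) \<cdot> \<gamma>'"
        using assoc[OF P1(2) B1(1) E(7) B1(3) E(5)] assoc[OF P2(2) B2(1) E(8) B2(3) E(6)] lm by simp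
      then have e2: "(\<xi>1 \<cdot> \<beta>1) \<cdot> \<gamma> = (\<xi>2 \<cdot> \<beta>2) \<cdot> \<gamma>'" using B1(5) B2(5) by simp
      have "sc (\<xi>1 \<cdot> \<beta>1) = sc (m1 \<cdot> \<alpha>1)" using B1(5) by simp
      also have "\<dots> = sc \<alpha>1" using cs[OF P1(2) B1(1) B1(3)] .
      finally have c1: "sc (\<xi>1 \<cdot> \<beta>1) = rg \<gamma>" using E(5) by simp
      have "sc (\<xi>2 \<cdot> \<beta>2) = sc (m2 \<cdot> \<alpha>2)" using B2(5) by simp
      also have "\<dots> = sc \<alpha>2" using cs[OF P2(2) B2(1) B2(3)] .
      finally have c2: "sc (\<xi>2 \<cdot> \<beta>2) = rg \<gamma>'" using E(6) by simp
      have "Lmin L (\<xi>1 \<cdot> \<beta>1) (\<xi>2 \<cdot> \<beta>2) \<noteq> {}"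
        by (rule Lmin_ne[OF _ _ E(7,8) c1 c2 e2]) (use B1 B2 Q1 Q2 in simp_all)
      then obtain \<delta> \<delta>' where "(\<delta>, \<delta>') \<in> Lmin L (\<xi>1 \<cdot> \<beta>1) (\<xi>2 \<cdot> \<beta>2)" by auto
      then have "Lmin L \<xi>1 \<xi>2 \<noteq> {}" using Lmin_ext_ne(1) Q1 Q2 B1 B2 by blast
      then have "(\<xi>1, \<eta>1) = (\<xi>2, \<eta>2)" using S_uniq1[OF G A1(2) A2(2)] by simp
      then have xe: "\<xi>1 = \<xi>2" "\<eta>1 = \<eta>2" by auto
      have "dg \<alpha>1 = dg \<alpha>2" using Lmin_dg[OF A1(3) P1(2)] Lmin_dg[OF A2(3) P2(2)] lm xe by simp
      then have a12: "\<alpha>1 = \<alpha>2" using factor_unique[OF B1(1) E(7) B2(1) E(8) E(5) E(6) e1] by simp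
      then have "\<xi>1 \<cdot> \<beta>1 = \<xi>1 \<cdot> \<beta>2" using B1(5) B2(5) lm xe by simp
      then have "\<beta>1 = \<beta>2" using lcancel[OF Q1(1) B1(2) B2(2) B1(4)] B2(4) xe by simp
      then have "p = q" using ab A1 A2 lm xe a12 by simp
      then show False using pq(3) by simp
    qed
    moreover have "Lmin L b1 b2 = {}"
    proof (rule ccontr)
      assume "Lmin L b1 b2 \<noteq> {}"
      then obtain \<gamma> \<gamma>' where g: "(\<gamma>, \<gamma>') \<in> Lmin L (\<eta>1 \<cdot> \<beta>1) (\<eta>2 \<cdot> \<beta>2)" using A1(5) A2(5) by auto
      note E = Lmin_ext_ne[OF g Q1(2) B1(2) Q2(2) B2(2) s1(2) s2(2)]
      have "(\<xi>1, \<eta>1) = (\<xi>2, \<eta>2)" using S_uniq2[OF G A1(2) A2(2) E(1)] .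
      then have xe: "\<xi>1 = \<xi>2" "\<eta>1 = \<eta>2" by auto
      have e1: "\<beta>1 \<cdot> \<gamma> = \<beta>2 \<cdot> \<gamma>'" using lcancel[OF Q1(2) E(2) E(3)] E(4) s1 s2 B1 B2 E xe by simp
      have "\<xi>1 \<cdot> (\<beta>1 \<cdot> \<gamma>) = \<xi>1 \<cdot> (\<beta>2 \<cdot> \<gamma>')" using e1 by simp
      then have "(\<xi>1 \<cdot> \<beta>1) \<cdot> \<gamma> = (\<xi>2 \<cdot> \<beta>2) \<cdot> \<gamma>'"
        using assoc[OF Q1(1) B1(2) E(7) B1(4) E(5)] assoc[OF Q2(1) B2(2) E(8) B2(4) E(6)] xe by simp
      then have e2: "(m1 \<cdot> \<alpha>1) \<cdot> \<gamma> = (m2 \<cdot> \<alpha>2) \<cdot> \<gamma>'" using B1(5) B2(5) by simp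
      have "sc (m1 \<cdot> \<alpha>1) = sc (\<xi>1 \<cdot> \<beta>1)" using B1(5) by simp
      also have "\<dots> = sc \<beta>1" using cs[OF Q1(1) B1(2) B1(4)] .
      finally have c1: "sc (m1 \<cdot> \<alpha>1) = rg \<gamma>" using E(5) by simp
      have "sc (m2 \<cdot> \<alpha>2) = sc (\<xi>2 \<cdot> \<beta>2)" using B2(5) by simp
      also have "\<dots> = sc \<beta>2" using cs[OF Q2(1) B2(2) B2(4)] .
      finally have c2: "sc (m2 \<cdot> \<alpha>2) = rg \<gamma>'" using E(6) by simp
      have "Lmin L (m1 \<cdot> \<alpha>1) (m2 \<cdot> \<alpha>2) \<noteq> {}"
        by (rule Lmin_ne[OF _ _ E(7,8) c1 c2 e2]) (use B1 B2 P1 P2 Q1 Q2 in simp_all)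
      then obtain \<delta> \<delta>' where "(\<delta>, \<delta>') \<in> Lmin L (m1 \<cdot> \<alpha>1) (m2 \<cdot> \<alpha>2)" by auto
      then have "Lmin L m1 m2 \<noteq> {}" using Lmin_ext_ne(1) P1 P2 B1 B2 by blast
      then have "(l1, m1) = (l2, m2)" using S_uniq2[OF F A1(1) A2(1)] by simp
      then have lm: "l1 = l2" "m1 = m2" by auto
      have "dg \<beta>1 = dg \<beta>2" using Lmin_dg2[OF A1(3) Q1(1)] Lmin_dg2[OF A2(3) Q2(1)] lm xe by simp
      then have b12: "\<beta>1 = \<beta>2" using factor_unique[OF B1(2) E(7) B2(2) E(8) E(5) E(6) e1] by simp
      then have "m1 \<cdot> \<alpha>1 = m1 \<cdot> \<alpha>2" using B1(5) B2(5) lm xe by simp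
      then have "\<alpha>1 = \<alpha>2" using lcancel[OF P1(2) B1(1) B2(1) B1(3)] B2(3) lm by simp
      then have "p = q" using ab A1 A2 lm xe b12 by simp
      then show False using pq(3) by simp
    qed
    ultimately show "Lmin L (fst p) (fst q) = {} \<and> Lmin L (snd p) (snd q) = {}" using ab by simp
  qed
  show ?thesis unfolding S_iff using fin pairs dist by blast
qed

end


context kg
begin

lemma DF_Sprod_fwd:
  assumes fa: "finitely_aligned L" and F: "F \<in> S L" and G: "G \<in> S L" and x: "x \<in> DF L (Sprod L F G)"
  shows "x \<in> DF L G" "theta L G x \<in> DF L F" "theta L (Sprod L F G) x = theta L F (theta L G x)"
proof -
  have X: "x \<in> XL L" using x by (simp add: DF_iff)
  obtain a b where ab: "(a, b) \<in> Sprod L F G" "pf b x" using x by (auto simp: DF_iff)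
  then obtain l m \<xi> \<eta> \<alpha> \<beta> where A: "(l, m) \<in> F" "(\<xi>, \<eta>) \<in> G" "(\<alpha>, \<beta>) \<in> Lmin L m \<xi>"
    "a = l \<cdot> \<alpha>" "b = \<eta> \<cdot> \<beta>" unfolding Sprod_mem by blast
  have P: "l \<in> M" "m \<in> M" "sc l = sc m" using S_pair[OF F A(1)] by auto
  have Q: "\<xi> \<in> M" "\<eta> \<in> M" "sc \<xi> = sc \<eta>" using S_pair[OF G A(2)] by auto
  have B: "\<alpha> \<in> M" "\<beta> \<in> M" "sc m = rg \<alpha>" "sc \<xi> = rg \<beta>" "m \<cdot> \<alpha> = \<xi> \<cdot> \<beta>"
    using A(3) by (auto simp: Lmin_iff)
  have sb: "sc \<eta> = rg \<beta>" using B Q by simp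
  have db: "dg b = dg \<beta> + dg \<eta>" using A(5) Q sb B by (simp add: add.commute)
  have lb0: "ld (dg b) x" and pb0: "pre x (dg b) = b" using ab(2) unfolding pf_def by auto
  have lb: "ld (dg \<beta> + dg \<eta>) x" using lb0 unfolding db .
  have pb: "pre x (dg \<beta> + dg \<eta>) = \<eta> \<cdot> \<beta>" using pb0 unfolding db A(5)[symmetric] .
  have pe: "pf \<eta> x" using pre_pf[OF X lb pb Q(2) B(2) sb] .
  show xG: "x \<in> DF L G" using X A(2) pe by (auto simp: DF_iff)
  have le: "ld (dg \<eta>) x" using pe by (simp add: pf_def)
  define w where "w = sigma (dg \<eta>) x"
  have w: "w \<in> XL L" unfolding w_def using sigma_XL[OF X le] .
  have lw: "ld (dg \<beta>) w" unfolding w_def using ld_sigma[OF le] lb by simp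
  have "pre x (dg \<beta> + dg \<eta>) = \<eta> \<cdot> pre w (dg \<beta>)" unfolding w_def
    using pre_sigma_split[OF X le lb] pe by (simp add: pf_def)
  then have eqb: "\<eta> \<cdot> pre w (dg \<beta>) = \<eta> \<cdot> \<beta>" using pb by simp
  have c1: "sc \<eta> = rg (pre w (dg \<beta>))" using pre_props(3)[OF w lw] sigma_pre0[OF le]
    pre_props(4)[OF X le] pe unfolding w_def by (simp add: pf_def)
  have pwb: "pre w (dg \<beta>) = \<beta>" by (rule lcancel[OF Q(2) pre_props(1)[OF w lw] B(2) c1 sb eqb])
  have pfb: "pf \<beta> w" using lw pwb by (simp add: pf_def)
  define z where "z = sigma (dg \<beta> + dg \<eta>) x"
  have z: "z \<in> XL L" unfolding z_def using sigma_XL[OF X lb] .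
  have wz: "sigma (dg \<beta>) w = z" unfolding w_def z_def using sigma_sigma[OF X le] lw unfolding w_def by simp
  have wcz: "w = concat L \<beta> z" using concat_sigma[OF w pfb] wz by simp
  have bz: "sc \<beta> = pre z 0"
  proof -
    have "pre z 0 = snd x (dg \<beta> + dg \<eta>) (dg \<beta> + dg \<eta>)" unfolding z_def using sigma_pre0[OF lb] .
    also have "\<dots> = sc (pre x (dg \<beta> + dg \<eta>))" using pre_props(4)[OF X lb] by simp
    also have "\<dots> = sc \<beta>" using pb Q(2) B(2) sb by simp
    finally show ?thesis by simp
  qed
  have sa: "sc \<alpha> = sc \<beta>" by (metis cs P(2) B(1,3) Q(1) B(2,4) B(5))
  have az: "sc \<alpha> = pre z 0" using sa bz by simp
  have ty: "theta L G x = concat L \<xi> w" using theta_eq[OF G A(2) X pe] unfolding w_def .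
  also have "\<dots> = concat L (\<xi> \<cdot> \<beta>) z" unfolding wcz using concat_concat[OF Q(1) B(2) B(4) z bz] .
  also have "\<dots> = concat L (m \<cdot> \<alpha>) z" using B(5) by simp
  also have "\<dots> = concat L m (concat L \<alpha> z)" using concat_concat[OF P(2) B(1) B(3) z az] by simp
  finally have ty2: "theta L G x = concat L m (concat L \<alpha> z)" .
  have az2: "concat L \<alpha> z \<in> XL L" using concat_XL[OF B(1) z az] .
  have maz: "sc m = pre (concat L \<alpha> z) 0" using concat_pre0[OF B(1) z az] B(3) by simp
  have pfm: "pf m (theta L G x)" unfolding ty2 using pf_concat[OF P(2) az2 maz] .
  have tX: "theta L G x \<in> XL L" using theta_XL[OF G xG] .
  show "theta L G x \<in> DF L F" using tX A(1) pfm by (auto simp: DF_iff)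
  have "theta L F (theta L G x) = concat L l (sigma (dg m) (theta L G x))" using theta_eq[OF F A(1) tX pfm] .
  also have "\<dots> = concat L l (concat L \<alpha> z)" unfolding ty2 using sigma_concat[OF P(2) az2 maz] by simp
  also have "\<dots> = concat L (l \<cdot> \<alpha>) z" using concat_concat[OF P(1) B(1) _ z az] P B by simp
  finally have e1: "theta L F (theta L G x) = concat L (l \<cdot> \<alpha>) z" .
  have "theta L (Sprod L F G) x = concat L a (sigma (dg b) x)"
    using theta_eq[OF Sprod_S[OF fa F G] ab(1) X ab(2)] .
  then show "theta L (Sprod L F G) x = theta L F (theta L G x)" using e1 A(4) db unfolding z_def by simp
qed

lemma DF_Sprod_bwd:
  assumes F: "F \<in> S L" and G: "G \<in> S L" and xG: "x \<in> DF L G" and tF: "theta L G x \<in> DF L F"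
  shows "x \<in> DF L (Sprod L F G)"
proof -
  have X: "x \<in> XL L" using xG by (simp add: DF_iff)
  obtain \<xi> \<eta> where A2: "(\<xi>, \<eta>) \<in> G" "pf \<eta> x" using xG by (auto simp: DF_iff)
  obtain l m where A1: "(l, m) \<in> F" "pf m (theta L G x)" using tF by (auto simp: DF_iff)
  have P: "l \<in> M" "m \<in> M" "sc l = sc m" using S_pair[OF F A1(1)] by auto
  have Q: "\<xi> \<in> M" "\<eta> \<in> M" "sc \<xi> = sc \<eta>" using S_pair[OF G A2(1)] by auto
  define y where "y = theta L G x"
  have Y: "y \<in> XL L" unfolding y_def using theta_XL[OF G xG] .
  have pxi: "pf \<xi> y" unfolding y_def using theta_props(2)[OF G A2(1) X A2(2)] .
  have pm: "pf m y" using A1(2) unfolding y_def .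
  define N where "N = sup (dg m) (dg \<xi>)"
  have lN: "ld N y" unfolding N_def using ld_sup[of "dg m" y "dg \<xi>"] pm pxi unfolding pf_def by blast
  have N: "dg m \<le> N" "dg \<xi> \<le> N" unfolding N_def by simp_all
  have le: "ld (dg \<eta>) x" using A2(2) by (simp add: pf_def)
  define w where "w = sigma (dg \<eta>) x"
  have w: "w \<in> XL L" unfolding w_def using sigma_XL[OF X le] .
  have yw: "y = concat L \<xi> w" unfolding y_def w_def using theta_eq[OF G A2(1) X A2(2)] .
  have sxw: "sc \<xi> = pre w 0" unfolding w_def using sigma_pre0[OF le] pre_props(4)[OF X le] A2(2) Q
    by (simp add: pf_def)
  have lNw: "ld (N - dg \<xi>) w" using ld_concat2[OF N(2)] lN unfolding yw by simp
  define \<alpha> where "\<alpha> = snd y (dg m) N"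
  define \<beta> where "\<beta> = pre w (N - dg \<xi>)"
  have e1: "pre y N = m \<cdot> \<alpha>" unfolding \<alpha>_def using pf_ext[OF Y pm lN N(1)] .
  have e2: "pre y N = \<xi> \<cdot> \<beta>" unfolding \<beta>_def yw using pre_concat[OF Q(1) w sxw N(2) lNw] .
  have aM: "\<alpha> \<in> M" "sc m = rg \<alpha>" unfolding \<alpha>_def using path_props(1)[OF Y N(1) lN]
      pre_comp_ok[OF Y N(1) lN] pm by (auto simp: pf_def)
  have bM: "\<beta> \<in> M" "sc \<xi> = rg \<beta>" unfolding \<beta>_def using pre_props(1,3)[OF w lNw] sxw by auto
  have "dg (m \<cdot> \<alpha>) = N" using e1[symmetric] pre_props(2)[OF Y lN] by simp
  then have dma: "dg (m \<cdot> \<alpha>) = sup (dg m) (dg \<xi>)" using N_def by simp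
  have eq: "m \<cdot> \<alpha> = \<xi> \<cdot> \<beta>" using e1 e2 by simp
  have Lm: "(\<alpha>, \<beta>) \<in> Lmin L m \<xi>" unfolding Lmin_iff using aM bM eq P Q dma by blast
  have mem: "(l \<cdot> \<alpha>, \<eta> \<cdot> \<beta>) \<in> Sprod L F G" unfolding Sprod_mem using A1(1) A2(1) Lm by blast
  have lx: "ld (N - dg \<xi> + dg \<eta>) x" using ld_sigma[OF le] lNw unfolding w_def by simp
  have px: "pre x (N - dg \<xi> + dg \<eta>) = \<eta> \<cdot> \<beta>" unfolding \<beta>_def w_def
    using pre_sigma_split[OF X le lx] A2(2) by (simp add: pf_def)
  have sb: "sc \<eta> = rg \<beta>" using bM Q by simp
  have "dg \<beta> = N - dg \<xi>" unfolding \<beta>_def using pre_props(2)[OF w lNw] .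
  then have dgb: "dg (\<eta> \<cdot> \<beta>) = N - dg \<xi> + dg \<eta>" using Q(2) bM(1) sb by (simp add: add.commute)
  have "pf (\<eta> \<cdot> \<beta>) x" unfolding pf_def dgb using lx px by simp
  then show ?thesis using X mem by (auto simp: DF_iff)
qed

lemma DF_Sprod:
  assumes fa: "finitely_aligned L" and F: "F \<in> S L" and G: "G \<in> S L"
  shows "x \<in> DF L (Sprod L F G) \<longleftrightarrow> x \<in> DF L G \<and> theta L G x \<in> DF L F"
  using DF_Sprod_fwd[OF fa F G] DF_Sprod_bwd[OF F G] by blast

lemma theta_Sprod:
  assumes fa: "finitely_aligned L" and F: "F \<in> S L" and G: "G \<in> S L" and x: "x \<in> DF L (Sprod L F G)"
  shows "theta L (Sprod L F G) x = theta L F (theta L G x)"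
  using DF_Sprod_fwd[OF fa F G x] by blast

end


context kg
begin

lemma theta_cyl:
  assumes F: "F \<in> S L" and x: "x \<in> DF L F" and K: "ld K (theta L F x)"
  shows "\<exists>n. ld n x \<and> (\<forall>y. y \<in> XL L \<and> ld n y \<and> pre y n = pre x n \<longrightarrow>
           y \<in> DF L F \<and> ld K (theta L F y) \<and> pre (theta L F y) K = pre (theta L F x) K)"
proof -
  have X: "x \<in> XL L" using x by (simp add: DF_iff)
  obtain l m where lm: "(l, m) \<in> F" "pf m x" using x by (auto simp: DF_iff)
  have P: "l \<in> M" "m \<in> M" "sc l = sc m" using S_pair[OF F lm(1)] by auto
  have lmx: "ld (dg m) x" using lm(2) by (simp add: pf_def)
  have tx: "theta L F x = concat L l (sigma (dg m) x)" using theta_eq[OF F lm(1) X lm(2)] .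
  define K' where "K' = sup K (dg l)"
  have lK': "ld K' (theta L F x)" unfolding K'_def
    using ld_sup[of K "theta L F x" "dg l"] K theta_props(2)[OF F lm(1) X lm(2)] unfolding pf_def by blast
  have KK: "K \<le> K'" "dg l \<le> K'" unfolding K'_def by simp_all
  have lw: "ld (K' - dg l) (sigma (dg m) x)" using ld_concat2[OF KK(2)] lK' unfolding tx by simp
  define n where "n = K' - dg l + dg m"
  have ln: "ld n x" unfolding n_def using ld_sigma[OF lmx] lw by simp
  have mn: "dg m \<le> n" unfolding n_def by (simp add: le_fun_def)
  have key: "y \<in> XL L \<Longrightarrow> pf m y \<Longrightarrow> ld n y \<Longrightarrow> ld K' (theta L F y) \<and>
      pre (theta L F y) K' = l \<cdot> snd y (dg m) n" for y
  proof -
    assume Y: "y \<in> XL L" and py: "pf m y" and lny: "ld n y"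
    have lmy: "ld (dg m) y" using py by (simp add: pf_def)
    have ty: "theta L F y = concat L l (sigma (dg m) y)" using theta_eq[OF F lm(1) Y py] .
    have lwy: "ld (K' - dg l) (sigma (dg m) y)" using ld_sigma[OF lmy] lny unfolding n_def by simp
    have c: "sc l = pre (sigma (dg m) y) 0" using sigma_pre0[OF lmy] pre_props(4)[OF Y lmy] py P
      by (simp add: pf_def)
    have "ld K' (theta L F y)" unfolding ty using ld_concat2[OF KK(2)] lwy by simp
    moreover have "pre (theta L F y) K' = l \<cdot> pre (sigma (dg m) y) (K' - dg l)"
      unfolding ty using pre_concat[OF P(1) sigma_XL[OF Y lmy] c KK(2) lwy] .
    moreover have "pre (sigma (dg m) y) (K' - dg l) = snd y (dg m) n"
      unfolding n_def using pre_sigma[OF lmy lwy] .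
    ultimately show ?thesis by simp
  qed
  have kx: "ld K' (theta L F x)" "pre (theta L F x) K' = l \<cdot> snd x (dg m) n" using key[OF X lm(2) ln] by auto
  show ?thesis
  proof (intro exI[of _ n] conjI allI impI)
    show "ld n x" using ln .
    fix y assume a: "y \<in> XL L \<and> ld n y \<and> pre y n = pre x n"
    have py: "pf m y" "snd y (dg m) n = snd x (dg m) n" using cyl_pf[OF X _ lm(2) mn ln] a by auto
    have yDF: "y \<in> DF L F" using a py lm(1) by (auto simp: DF_iff)
    then show "y \<in> DF L F" .
    have ky: "ld K' (theta L F y)" "pre (theta L F y) K' = l \<cdot> snd x (dg m) n" using key[OF _ py(1)] a py(2) by auto
    show "ld K (theta L F y)" using ld_mono[OF ky(1) KK(1)] .
    have ty: "theta L F y \<in> XL L" using theta_XL[OF F yDF] .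
    show "pre (theta L F y) K = pre (theta L F x) K"
      using pre_agree[OF ty theta_XL[OF F x] ky(1) kx(1) _ KK(1)] ky(2) kx(2) by simp
  qed
qed

lemma geq_star:
  assumes F: "F \<in> S L" and G: "G \<in> S L" and g: "geq F G x"
  shows "geq (Sstar F) (Sstar G) (theta L F x)"
proof -
  have xF: "x \<in> DF L F" and xG: "x \<in> DF L G" using g by (auto simp: geq_def)
  have X: "x \<in> XL L" using xF by (simp add: DF_iff)
  obtain n where n: "ld n x" "\<And>y. y \<in> XL L \<Longrightarrow> ld n y \<Longrightarrow> pre y n = pre x n \<Longrightarrow>
      y \<in> DF L F \<and> y \<in> DF L G \<and> theta L F y = theta L G y" using g unfolding geq_def by blast
  define y0 where "y0 = theta L F x"
  have FS: "Sstar F \<in> S L" "Sstar G \<in> S L" using Sstar_S F G by auto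
  have y0F: "y0 \<in> DF L (Sstar F)" unfolding y0_def using theta_DF_star[OF F xF] .
  have y0G: "y0 \<in> DF L (Sstar G)" unfolding y0_def using theta_DF_star[OF G xG] geq_theta[OF g] by simp
  have hb: "theta L (Sstar F) y0 = x" unfolding y0_def using theta_star[OF F xF] .
  have lny: "ld n (theta L (Sstar F) y0)" using n(1) hb by simp
  obtain m where m: "ld m y0" "\<forall>y. y \<in> XL L \<and> ld m y \<and> pre y m = pre y0 m \<longrightarrow>
      y \<in> DF L (Sstar F) \<and> ld n (theta L (Sstar F) y) \<and> pre (theta L (Sstar F) y) n = pre (theta L (Sstar F) y0) n"
    using theta_cyl[OF FS(1) y0F lny] by blast
  show ?thesis unfolding y0_def[symmetric] geq_def
  proof (intro conjI exI[of _ m] allI impI)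
    show "y0 \<in> DF L (Sstar F)" "y0 \<in> DF L (Sstar G)" "ld m y0" using y0F y0G m(1) by auto
    fix y assume a: "y \<in> XL L \<and> ld m y \<and> pre y m = pre y0 m"
    have yF: "y \<in> DF L (Sstar F)" and c: "ld n (theta L (Sstar F) y)" "pre (theta L (Sstar F) y) n = pre x n"
      using mp[OF spec[OF m(2), of y] a] unfolding hb by auto
    define z where "z = theta L (Sstar F) y"
    have Z: "z \<in> XL L" unfolding z_def using theta_XL[OF FS(1) yF] .
    have zz: "z \<in> DF L F" "z \<in> DF L G" "theta L F z = theta L G z" using n(2)[OF Z] c unfolding z_def by auto
    have yz: "theta L F z = y" unfolding z_def using theta_star[OF FS(1) yF] by simp
    show "y \<in> DF L (Sstar F)" using yF .
    have yG: "y = theta L G z" using yz zz(3) by simp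
    show "y \<in> DF L (Sstar G)" using theta_DF_star[OF G zz(2)] yG by simp
    show "theta L (Sstar F) y = theta L (Sstar G) y"
      using theta_star[OF G zz(2)] yG unfolding z_def[symmetric] by simp
  qed
qed

lemma geq_prod:
  assumes fa: "finitely_aligned L" and F: "F \<in> S L" and F': "F' \<in> S L" and G: "G \<in> S L" and G': "G' \<in> S L"
    and x: "x \<in> DF L (Sprod L F G)" and gG: "geq G G' x" and gF: "geq F F' (theta L G x)"
  shows "geq (Sprod L F G) (Sprod L F' G') x"
proof -
  have X: "x \<in> XL L" using x by (simp add: DF_iff)
  have xG: "x \<in> DF L G" using DF_Sprod_fwd(1)[OF fa F G x] .
  obtain n1 where n1: "ld n1 x" "\<And>y. y \<in> XL L \<Longrightarrow> ld n1 y \<Longrightarrow> pre y n1 = pre x n1 \<Longrightarrow>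
      y \<in> DF L G \<and> y \<in> DF L G' \<and> theta L G y = theta L G' y" using gG unfolding geq_def by blast
  obtain n2 where n2: "ld n2 (theta L G x)" "\<And>y. y \<in> XL L \<Longrightarrow> ld n2 y \<Longrightarrow> pre y n2 = pre (theta L G x) n2 \<Longrightarrow>
      y \<in> DF L F \<and> y \<in> DF L F' \<and> theta L F y = theta L F' y" using gF unfolding geq_def by blast
  obtain n3 where n3: "ld n3 x" "\<And>y. y \<in> XL L \<and> ld n3 y \<and> pre y n3 = pre x n3 \<Longrightarrow>
      y \<in> DF L G \<and> ld n2 (theta L G y) \<and> pre (theta L G y) n2 = pre (theta L G x) n2"
    using theta_cyl[OF G xG n2(1)] by blast
  define n where "n = sup n1 n3"
  have ln: "ld n x" unfolding n_def using ld_sup[OF n1(1) n3(1)] .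
  have nn: "n1 \<le> n" "n3 \<le> n" unfolding n_def by simp_all
  have xFG': "x \<in> DF L (Sprod L F' G')"
  proof -
    have "x \<in> DF L G'" using gG by (simp add: geq_def)
    moreover have "theta L G' x \<in> DF L F'" using gF geq_theta[OF gG] by (simp add: geq_def)
    ultimately show ?thesis using DF_Sprod[OF fa F' G'] by simp
  qed
  show ?thesis unfolding geq_def
  proof (intro conjI exI[of _ n] allI impI)
    show "x \<in> DF L (Sprod L F G)" "x \<in> DF L (Sprod L F' G')" "ld n x" using x xFG' ln by auto
    fix y assume a: "y \<in> XL L \<and> ld n y \<and> pre y n = pre x n"
    have y1: "ld n1 y" "pre y n1 = pre x n1" using a ld_mono[of n y n1] nn pre_agree[OF _ X _ ln _ nn(1)] by auto
    have y3: "ld n3 y" "pre y n3 = pre x n3" using a ld_mono[of n y n3] nn pre_agree[OF _ X _ ln _ nn(2)] by auto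
    have A: "y \<in> DF L G" "y \<in> DF L G'" "theta L G y = theta L G' y" using n1(2)[OF _ y1] a by auto
    have B: "ld n2 (theta L G y)" "pre (theta L G y) n2 = pre (theta L G x) n2" using n3(2) a y3 by auto
    have TY: "theta L G y \<in> XL L" using theta_XL[OF G A(1)] .
    have C: "theta L G y \<in> DF L F" "theta L G y \<in> DF L F'" "theta L F (theta L G y) = theta L F' (theta L G y)"
      using n2(2)[OF TY B] by auto
    show "y \<in> DF L (Sprod L F G)" using DF_Sprod[OF fa F G] A C by simp
    show "y \<in> DF L (Sprod L F' G')" using DF_Sprod[OF fa F' G'] A C by simp
    then show "theta L (Sprod L F G) y = theta L (Sprod L F' G') y"
      using theta_Sprod[OF fa F G] theta_Sprod[OF fa F' G'] DF_Sprod[OF fa F G] A C by simp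
  qed
qed

lemma Gset_cases: "a \<in> Gset L \<Longrightarrow> \<exists>F x. F \<in> S L \<and> x \<in> DF L F \<and> a = germ L F x"
  unfolding Gset_def by blast

lemma ginv_germ:
  assumes F: "F \<in> S L" and x: "x \<in> DF L F"
  shows "ginv L (germ L F x) = germ L (Sstar F) (theta L F x)"
proof -
  define F' where "F' = fst (grep (germ L F x))"
  have F': "F' \<in> S L" "geq F F' x" unfolding F'_def using grep_germ[OF F x] by auto
  have "ginv L (germ L F x) = germ L (Sstar F') (theta L F x)"
    unfolding ginv_def gran_germ[OF F x] F'_def ..
  also have "\<dots> = germ L (Sstar F) (theta L F x)"
    using germ_eq[OF Sstar_S[OF F'(1)] Sstar_S[OF F] geq_sym[OF geq_star[OF F F'(1) F'(2)]]]
      geq_theta[OF F'(2)] by simp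
  finally show ?thesis .
qed

lemma gmul_germ:
  assumes fa: "finitely_aligned L" and F: "F \<in> S L" and G: "G \<in> S L" and x: "x \<in> DF L (Sprod L F G)"
  shows "gmul L (germ L F (theta L G x)) (germ L G x) = germ L (Sprod L F G) x"
proof -
  have xG: "x \<in> DF L G" and zF: "theta L G x \<in> DF L F" using DF_Sprod_fwd[OF fa F G x] by auto
  define F' where "F' = fst (grep (germ L F (theta L G x)))"
  define G' where "G' = fst (grep (germ L G x))"
  have F': "F' \<in> S L" "geq F F' (theta L G x)" unfolding F'_def using grep_germ[OF F zF] by auto
  have G': "G' \<in> S L" "geq G G' x" unfolding G'_def using grep_germ[OF G xG] by auto
  have "gmul L (germ L F (theta L G x)) (germ L G x) = germ L (Sprod L F' G') x"
    unfolding gmul_def F'_def G'_def grep_germ(2)[OF G xG] ..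
  also have "\<dots> = germ L (Sprod L F G) x"
    using germ_eq[OF Sprod_S[OF fa F'(1) G'(1)] Sprod_S[OF fa F G] geq_sym[OF geq_prod[OF fa F F'(1) G G'(1) x G'(2) F'(2)]]] .
  finally show ?thesis .
qed

lemma claim_star:
  assumes F: "F \<in> S L"
  shows "Psi L (Sstar F) = Opinv L (Psi L F)"
proof (intro equalityI subsetI)
  fix a assume "a \<in> Psi L (Sstar F)"
  then obtain y where y: "y \<in> DF L (Sstar F)" "a = germ L (Sstar F) y" unfolding Psi_def by blast
  have FS: "Sstar F \<in> S L" using Sstar_S[OF F] .
  have x: "theta L (Sstar F) y \<in> DF L F" using theta_DF_star[OF FS y(1)] by simp
  have "theta L F (theta L (Sstar F) y) = y" using theta_star[OF FS y(1)] by simp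
  then have "a = ginv L (germ L F (theta L (Sstar F) y))" using ginv_germ[OF F x] y(2) by simp
  then show "a \<in> Opinv L (Psi L F)" unfolding Opinv_def Psi_def using x by blast
next
  fix a assume "a \<in> Opinv L (Psi L F)"
  then obtain x where x: "x \<in> DF L F" "a = ginv L (germ L F x)" unfolding Opinv_def Psi_def by blast
  then have "a = germ L (Sstar F) (theta L F x)" using ginv_germ[OF F] by simp
  then show "a \<in> Psi L (Sstar F)" unfolding Psi_def using theta_DF_star[OF F x(1)] by blast
qed

lemma claim_prod:
  assumes fa: "finitely_aligned L" and F: "F \<in> S L" and G: "G \<in> S L"
  shows "Psi L (Sprod L F G) = Opmul L (Psi L F) (Psi L G)"
proof (intro equalityI subsetI)
  fix a assume "a \<in> Psi L (Sprod L F G)"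
  then obtain x where x: "x \<in> DF L (Sprod L F G)" "a = germ L (Sprod L F G) x" unfolding Psi_def by blast
  have xG: "x \<in> DF L G" and zF: "theta L G x \<in> DF L F" using DF_Sprod_fwd[OF fa F G x(1)] by auto
  have "gsrc (germ L F (theta L G x)) = gran L (germ L G x)"
    using gsrc_germ[OF F zF] gran_germ[OF G xG] by simp
  moreover have "a = gmul L (germ L F (theta L G x)) (germ L G x)" using gmul_germ[OF fa F G x(1)] x(2) by simp
  moreover have "germ L F (theta L G x) \<in> Psi L F" "germ L G x \<in> Psi L G" unfolding Psi_def using zF xG by blast+
  ultimately show "a \<in> Opmul L (Psi L F) (Psi L G)" unfolding Opmul_def by blast
next
  fix a assume "a \<in> Opmul L (Psi L F) (Psi L G)"
  then obtain z x where A: "z \<in> DF L F" "x \<in> DF L G" "gsrc (germ L F z) = gran L (germ L G x)"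
    "a = gmul L (germ L F z) (germ L G x)" unfolding Opmul_def Psi_def by blast
  have zx: "z = theta L G x" using A(3) gsrc_germ[OF F A(1)] gran_germ[OF G A(2)] by simp
  have x: "x \<in> DF L (Sprod L F G)" using DF_Sprod[OF fa F G] A(1,2) zx by simp
  have "a = germ L (Sprod L F G) x" using gmul_germ[OF fa F G x] A(4) zx by simp
  then show "a \<in> Psi L (Sprod L F G)" unfolding Psi_def using x by blast
qed

lemma pf_xp: "m \<in> M \<Longrightarrow> pf m (xp m)"
  unfolding pf_def using ld_xp pre_xp by simp

lemma Psi_sub:
  assumes F: "F \<in> S L" and G: "G \<in> S L" and e: "Psi L F = Psi L G" and lm: "(l, m) \<in> F"
  shows "(l, m) \<in> G"
proof -
  have P: "l \<in> M" "m \<in> M" "sc l = sc m" using S_pair[OF F lm] by auto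
  have sym: "\<exists>l' m'. (l', m') \<in> H' \<and> pf m' (xp b)" if H: "H \<in> S L" "H' \<in> S L" "Psi L H = Psi L H'"
    "(a, b) \<in> H" for H H' a b
  proof -
    have bM: "b \<in> M" using S_pair[OF H(1) H(4)] by simp
    have xb: "xp b \<in> DF L H" using H(4) xp_XL[OF bM] pf_xp[OF bM] by (auto simp: DF_iff)
    then have "germ L H (xp b) \<in> Psi L H'" using H(3) unfolding Psi_def by blast
    then obtain y where y: "y \<in> DF L H'" "germ L H (xp b) = germ L H' y" unfolding Psi_def by blast
    then have "xp b = y" using germ_eq_iff[OF H(1,2) xb y(1)] by simp
    then show ?thesis using y(1) by (auto simp: DF_iff)
  qed
  obtain l' m' where A: "(l', m') \<in> G" "pf m' (xp m)" using sym[OF F G e lm] by blast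
  have P': "l' \<in> M" "m' \<in> M" "sc l' = sc m'" using S_pair[OF G A(1)] by auto
  obtain l'' m'' where B: "(l'', m'') \<in> F" "pf m'' (xp m')" using sym[OF G F e[symmetric] A(1)] by blast
  have xm: "xp m \<in> XL L" "xp m' \<in> XL L" using xp_XL P P' by auto
  have d1: "dg m' \<le> dg m" using A(2) by (simp add: pf_def ld_xp)
  have d2: "dg m'' \<le> dg m'" using B(2) by (simp add: pf_def ld_xp)
  have "pre (xp m') (dg m') = pre (xp m) (dg m')" using pre_xp[OF P'(2)] A(2) by (simp add: pf_def)
  then have "pre (xp m) (dg m'') = pre (xp m') (dg m'')"
    using pre_agree[OF xm(1) xm(2) _ _ _ d2] d1 by (simp add: ld_xp)
  then have "pf m'' (xp m)" using B(2) d1 d2 by (simp add: pf_def ld_xp)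
  then have "(l'', m'') = (l, m)" using DF_unique[OF F xm(1) B(1) lm _ pf_xp[OF P(2)]] by simp
  then have "dg m \<le> dg m'" using d2 by simp
  then have dd: "dg m' = dg m" using d1 by simp
  have "m' = pre (xp m) (dg m')" using A(2) unfolding pf_def by simp
  also have "\<dots> = pre (xp m) (dg m)" unfolding dd ..
  also have "\<dots> = m" using pre_xp[OF P(2)] .
  finally have mm: "m' = m" .
  have xG: "xp m \<in> DF L G" using A xm mm by (auto simp: DF_iff)
  have xF: "xp m \<in> DF L F" using lm xm pf_xp[OF P(2)] by (auto simp: DF_iff)
  have "germ L F (xp m) \<in> Psi L G" using e xF unfolding Psi_def by blast
  then obtain y where y: "y \<in> DF L G" "germ L F (xp m) = germ L G y" unfolding Psi_def by blast
  then have g: "geq F G (xp m)" using germ_eq_iff[OF F G xF y(1)] by blast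
  have "theta L F (xp m) = theta L G (xp m)" using geq_theta[OF g] .
  then have ce: "concat L l (sigma (dg m) (xp m)) = concat L l' (sigma (dg m) (xp m))"
    using theta_eq[OF F lm xm(1) pf_xp[OF P(2)]] theta_eq[OF G A(1) xm(1)] A(2) mm by simp
  have lmx: "ld (dg m) (xp m)" by (simp add: ld_xp)
  have z: "sigma (dg m) (xp m) \<in> XL L" using sigma_XL[OF xm(1) lmx] .
  have zf: "\<forall>i. fst (sigma (dg m) (xp m)) i \<noteq> \<infinity>" unfolding sigma_fst xp_fst by simp
  have c: "sc l = pre (sigma (dg m) (xp m)) 0" using sigma_pre0[OF lmx] pre_props(4)[OF xm(1) lmx]
    pre_xp[OF P(2)] P by simp
  have c': "sc l' = pre (sigma (dg m) (xp m)) 0" using c P P' mm by simp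
  have "l = l'" using concat_inj[OF P(1) P'(1) z zf c c' ce] .
  then show ?thesis using A(1) mm by simp
qed

lemma claim_inj:
  assumes "F \<in> S L" "G \<in> S L" "Psi L F = Psi L G"
  shows "F = G"
  using Psi_sub[OF assms] Psi_sub[OF assms(2,1) assms(3)[symmetric]] by auto

end


lemma open_local:
  assumes "W \<subseteq> A" "\<And>x. x \<in> W \<Longrightarrow> \<exists>T. generate_topology_on \<S> T \<and> x \<in> T \<and> T \<inter> A \<subseteq> W"
  shows "openin (subtopology (topology_generated_by \<S>) A) W"
  unfolding openin_subopen[of _ W]
proof
  fix x assume x: "x \<in> W"
  obtain T where T: "generate_topology_on \<S> T" "x \<in> T" "T \<inter> A \<subseteq> W" using assms(2)[OF x] by blast
  have "openin (subtopology (topology_generated_by \<S>) A) (T \<inter> A)"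
    unfolding openin_subtopology openin_topology_generated_by_iff using T(1) by blast
  then show "\<exists>T. openin (subtopology (topology_generated_by \<S>) A) T \<and> x \<in> T \<and> T \<subseteq> W"
    using T x assms(1) by blast
qed

lemma inj_on_image_Int2: "inj_on f C \<Longrightarrow> A \<subseteq> C \<Longrightarrow> B \<subseteq> C \<Longrightarrow> f ` (A \<inter> B) = f ` A \<inter> f ` B"
  by (rule inj_on_image_Int)

context kg
begin

abbreviation SX where "SX \<equiv> {DF L F | F. F \<in> S L} \<union> {UNIV - DF L F | F. F \<in> S L}"
abbreviation SG where "SG \<equiv> {Psi L F | F. F \<in> S L} \<union> {UNIV - Psi L F | F. F \<in> S L}"

lemma XT_eq: "XT L = subtopology (topology_generated_by SX) (XL L)" by (simp add: XT_def)
lemma GT_eq: "GT L = subtopology (topology_generated_by SG) (Gset L)" by (simp add: GT_def)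

lemma topX: "topspace (topology_generated_by SX) = UNIV"
proof -
  have "UNIV - DF L {} \<in> SX" using S_empty by blast
  moreover have "DF L {} = {}" unfolding DF_def by blast
  ultimately show ?thesis by auto
qed

lemma topG: "topspace (topology_generated_by SG) = UNIV"
proof -
  have "UNIV - Psi L {} \<in> SG" using S_empty by blast
  moreover have "Psi L {} = {}" unfolding Psi_def DF_def by blast
  ultimately show ?thesis by auto
qed

lemma DF_sub: "DF L F \<subseteq> XL L" by (auto simp: DF_iff)
lemma Psi_sub_G: "F \<in> S L \<Longrightarrow> Psi L F \<subseteq> Gset L" unfolding Psi_def Gset_def by blast

lemma cyl_mem:
  assumes x: "x \<in> XL L" and n: "ld n x"
  shows "y \<in> DF L {(pre x n, pre x n)} \<longleftrightarrow> y \<in> XL L \<and> ld n y \<and> pre y n = pre x n"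
  using pre_props(2)[OF x n] by (auto simp: DF_iff pf_def)

lemma cyl_gen: "x \<in> XL L \<Longrightarrow> ld n x \<Longrightarrow> generate_topology_on SX (DF L {(pre x n, pre x n)})"
  using single_S[OF pre_props(1)] by (blast intro: generate_topology_on.Basis)

lemma geq_nbhd:
  assumes g: "geq F H x"
  shows "\<exists>n. ld n x \<and> (\<forall>y. y \<in> XL L \<and> ld n y \<and> pre y n = pre x n \<longrightarrow> geq F H y)"
proof -
  obtain n where n: "ld n x" "\<And>y. y \<in> XL L \<Longrightarrow> ld n y \<Longrightarrow> pre y n = pre x n \<Longrightarrow>
      y \<in> DF L F \<and> y \<in> DF L H \<and> theta L F y = theta L H y" using g unfolding geq_def by blast
  show ?thesis
  proof (intro exI[of _ n] conjI allI impI)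
    show "ld n x" using n(1) .
    fix y assume a: "y \<in> XL L \<and> ld n y \<and> pre y n = pre x n"
    show "geq F H y" unfolding geq_def
    proof (intro conjI exI[of _ n] allI impI)
      show "y \<in> DF L F" "y \<in> DF L H" using n(2) a by auto
      show "ld n y" using a by simp
      fix z assume "z \<in> XL L \<and> ld n z \<and> pre z n = pre y n"
      then show "z \<in> DF L F" "z \<in> DF L H" "theta L F z = theta L H z" using n(2) a by auto
    qed
  qed
qed

lemma ngeq_nbhd:
  assumes F: "F \<in> S L" and H: "H \<in> S L" and xF: "x \<in> DF L F" and xH: "x \<in> DF L H" and ng: "\<not> geq F H x"
  shows "\<exists>n. ld n x \<and> (\<forall>y. y \<in> XL L \<and> ld n y \<and> pre y n = pre x n \<longrightarrow> \<not> geq F H y)"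
proof -
  have X: "x \<in> XL L" using xF by (simp add: DF_iff)
  obtain l m where lm: "(l, m) \<in> F" "pf m x" using xF by (auto simp: DF_iff)
  obtain l' m' where lm2: "(l', m') \<in> H" "pf m' x" using xH by (auto simp: DF_iff)
  define N where "N = sup (dg m) (dg m')"
  have lN: "ld N x" unfolding N_def using ld_sup[of "dg m" x "dg m'"] lm(2) lm2(2) unfolding pf_def by blast
  have N: "dg m \<le> N" "dg m' \<le> N" unfolding N_def by simp_all
  show ?thesis
  proof (intro exI[of _ N] conjI allI impI)
    show "ld N x" using lN .
    fix y assume a: "y \<in> XL L \<and> ld N y \<and> pre y N = pre x N"
    have py: "pf m y" "snd y (dg m) N = snd x (dg m) N" using cyl_pf[OF X _ lm(2) N(1) lN] a by auto
    have py2: "pf m' y" "snd y (dg m') N = snd x (dg m') N" using cyl_pf[OF X _ lm2(2) N(2) lN] a by auto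
    show "\<not> geq F H y"
    proof
      assume "geq F H y"
      then have "l \<cdot> snd y (dg m) N = l' \<cdot> snd y (dg m') N"
        using geq_conc[OF F H lm(1) lm2(1) _ py(1) py2(1) N] a by blast
      then have "l \<cdot> snd x (dg m) N = l' \<cdot> snd x (dg m') N" using py(2) py2(2) by simp
      then have "geq F H x" using conc_geq[OF F H lm(1) lm2(1) X lm(2) lm2(2) N lN] by simp
      then show False using ng by simp
    qed
  qed
qed

lemma XT_Hausdorff: "Hausdorff_space (XT L)"
  unfolding Hausdorff_space_def
proof (intro allI impI)
  fix x y assume a: "x \<in> topspace (XT L) \<and> y \<in> topspace (XT L) \<and> x \<noteq> y"
  then have X: "x \<in> XL L" "y \<in> XL L" "x \<noteq> y" by (auto simp: XT_eq topX)
  have sep1: "\<exists>\<nu>. \<nu> \<in> M \<and> u \<in> DF L {(\<nu>, \<nu>)} \<and> v \<notin> DF L {(\<nu>, \<nu>)}"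
    if uv: "u \<in> XL L" "v \<in> XL L" "fst v i < fst u i" for u v i
  proof -
    obtain k where k: "fst v i = enat k" using uv(3) by (cases "fst v i") auto
    define n where "n = (\<lambda>j. if j = i then Suc k else 0)"
    have "enat (Suc k) \<le> fst u i" using uv(3) k by (simp add: Suc_ile_eq)
    then have ln: "ld n u" unfolding ld_def n_def by (auto simp: zero_enat_def[symmetric])
    have nv: "\<not> ld n v" unfolding ld_def n_def using k by (auto intro: exI[of _ i])
    have "u \<in> DF L {(pre u n, pre u n)}" using cyl_mem[OF uv(1) ln] ln uv(1) by simp
    moreover have "v \<notin> DF L {(pre u n, pre u n)}" using cyl_mem[OF uv(1) ln] nv by simp
    ultimately show ?thesis using pre_props(1)[OF uv(1) ln] by blast
  qed
  have sep: "\<exists>\<nu>. \<nu> \<in> M \<and> ((x \<in> DF L {(\<nu>, \<nu>)} \<and> y \<notin> DF L {(\<nu>, \<nu>)}) \<or> (y \<in> DF L {(\<nu>, \<nu>)} \<and> x \<notin> DF L {(\<nu>, \<nu>)}))"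
  proof (cases "fst x = fst y")
    case True
    have "\<not> (\<forall>q. ld q x \<longrightarrow> pre x q = pre y q)" using path_eqI[OF X(1,2) True] X(3) by blast
    then obtain q where q: "ld q x" "pre x q \<noteq> pre y q" by blast
    have "x \<in> DF L {(pre x q, pre x q)}" using cyl_mem[OF X(1) q(1)] q(1) X(1) by simp
    moreover have "y \<notin> DF L {(pre x q, pre x q)}" using cyl_mem[OF X(1) q(1)] q(2) by simp
    ultimately show ?thesis using pre_props(1)[OF X(1) q(1)] by blast
  next
    case False
    then obtain i where i: "fst x i \<noteq> fst y i" by (auto simp: fun_eq_iff)
    show ?thesis
    proof (cases "fst y i < fst x i")
      case True then show ?thesis using sep1[OF X(1,2)] by blast
    next
      case False
      then have "fst x i < fst y i" using i by auto
      then show ?thesis using sep1[OF X(2,1)] by blast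
    qed
  qed
  then obtain \<nu> where nu: "\<nu> \<in> M" "(x \<in> DF L {(\<nu>, \<nu>)} \<and> y \<notin> DF L {(\<nu>, \<nu>)}) \<or> (y \<in> DF L {(\<nu>, \<nu>)} \<and> x \<notin> DF L {(\<nu>, \<nu>)})"
    by blast
  have o1: "openin (XT L) (DF L {(\<nu>, \<nu>)} \<inter> XL L)" unfolding XT_eq openin_subtopology openin_topology_generated_by_iff
    using single_S[OF nu(1)] by (blast intro: generate_topology_on.Basis)
  have o2: "openin (XT L) ((UNIV - DF L {(\<nu>, \<nu>)}) \<inter> XL L)" unfolding XT_eq openin_subtopology openin_topology_generated_by_iff
    using single_S[OF nu(1)] by (blast intro: generate_topology_on.Basis)
  show "\<exists>U V. openin (XT L) U \<and> openin (XT L) V \<and> x \<in> U \<and> y \<in> V \<and> disjnt U V"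
    using nu(2)
  proof
    assume "x \<in> DF L {(\<nu>, \<nu>)} \<and> y \<notin> DF L {(\<nu>, \<nu>)}"
    then show ?thesis using o1 o2 X by (intro exI[of _ "DF L {(\<nu>, \<nu>)} \<inter> XL L"] exI[of _ "(UNIV - DF L {(\<nu>, \<nu>)}) \<inter> XL L"])
      (auto simp: disjnt_def)
  next
    assume "y \<in> DF L {(\<nu>, \<nu>)} \<and> x \<notin> DF L {(\<nu>, \<nu>)}"
    then show ?thesis using o1 o2 X by (intro exI[of _ "(UNIV - DF L {(\<nu>, \<nu>)}) \<inter> XL L"] exI[of _ "DF L {(\<nu>, \<nu>)} \<inter> XL L"])
      (auto simp: disjnt_def)
  qed
qed

end


context kg
begin

lemma germ_in_Psi:
  assumes F: "F \<in> S L" and H: "H \<in> S L" and x: "x \<in> DF L F"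
  shows "germ L F x \<in> Psi L H \<longleftrightarrow> geq F H x"
proof
  assume "germ L F x \<in> Psi L H"
  then obtain y where y: "y \<in> DF L H" "germ L F x = germ L H y" unfolding Psi_def by blast
  then show "geq F H x" using germ_eq_iff[OF F H x y(1)] by blast
next
  assume g: "geq F H x"
  then have "germ L F x = germ L H x" using germ_eq[OF F H g] by simp
  moreover have "x \<in> DF L H" using geq_DF[OF g] by simp
  ultimately show "germ L F x \<in> Psi L H" unfolding Psi_def by blast
qed

lemma gsrc_Psi: "F \<in> S L \<Longrightarrow> gsrc ` Psi L F = DF L F"
  unfolding Psi_def using gsrc_germ by (auto simp: image_iff) (metis gsrc_germ)

lemma gsrc_inj: "F \<in> S L \<Longrightarrow> inj_on gsrc (Psi L F)"
  unfolding Psi_def inj_on_def using gsrc_germ by auto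

lemma gsrc_img1:
  assumes F: "F \<in> S L" and H: "H \<in> S L"
  shows "gsrc ` (Psi L H \<inter> Psi L F) = {x \<in> DF L F. geq F H x}"
proof (intro equalityI subsetI)
  fix x assume "x \<in> gsrc ` (Psi L H \<inter> Psi L F)"
  then obtain a where a: "a \<in> Psi L H" "a \<in> Psi L F" "x = gsrc a" by blast
  then obtain y where y0: "y \<in> DF L F" "a = germ L F y" unfolding Psi_def by blast
  then have y: "y \<in> DF L F" "germ L F y \<in> Psi L H" "x = gsrc (germ L F y)" using a by auto
  then show "x \<in> {x \<in> DF L F. geq F H x}" using germ_in_Psi[OF F H y(1)] gsrc_germ[OF F y(1)] by simp
next
  fix x assume "x \<in> {x \<in> DF L F. geq F H x}"
  then have x: "x \<in> DF L F" "geq F H x" by auto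
  then have "germ L F x \<in> Psi L H \<inter> Psi L F" using germ_in_Psi[OF F H x(1)] unfolding Psi_def by blast
  then show "x \<in> gsrc ` (Psi L H \<inter> Psi L F)" using gsrc_germ[OF F x(1)] by force
qed

lemma gsrc_img2:
  assumes F: "F \<in> S L" and H: "H \<in> S L"
  shows "gsrc ` ((UNIV - Psi L H) \<inter> Psi L F) = {x \<in> DF L F. \<not> geq F H x}"
proof (intro equalityI subsetI)
  fix x assume "x \<in> gsrc ` ((UNIV - Psi L H) \<inter> Psi L F)"
  then obtain a where a: "a \<notin> Psi L H" "a \<in> Psi L F" "x = gsrc a" by blast
  then obtain y where y0: "y \<in> DF L F" "a = germ L F y" unfolding Psi_def by blast
  then have y: "y \<in> DF L F" "germ L F y \<notin> Psi L H" "x = gsrc (germ L F y)" using a by auto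
  then show "x \<in> {x \<in> DF L F. \<not> geq F H x}" using germ_in_Psi[OF F H y(1)] gsrc_germ[OF F y(1)] by simp
next
  fix x assume "x \<in> {x \<in> DF L F. \<not> geq F H x}"
  then have x: "x \<in> DF L F" "\<not> geq F H x" by auto
  then have "germ L F x \<in> (UNIV - Psi L H) \<inter> Psi L F" using germ_in_Psi[OF F H x(1)] unfolding Psi_def by blast
  then show "x \<in> gsrc ` ((UNIV - Psi L H) \<inter> Psi L F)" using gsrc_germ[OF F x(1)] by force
qed

lemma psiK:
  assumes fa: "finitely_aligned L" and F: "F \<in> S L" and H: "H \<in> S L"
  shows "\<exists>K\<in>S L. \<forall>x\<in>DF L F. (germ L F x \<in> Psi L K \<longleftrightarrow> x \<in> DF L H)"
proof -
  define E where "E = Sprod L (Sstar H) H"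
  have HS: "Sstar H \<in> S L" using Sstar_S[OF H] .
  have ES: "E \<in> S L" unfolding E_def using Sprod_S[OF fa HS H] .
  have DE: "x \<in> DF L E \<longleftrightarrow> x \<in> DF L H" for x
    unfolding E_def using DF_Sprod[OF fa HS H] theta_DF_star[OF H] by blast
  have tE: "x \<in> DF L E \<Longrightarrow> theta L E x = x" for x
    unfolding E_def using theta_Sprod[OF fa HS H] theta_star[OF H] DE unfolding E_def by simp
  define K where "K = Sprod L F E"
  have KS: "K \<in> S L" unfolding K_def using Sprod_S[OF fa F ES] .
  have DK: "x \<in> DF L K \<longleftrightarrow> x \<in> DF L H \<and> x \<in> DF L F" for x
  proof -
    have "x \<in> DF L K \<longleftrightarrow> x \<in> DF L E \<and> theta L E x \<in> DF L F" unfolding K_def by (rule DF_Sprod[OF fa F ES])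
    then show ?thesis using DE[of x] tE[of x] by auto
  qed
  have tK: "theta L K x = theta L F x" if xK: "x \<in> DF L K" for x
  proof -
    have "x \<in> DF L E" using DK[of x] xK DE[of x] by simp
    then show ?thesis unfolding K_def using theta_Sprod[OF fa F ES, of x] xK tE[of x] unfolding K_def by simp
  qed
  show ?thesis
  proof (intro bexI[OF _ KS] ballI)
    fix x assume xF: "x \<in> DF L F"
    have X: "x \<in> XL L" using xF by (simp add: DF_iff)
    show "germ L F x \<in> Psi L K \<longleftrightarrow> x \<in> DF L H"
    proof
      assume "germ L F x \<in> Psi L K"
      then have "geq F K x" using germ_in_Psi[OF F KS xF] by simp
      then show "x \<in> DF L H" using geq_DF DK by blast
    next
      assume xH: "x \<in> DF L H"
      obtain l m where lm: "(l, m) \<in> F" "pf m x" using xF by (auto simp: DF_iff)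
      obtain a b where ab: "(a, b) \<in> H" "pf b x" using xH by (auto simp: DF_iff)
      define n where "n = sup (dg m) (dg b)"
      have ln: "ld n x" unfolding n_def using ld_sup[of "dg m" x "dg b"] lm(2) ab(2) unfolding pf_def by blast
      have N: "dg m \<le> n" "dg b \<le> n" unfolding n_def by simp_all
      have "geq F K x" unfolding geq_def
      proof (intro conjI exI[of _ n] allI impI)
        show "x \<in> DF L F" "x \<in> DF L K" "ld n x" using xF xH DK ln by auto
        fix y assume a: "y \<in> XL L \<and> ld n y \<and> pre y n = pre x n"
        have py: "pf m y" using cyl_pf(1)[OF X _ lm(2) N(1) ln] a by auto
        have py2: "pf b y" using cyl_pf(1)[OF X _ ab(2) N(2) ln] a by auto
        have yF: "y \<in> DF L F" using py lm(1) a by (auto simp: DF_iff)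
        have yH: "y \<in> DF L H" using py2 ab(1) a by (auto simp: DF_iff)
        show "y \<in> DF L F" "y \<in> DF L K" "theta L F y = theta L K y" using yF yH DK tK by auto
      qed
      then show "germ L F x \<in> Psi L K" using germ_in_Psi[OF F KS xF] by simp
    qed
  qed
qed

lemma gsrc_cont:
  assumes fa: "finitely_aligned L" and F: "F \<in> S L" and T: "generate_topology_on SX T"
  shows "\<exists>V. generate_topology_on SG V \<and> {a \<in> Psi L F. gsrc a \<in> T} = V \<inter> Psi L F"
  using T
proof (induction rule: generate_topology_on.induct)
  case Empty
  then show ?case by (intro exI[of _ "{}"]) (auto intro: generate_topology_on.Empty)
next
  case (Int a b)
  then obtain Va Vb where "generate_topology_on SG Va" "{x \<in> Psi L F. gsrc x \<in> a} = Va \<inter> Psi L F"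
    "generate_topology_on SG Vb" "{x \<in> Psi L F. gsrc x \<in> b} = Vb \<inter> Psi L F" by blast
  then show ?case by (intro exI[of _ "Va \<inter> Vb"]) (auto intro: generate_topology_on.Int)
next
  case (UN K)
  then have "\<forall>k\<in>K. \<exists>V. generate_topology_on SG V \<and> {x \<in> Psi L F. gsrc x \<in> k} = V \<inter> Psi L F" by blast
  from bchoice[OF this] obtain f where f: "\<forall>k\<in>K. generate_topology_on SG (f k) \<and> {x \<in> Psi L F. gsrc x \<in> k} = f k \<inter> Psi L F"
    by blast
  have "generate_topology_on SG (\<Union>(f ` K))" using f by (auto intro: generate_topology_on.UN)
  moreover have "{x \<in> Psi L F. gsrc x \<in> \<Union>K} = \<Union>(f ` K) \<inter> Psi L F" using f by blast
  ultimately show ?case by blast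
next
  case (Basis s)
  then obtain H where H: "H \<in> S L" "s = DF L H \<or> s = UNIV - DF L H" by blast
  obtain K where K: "K \<in> S L" "\<forall>x\<in>DF L F. (germ L F x \<in> Psi L K \<longleftrightarrow> x \<in> DF L H)" using psiK[OF fa F H(1)] by blast
  have "a \<in> Psi L K \<longleftrightarrow> gsrc a \<in> DF L H" if a: "a \<in> Psi L F" for a
  proof -
    obtain x where x: "x \<in> DF L F" "a = germ L F x" using a unfolding Psi_def by blast
    then show ?thesis using K(2) gsrc_germ[OF F x(1)] by simp
  qed
  then have e: "{a \<in> Psi L F. gsrc a \<in> DF L H} = Psi L K \<inter> Psi L F" by blast
  show ?case using H(2)
  proof
    assume "s = DF L H"
    then show ?case using e K(1) by (intro exI[of _ "Psi L K"]) (auto intro: generate_topology_on.Basis)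
  next
    assume s: "s = UNIV - DF L H"
    have "{a \<in> Psi L F. gsrc a \<in> s} = (UNIV - Psi L K) \<inter> Psi L F" using e s by blast
    then show ?case using K(1) by (intro exI[of _ "UNIV - Psi L K"]) (auto intro: generate_topology_on.Basis)
  qed
qed

lemma gsrc_open:
  assumes F: "F \<in> S L" and V: "generate_topology_on SG V"
  shows "openin (subtopology (topology_generated_by SX) (DF L F)) (gsrc ` (V \<inter> Psi L F))"
  using V
proof (induction rule: generate_topology_on.induct)
  case Empty
  then show ?case by simp
next
  case (Int a b)
  have "gsrc ` (a \<inter> b \<inter> Psi L F) = gsrc ` (a \<inter> Psi L F) \<inter> gsrc ` (b \<inter> Psi L F)"
    using inj_on_image_Int[OF gsrc_inj[OF F], of "a \<inter> Psi L F" "b \<inter> Psi L F"]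
    by (simp add: Int_assoc Int_left_commute Int_commute)
  then show ?case using Int by auto
next
  case (UN K)
  have "gsrc ` (\<Union>K \<inter> Psi L F) = \<Union>((\<lambda>k. gsrc ` (k \<inter> Psi L F)) ` K)" by blast
  then show ?case using UN by auto
next
  case (Basis s)
  then obtain H where H: "H \<in> S L" "s = Psi L H \<or> s = UNIV - Psi L H" by blast
  show ?case using H(2)
  proof
    assume s: "s = Psi L H"
    show ?case unfolding s gsrc_img1[OF F H(1)]
    proof (rule open_local)
      show "{x \<in> DF L F. geq F H x} \<subseteq> DF L F" by blast
      fix x assume x: "x \<in> {x \<in> DF L F. geq F H x}"
      then have X: "x \<in> XL L" by (simp add: DF_iff)
      obtain n where n: "ld n x" "\<forall>y. y \<in> XL L \<and> ld n y \<and> pre y n = pre x n \<longrightarrow> geq F H y"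
        using geq_nbhd[of F H x] x by blast
      show "\<exists>T. generate_topology_on SX T \<and> x \<in> T \<and> T \<inter> DF L F \<subseteq> {x \<in> DF L F. geq F H x}"
        using cyl_gen[OF X n(1)] cyl_mem[OF X n(1)] n(2) X n(1) by blast
    qed
  next
    assume s: "s = UNIV - Psi L H"
    show ?case unfolding s gsrc_img2[OF F H(1)]
    proof (rule open_local)
      show "{x \<in> DF L F. \<not> geq F H x} \<subseteq> DF L F" by blast
      fix x assume x: "x \<in> {x \<in> DF L F. \<not> geq F H x}"
      then have X: "x \<in> XL L" and xF: "x \<in> DF L F" and ng: "\<not> geq F H x" by (auto simp: DF_iff)
      show "\<exists>T. generate_topology_on SX T \<and> x \<in> T \<and> T \<inter> DF L F \<subseteq> {x \<in> DF L F. \<not> geq F H x}"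
      proof (cases "x \<in> DF L H")
        case True
        obtain n where n: "ld n x" "\<forall>y. y \<in> XL L \<and> ld n y \<and> pre y n = pre x n \<longrightarrow> \<not> geq F H y"
          using ngeq_nbhd[OF F H(1) xF True ng] by blast
        show ?thesis using cyl_gen[OF X n(1)] cyl_mem[OF X n(1)] n(2) X n(1) by blast
      next
        case False
        have "generate_topology_on SX (UNIV - DF L H)" using H(1) by (blast intro: generate_topology_on.Basis)
        moreover have "(UNIV - DF L H) \<inter> DF L F \<subseteq> {x \<in> DF L F. \<not> geq F H x}" using geq_DF by blast
        ultimately show ?thesis using False by blast
      qed
    qed
  qed
qed

lemma gsrc_homeo:
  assumes fa: "finitely_aligned L" and F: "F \<in> S L"
  shows "homeomorphic_map (subtopology (GT L) (Psi L F)) (subtopology (XT L) (DF L F)) gsrc"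
proof -
  have X: "subtopology (GT L) (Psi L F) = subtopology (topology_generated_by SG) (Psi L F)"
    unfolding GT_eq subtopology_subtopology using Psi_sub_G[OF F] by (simp add: Int_absorb1)
  have Y: "subtopology (XT L) (DF L F) = subtopology (topology_generated_by SX) (DF L F)"
    unfolding XT_eq subtopology_subtopology using DF_sub by (simp add: Int_absorb1)
  have tX: "topspace (subtopology (topology_generated_by SG) (Psi L F)) = Psi L F"
    by (simp only: topspace_subtopology topG) simp
  have tY: "topspace (subtopology (topology_generated_by SX) (DF L F)) = DF L F"
    by (simp only: topspace_subtopology topX) simp
  show ?thesis unfolding X Y
  proof (rule bijective_open_imp_homeomorphic_map)
    show "continuous_map (subtopology (topology_generated_by SG) (Psi L F))
        (subtopology (topology_generated_by SX) (DF L F)) gsrc"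
      unfolding continuous_map_def tX tY
    proof (intro conjI allI impI)
      show "gsrc \<in> Psi L F \<rightarrow> DF L F" using gsrc_Psi[OF F] by blast
      fix U assume "openin (subtopology (topology_generated_by SX) (DF L F)) U"
      then obtain T where T: "generate_topology_on SX T" "U = T \<inter> DF L F"
        unfolding openin_subtopology openin_topology_generated_by_iff by blast
      obtain V where V: "generate_topology_on SG V" "{a \<in> Psi L F. gsrc a \<in> T} = V \<inter> Psi L F"
        using gsrc_cont[OF fa F T(1)] by blast
      have "{x \<in> Psi L F. gsrc x \<in> U} = V \<inter> Psi L F" using V(2) T(2) gsrc_Psi[OF F] by blast
      then show "openin (subtopology (topology_generated_by SG) (Psi L F)) {x \<in> Psi L F. gsrc x \<in> U}"
        unfolding openin_subtopology openin_topology_generated_by_iff using V(1) by blast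
    qed
    show "open_map (subtopology (topology_generated_by SG) (Psi L F))
        (subtopology (topology_generated_by SX) (DF L F)) gsrc"
      unfolding open_map_def
    proof (intro allI impI)
      fix U assume "openin (subtopology (topology_generated_by SG) (Psi L F)) U"
      then obtain V where V: "generate_topology_on SG V" "U = V \<inter> Psi L F"
        unfolding openin_subtopology openin_topology_generated_by_iff by blast
      show "openin (subtopology (topology_generated_by SX) (DF L F)) (gsrc ` U)"
        unfolding V(2) using gsrc_open[OF F V(1)] .
    qed
    show "gsrc ` topspace (subtopology (topology_generated_by SG) (Psi L F)) =
        topspace (subtopology (topology_generated_by SX) (DF L F))" unfolding tX tY using gsrc_Psi[OF F] .
    show "inj_on gsrc (topspace (subtopology (topology_generated_by SG) (Psi L F)))"
      unfolding tX using gsrc_inj[OF F] .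
  qed
qed

end


context kg
begin

lemma ginv_Gset: "a \<in> Gset L \<Longrightarrow> ginv L a \<in> Gset L"
proof -
  assume "a \<in> Gset L"
  then obtain F x where F: "F \<in> S L" "x \<in> DF L F" "a = germ L F x" using Gset_cases by blast
  then show ?thesis using ginv_germ[OF F(1,2)] Sstar_S[OF F(1)] theta_DF_star[OF F(1,2)]
    unfolding Gset_def by blast
qed

lemma ginv_inv: "a \<in> Gset L \<Longrightarrow> ginv L (ginv L a) = a"
proof -
  assume "a \<in> Gset L"
  then obtain F x where F: "F \<in> S L" "x \<in> DF L F" "a = germ L F x" using Gset_cases by blast
  have "ginv L (ginv L a) = ginv L (germ L (Sstar F) (theta L F x))" using ginv_germ[OF F(1,2)] F(3) by simp
  also have "\<dots> = germ L (Sstar (Sstar F)) (theta L (Sstar F) (theta L F x))"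
    using ginv_germ[OF Sstar_S[OF F(1)] theta_DF_star[OF F(1,2)]] .
  also have "\<dots> = a" using theta_star[OF F(1,2)] F(3) by simp
  finally show ?thesis .
qed

lemma ginv_mem:
  assumes H: "H \<in> S L" and a: "a \<in> Gset L"
  shows "ginv L a \<in> Psi L H \<longleftrightarrow> a \<in> Psi L (Sstar H)"
proof
  assume "ginv L a \<in> Psi L H"
  then have "ginv L (ginv L a) \<in> Opinv L (Psi L H)" unfolding Opinv_def by blast
  then show "a \<in> Psi L (Sstar H)" using ginv_inv[OF a] claim_star[OF H] by simp
next
  assume "a \<in> Psi L (Sstar H)"
  then obtain b where b: "b \<in> Psi L H" "a = ginv L b" using claim_star[OF H] unfolding Opinv_def by blast
  then show "ginv L a \<in> Psi L H" using ginv_inv Psi_sub_G[OF H] by auto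
qed

lemma ginv_cont:
  assumes V: "generate_topology_on SG V"
  shows "\<exists>V'. generate_topology_on SG V' \<and> {a \<in> Gset L. ginv L a \<in> V} = V' \<inter> Gset L"
  using V
proof (induction rule: generate_topology_on.induct)
  case Empty
  then show ?case by (intro exI[of _ "{}"]) (auto intro: generate_topology_on.Empty)
next
  case (Int a b)
  then obtain Va Vb where "generate_topology_on SG Va" "{x \<in> Gset L. ginv L x \<in> a} = Va \<inter> Gset L"
    "generate_topology_on SG Vb" "{x \<in> Gset L. ginv L x \<in> b} = Vb \<inter> Gset L" by blast
  then show ?case by (intro exI[of _ "Va \<inter> Vb"]) (auto intro: generate_topology_on.Int)
next
  case (UN K)
  then have "\<forall>k\<in>K. \<exists>V. generate_topology_on SG V \<and> {x \<in> Gset L. ginv L x \<in> k} = V \<inter> Gset L" by blast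
  from bchoice[OF this] obtain f where f: "\<forall>k\<in>K. generate_topology_on SG (f k) \<and> {x \<in> Gset L. ginv L x \<in> k} = f k \<inter> Gset L"
    by blast
  have "generate_topology_on SG (\<Union>(f ` K))" using f by (auto intro: generate_topology_on.UN)
  moreover have "{x \<in> Gset L. ginv L x \<in> \<Union>K} = \<Union>(f ` K) \<inter> Gset L" using f by blast
  ultimately show ?case by blast
next
  case (Basis s)
  then obtain H where H: "H \<in> S L" "s = Psi L H \<or> s = UNIV - Psi L H" by blast
  have e: "{a \<in> Gset L. ginv L a \<in> Psi L H} = Psi L (Sstar H) \<inter> Gset L" using ginv_mem[OF H(1)] by blast
  have SH: "Sstar H \<in> S L" using Sstar_S[OF H(1)] .
  show ?case using H(2)
  proof
    assume "s = Psi L H"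
    then show ?case using e SH by (intro exI[of _ "Psi L (Sstar H)"]) (auto intro: generate_topology_on.Basis)
  next
    assume s: "s = UNIV - Psi L H"
    have "{a \<in> Gset L. ginv L a \<in> s} = (UNIV - Psi L (Sstar H)) \<inter> Gset L" using e s by blast
    then show ?case using SH by (intro exI[of _ "UNIV - Psi L (Sstar H)"]) (auto intro: generate_topology_on.Basis)
  qed
qed

lemma topGT: "topspace (GT L) = Gset L"
  unfolding GT_eq by (simp only: topspace_subtopology topG) simp

lemma ginv_continuous: "continuous_map (GT L) (GT L) (ginv L)"
  unfolding continuous_map_def topGT
proof (intro conjI allI impI)
  show "ginv L \<in> Gset L \<rightarrow> Gset L" using ginv_Gset by blast
  fix U assume "openin (GT L) U"
  then obtain V where V: "generate_topology_on SG V" "U = V \<inter> Gset L"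
    unfolding GT_eq openin_subtopology openin_topology_generated_by_iff by blast
  obtain V' where V': "generate_topology_on SG V'" "{a \<in> Gset L. ginv L a \<in> V} = V' \<inter> Gset L"
    using ginv_cont[OF V(1)] by blast
  have "{x \<in> Gset L. ginv L x \<in> U} = V' \<inter> Gset L" using V'(2) V(2) ginv_Gset by blast
  then show "openin (GT L) {x \<in> Gset L. ginv L x \<in> U}"
    unfolding GT_eq openin_subtopology openin_topology_generated_by_iff using V'(1) by blast
qed

lemma ginv_homeo: "homeomorphic_map (GT L) (GT L) (ginv L)"
  unfolding homeomorphic_map_maps homeomorphic_maps_def
  using ginv_continuous ginv_inv topGT by auto

lemma gran_homeo:
  assumes fa: "finitely_aligned L" and F: "F \<in> S L"
  shows "homeomorphic_map (subtopology (GT L) (Psi L F)) (subtopology (XT L) (DF L (Sstar F))) (gran L)"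
proof -
  have SF: "Sstar F \<in> S L" using Sstar_S[OF F] .
  have img: "ginv L ` (topspace (GT L) \<inter> Psi L F) = topspace (GT L) \<inter> Psi L (Sstar F)"
    unfolding topGT using claim_star[OF F] Psi_sub_G[OF F] Psi_sub_G[OF SF] unfolding Opinv_def by auto
  have h1: "homeomorphic_map (subtopology (GT L) (Psi L F)) (subtopology (GT L) (Psi L (Sstar F))) (ginv L)"
    using homeomorphic_map_subtopologies[OF ginv_homeo img] .
  have h2: "homeomorphic_map (subtopology (GT L) (Psi L (Sstar F))) (subtopology (XT L) (DF L (Sstar F))) gsrc"
    using gsrc_homeo[OF fa SF] .
  have h: "homeomorphic_map (subtopology (GT L) (Psi L F)) (subtopology (XT L) (DF L (Sstar F))) (gsrc \<circ> ginv L)"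
    using homeomorphic_map_compose[OF h1 h2] .
  show ?thesis
  proof (rule homeomorphic_map_eq[OF h])
    fix a assume "a \<in> topspace (subtopology (GT L) (Psi L F))"
    then have "a \<in> Psi L F" by simp
    then obtain x where x: "x \<in> DF L F" "a = germ L F x" unfolding Psi_def by blast
    show "(gsrc \<circ> ginv L) a = gran L a"
      using ginv_germ[OF F x(1)] gsrc_germ[OF SF theta_DF_star[OF F x(1)]] gran_germ[OF F x(1)] x(2) by simp
  qed
qed

lemma gran_Psi:
  assumes F: "F \<in> S L" shows "gran L ` Psi L F = DF L (Sstar F)"
proof (intro equalityI subsetI)
  fix y assume "y \<in> gran L ` Psi L F"
  then obtain x where x: "x \<in> DF L F" "y = gran L (germ L F x)" unfolding Psi_def by blast
  then show "y \<in> DF L (Sstar F)" using gran_germ[OF F x(1)] theta_DF_star[OF F x(1)] by simp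
next
  fix y assume y: "y \<in> DF L (Sstar F)"
  have SF: "Sstar F \<in> S L" using Sstar_S[OF F] .
  have x: "theta L (Sstar F) y \<in> DF L F" using theta_DF_star[OF SF y] by simp
  have "gran L (germ L F (theta L (Sstar F) y)) = y" using gran_germ[OF F x] theta_star[OF SF y] by simp
  moreover have "germ L F (theta L (Sstar F) y) \<in> Psi L F" unfolding Psi_def using x by blast
  ultimately show "y \<in> gran L ` Psi L F" by (metis image_eqI)
qed

lemma Psi_Gop:
  assumes fa: "finitely_aligned L" and F: "F \<in> S L"
  shows "Psi L F \<in> Gop L"
proof -
  have sub: "Psi L F \<subseteq> Gset L" using Psi_sub_G[OF F] .
  have op: "openin (GT L) (Psi L F)"
    unfolding GT_eq openin_subtopology openin_topology_generated_by_iff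
    using F sub by (intro exI[of _ "Psi L F"]) (auto intro: generate_topology_on.Basis)
  have h1: "homeomorphic_map (subtopology (GT L) (Psi L F)) (subtopology (XT L) (gsrc ` Psi L F)) gsrc"
    using gsrc_homeo[OF fa F] gsrc_Psi[OF F] by simp
  have h2: "homeomorphic_map (subtopology (GT L) (Psi L F)) (subtopology (XT L) (gran L ` Psi L F)) (gran L)"
    using gran_homeo[OF fa F] gran_Psi[OF F] by simp
  have "Hausdorff_space (subtopology (XT L) (DF L F))" using Hausdorff_space_subtopology[OF XT_Hausdorff] .
  then have hd: "Hausdorff_space (subtopology (GT L) (Psi L F))"
    using homeomorphic_Hausdorff_space[OF homeomorphic_map_imp_homeomorphic_space[OF gsrc_homeo[OF fa F]]] by simp
  show ?thesis unfolding Gop_def using sub op hd h1 h2 by blast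
qed

end

theorem proposition6p7:
  fixes L :: "('a, 'k::finite) kgraph"
  assumes "is_kgraph L" and "finitely_aligned L"
  shows "(\<forall>F\<in>S L. Psi L F \<in> Gop L) \<and>
         inj_on (Psi L) (S L) \<and>
         (\<forall>F\<in>S L. \<forall>G\<in>S L. Psi L (Sprod L F G) = Opmul L (Psi L F) (Psi L G)) \<and>
         (\<forall>F\<in>S L. Psi L (Sstar F) = Opinv L (Psi L F))"
proof -
  interpret kg L using assms(1) by (rule kg.intro)
  show ?thesis
    using Psi_Gop[OF assms(2)] claim_inj claim_prod[OF assms(2)] claim_star
    unfolding inj_on_def by blast
qed


end
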